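(* Let $R\subseteq\mathbb R$ be an archimedean real closed field, let $R(x,y)$ be the rational function field in two variables, and let $\xi$ be an $\mathbb R$-place of $R(x)$ with $\xi|_R=\mathrm{id}_R$; put $\overline F=\xi(R(x))\setminus\{\infty\}$. Let $\xi_y$ be the constant extension of $\xi$ to $R(x)(y)=R(x,y)$ and for $\zeta\in M(R(y))$ let $\zeta_{\overline F}$ be the constant extension of $\zeta$ to $\overline F(y)$. Then the map $\iota:M(R(y))\to M(R(x,y))$, $\iota(\zeta)=\zeta_{\overline F}\circ\xi_y$, is the unique continuous injective map $M(R(y))\to M(R(x,y))$ which is compatible with restriction and such that every place in its image restricts to $\xi$ on $R(x)$.
   Context: For a field $K$, $M(K)$ is the set of $\mathbb R$-places $K\to\mathbb R\cup\{\infty\}$, with topology generated by the subbasis $H'(b)=\{\zeta\in M(K)\mid \infty\ne\zeta(b)>0\}$, $b\in K$. A map $\iota:M(R(y))\to M(R(x,y))$ is compatible with restriction if $\iota(\zeta)|_{R(y)}=\zeta$ for all $\zeta$. The constant (Gauss) extension $\xi_y$ of $\xi$ to $R(x)(y)$ is the place extending $\xi$ whose valuation is the Gauss valuation: on a polynomial $\sum c_iy^i$ with all $c_i$ in the valuation ring of $\xi$ it acts by applying $\xi$ to the coefficients; its residue field is $\overline F(y)$. Every $\zeta\in M(R(y))$ is the identity on $R$; $\zeta_{\overline F}$ is the unique $\mathbb R$-place of $\overline F(y)$ which is the identity on $\overline F$ and satisfies $\zeta_{\overline F}(y)=\zeta(y)$. *)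

theory Defs
  imports "HOL-Analysis.Analysis" "HOL-Computational_Algebra.Polynomial"
          "HOL-Computational_Algebra.Fraction_Field"
begin

text \<open>A place of a subfield K of the field type 'a into the field 'b, with values
  in 'b extended by infinity (None = infinity).  By convention a place is None outside K,
  so that places on K are determined extensionally by their values on K.
  O = the set of a with finite value is then a valuation ring of K, the map is a ring
  homomorphism on O, and elements outside O are sent to infinity.\<close>

definition is_place :: "'a::field set \<Rightarrow> ('a \<Rightarrow> 'b::field option) \<Rightarrow> bool" where
  "is_place K \<phi> \<longleftrightarrow>
     (\<forall>a. a \<notin> K \<longrightarrow> \<phi> a = None) \<and>
     \<phi> 1 = Some 1 \<and>
     (\<forall>a\<in>K. \<forall>b\<in>K. \<forall>u v. \<phi> a = Some u \<longrightarrow> \<phi> b = Some v \<longrightarrow>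
         \<phi> (a + b) = Some (u + v) \<and> \<phi> (a * b) = Some (u * v)) \<and>
     (\<forall>a\<in>K. a \<noteq> 0 \<longrightarrow> (\<phi> a = None \<longleftrightarrow> \<phi> (inverse a) = Some 0))"

definition M :: "'a::field set \<Rightarrow> ('a \<Rightarrow> real option) set" where
  "M K = {\<zeta>. is_place K \<zeta>}"

definition H' :: "'a::field set \<Rightarrow> 'a \<Rightarrow> ('a \<Rightarrow> real option) set" where
  "H' K b = {\<zeta> \<in> M K. \<exists>v. \<zeta> b = Some v \<and> v > 0}"

definition M_top :: "'a::field set \<Rightarrow> ('a \<Rightarrow> real option) topology" where
  "M_top K = topology_generated_by {H' K b | b. b \<in> K}"

definition real_subfield :: "real set \<Rightarrow> bool" where
  "real_subfield R \<longleftrightarrow> 0 \<in> R \<and> 1 \<in> R \<and>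
     (\<forall>a\<in>R. \<forall>b\<in>R. a + b \<in> R \<and> a * b \<in> R \<and> - a \<in> R) \<and>
     (\<forall>a\<in>R. a \<noteq> 0 \<longrightarrow> inverse a \<in> R)"

text \<open>Real closed ordered field (Artin--Schreier characterisation): positive elements are
  squares and polynomials of odd degree have a root. A subfield of the reals is
  automatically archimedean (with the induced order).\<close>

definition real_closed_subfield :: "real set \<Rightarrow> bool" where
  "real_closed_subfield R \<longleftrightarrow> real_subfield R \<and>
     (\<forall>a\<in>R. a > 0 \<longrightarrow> (\<exists>b\<in>R. b * b = a)) \<and>
     (\<forall>p :: real poly. (\<forall>i. coeff p i \<in> R) \<and> odd (degree p) \<longrightarrow> (\<exists>r\<in>R. poly p r = 0))"

definition archimedean_subfield :: "real set \<Rightarrow> bool" where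
  "archimedean_subfield R \<longleftrightarrow> (\<forall>a\<in>R. \<exists>n::nat. a < of_nat n)"

text \<open>All three live in the ambient field real poly poly fract = Frac(IR[x][y]):
  the outer polynomial variable is y, the inner one is x.\<close>

type_synonym RXY = "real poly poly fract"

definition x_el :: RXY where "x_el = Fract [:[:0, 1:]:] 1"
definition y_el :: RXY where "y_el = Fract [:0, 1:] 1"

definition Rx :: "real set \<Rightarrow> RXY set" where
  "Rx R = {Fract [:p:] [:q:] | p q. (\<forall>i. coeff p i \<in> R) \<and> (\<forall>i. coeff q i \<in> R) \<and> q \<noteq> 0}"

definition Ry :: "real set \<Rightarrow> RXY set" where
  "Ry R = {Fract (map_poly (\<lambda>c. [:c:]) p) (map_poly (\<lambda>c. [:c:]) q) | p q.
              (\<forall>i. coeff p i \<in> R) \<and> (\<forall>i. coeff q i \<in> R) \<and> q \<noteq> 0}"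

definition Rxy :: "real set \<Rightarrow> RXY set" where
  "Rxy R = {Fract P Q | P Q. (\<forall>i j. coeff (coeff P i) j \<in> R) \<and>
                              (\<forall>i j. coeff (coeff Q i) j \<in> R) \<and> Q \<noteq> 0}"

definition Y_el :: "real poly fract" where "Y_el = Fract [:0, 1:] 1"
definition cst :: "real \<Rightarrow> real poly fract" where "cst r = Fract [:r:] 1"

definition Fbar :: "real set \<Rightarrow> (RXY \<Rightarrow> real option) \<Rightarrow> real set" where
  "Fbar R \<xi> = {r. \<exists>a \<in> Rx R. \<xi> a = Some r}"

definition Fbar_Y :: "real set \<Rightarrow> real poly fract set" where
  "Fbar_Y F = {Fract p q | p q. (\<forall>i. coeff p i \<in> F) \<and> (\<forall>i. coeff q i \<in> F) \<and> q \<noteq> 0}"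

definition is_gauss_ext :: "real set \<Rightarrow> (RXY \<Rightarrow> real option) \<Rightarrow> (RXY \<Rightarrow> real poly fract option) \<Rightarrow> bool" where
  "is_gauss_ext R \<xi> \<Phi> \<longleftrightarrow> is_place (Rxy R) \<Phi> \<and>
     (\<forall>a. \<Phi> a \<noteq> None \<longrightarrow> the (\<Phi> a) \<in> Fbar_Y (Fbar R \<xi>)) \<and>
     (\<forall>(c :: nat \<Rightarrow> RXY) n. (\<forall>i\<le>n. c i \<in> Rx R \<and> \<xi> (c i) \<noteq> None) \<longrightarrow>
        \<Phi> (\<Sum>i\<le>n. c i * y_el ^ i) = Some (\<Sum>i\<le>n. cst (the (\<xi> (c i))) * Y_el ^ i))"

definition xi_y :: "real set \<Rightarrow> (RXY \<Rightarrow> real option) \<Rightarrow> (RXY \<Rightarrow> real poly fract option)" where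
  "xi_y R \<xi> = (THE \<Phi>. is_gauss_ext R \<xi> \<Phi>)"

definition zeta_F :: "real set \<Rightarrow> (RXY \<Rightarrow> real option) \<Rightarrow> (RXY \<Rightarrow> real option)
                     \<Rightarrow> (real poly fract \<Rightarrow> real option)" where
  "zeta_F R \<xi> \<zeta> = (THE \<psi>. is_place (Fbar_Y (Fbar R \<xi>)) \<psi> \<and>
       (\<forall>r \<in> Fbar R \<xi>. \<psi> (cst r) = Some r) \<and> \<psi> Y_el = \<zeta> y_el)"

definition iota :: "real set \<Rightarrow> (RXY \<Rightarrow> real option) \<Rightarrow> (RXY \<Rightarrow> real option) \<Rightarrow> (RXY \<Rightarrow> real option)" where
  "iota R \<xi> \<zeta> = (\<lambda>a. case xi_y R \<xi> a of None \<Rightarrow> None | Some u \<Rightarrow> zeta_F R \<xi> \<zeta> u)"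

definition good_map :: "real set \<Rightarrow> (RXY \<Rightarrow> real option) \<Rightarrow>
                        ((RXY \<Rightarrow> real option) \<Rightarrow> (RXY \<Rightarrow> real option)) \<Rightarrow> bool" where
  "good_map R \<xi> \<iota> \<longleftrightarrow>
     continuous_map (M_top (Ry R)) (M_top (Rxy R)) \<iota> \<and>
     inj_on \<iota> (M (Ry R)) \<and>
     (\<forall>\<zeta> \<in> M (Ry R). \<forall>a \<in> Ry R. \<iota> \<zeta> a = \<zeta> a) \<and>
     (\<forall>\<zeta> \<in> M (Ry R). \<forall>a \<in> Rx R. \<iota> \<zeta> a = \<xi> a)"

end

theory Submission
  imports Defs
begin

definition subf :: "'a::field set \<Rightarrow> bool" where
  "subf K \<longleftrightarrow> 0 \<in> K \<and> 1 \<in> K \<and> (\<forall>a\<in>K. \<forall>b\<in>K. a + b \<in> K \<and> a * b \<in> K \<and> - a \<in> K) \<and>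
     (\<forall>a\<in>K. inverse a \<in> K)"

lemma subf_0: "subf K \<Longrightarrow> 0 \<in> K" and subf_1: "subf K \<Longrightarrow> 1 \<in> K"
  and subf_add: "subf K \<Longrightarrow> a \<in> K \<Longrightarrow> b \<in> K \<Longrightarrow> a + b \<in> K"
  and subf_mult: "subf K \<Longrightarrow> a \<in> K \<Longrightarrow> b \<in> K \<Longrightarrow> a * b \<in> K"
  and subf_uminus: "subf K \<Longrightarrow> a \<in> K \<Longrightarrow> - a \<in> K"
  and subf_inverse: "subf K \<Longrightarrow> a \<in> K \<Longrightarrow> inverse a \<in> K"
  by (auto simp: subf_def)

lemma subf_diff: "subf K \<Longrightarrow> a \<in> K \<Longrightarrow> b \<in> K \<Longrightarrow> a - b \<in> K"
  using subf_add subf_uminus by (metis diff_conv_add_uminus)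

lemma subf_divide: "subf K \<Longrightarrow> a \<in> K \<Longrightarrow> b \<in> K \<Longrightarrow> a / b \<in> K"
  using subf_mult subf_inverse by (metis divide_inverse)

lemma subf_sum: "subf K \<Longrightarrow> (\<And>i. i \<in> I \<Longrightarrow> f i \<in> K) \<Longrightarrow> sum f I \<in> K"
  by (induct I rule: infinite_finite_induct) (auto intro: subf_add subf_0)

lemma subf_prod: "subf K \<Longrightarrow> (\<And>i. i \<in> I \<Longrightarrow> f i \<in> K) \<Longrightarrow> prod f I \<in> K"
  by (induct I rule: infinite_finite_induct) (auto intro: subf_mult subf_1)

lemma subf_power: "subf K \<Longrightarrow> a \<in> K \<Longrightarrow> a ^ n \<in> K"
  by (induct n) (auto intro: subf_mult subf_1)

lemma subf_of_nat: "subf K \<Longrightarrow> of_nat n \<in> K"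
  by (induct n) (auto intro: subf_add subf_1 subf_0)

lemma subf_of_int: "subf K \<Longrightarrow> of_int m \<in> K"
  by (cases m rule: int_cases) (auto intro: subf_uminus subf_of_nat subf_add subf_1 simp del: of_nat_Suc)

section \<open>Basic facts on places\<close>

context
  fixes K :: "'a::field set" and \<phi> :: "'a \<Rightarrow> 'b::field option"
  assumes P: "is_place K \<phi>" and S: "subf K"
begin

lemma pl_notin: "a \<notin> K \<Longrightarrow> \<phi> a = None"
  using P by (auto simp: is_place_def)

lemma pl_one: "\<phi> 1 = Some 1"
  using P by (auto simp: is_place_def)

lemma pl_add: "a \<in> K \<Longrightarrow> b \<in> K \<Longrightarrow> \<phi> a = Some u \<Longrightarrow> \<phi> b = Some v \<Longrightarrow> \<phi> (a + b) = Some (u + v)"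
  using P by (auto simp: is_place_def)

lemma pl_mult: "a \<in> K \<Longrightarrow> b \<in> K \<Longrightarrow> \<phi> a = Some u \<Longrightarrow> \<phi> b = Some v \<Longrightarrow> \<phi> (a * b) = Some (u * v)"
  using P by (auto simp: is_place_def)

lemma pl_inv_iff: "a \<in> K \<Longrightarrow> a \<noteq> 0 \<Longrightarrow> \<phi> a = None \<longleftrightarrow> \<phi> (inverse a) = Some 0"
  using P by (auto simp: is_place_def)

lemma pl_m1: "\<phi> (-1) = Some (-1)"
proof -
  have m1: "-1 \<in> K" using S by (simp add: subf_1 subf_uminus)
  have "\<phi> (-1) \<noteq> None"
    using pl_inv_iff[OF m1] by auto
  then obtain w where w: "\<phi> (-1) = Some w" by auto
  have "\<phi> (-1 * -1) = Some (w * w)" using pl_mult[OF m1 m1 w w] .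
  then have "w * w = 1" using pl_one by simp
  have e1: "\<phi> 0 = Some (1 + w)" using pl_add[OF subf_1[OF S] m1 pl_one w] by simp
  have "\<phi> (0 + 0) = Some ((1 + w) + (1 + w))" using pl_add[OF _ _ e1 e1] S subf_0 by blast
  then have "(1 + w) + (1 + w) = 1 + w" using e1 by simp
  then have "1 + w = 0" by (simp only: add_cancel_left_right)
  then have "w = -1" by (metis add.commute add_eq_0_iff2 minus_minus)
  then show ?thesis using w by simp
qed

lemma pl_0: "\<phi> 0 = Some 0"
proof -
  have m1: "-1 \<in> K" using S by (simp add: subf_1 subf_uminus)
  have "\<phi> (1 + -1) = Some (1 + -1)" using pl_add[OF subf_1[OF S] m1 pl_one pl_m1] .
  then show ?thesis by simp
qed

lemma pl_uminus: "a \<in> K \<Longrightarrow> \<phi> a = Some u \<Longrightarrow> \<phi> (- a) = Some (- u)"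
proof -
  assume a: "a \<in> K" "\<phi> a = Some u"
  have m1: "-1 \<in> K" using S by (simp add: subf_1 subf_uminus)
  show ?thesis using pl_mult[OF m1 a(1) pl_m1 a(2)] by simp
qed

lemma pl_uminus_None: "a \<in> K \<Longrightarrow> \<phi> a = None \<Longrightarrow> \<phi> (- a) = None"
  using pl_uminus[of "-a"] S subf_uminus by fastforce

lemma pl_diff: "a \<in> K \<Longrightarrow> b \<in> K \<Longrightarrow> \<phi> a = Some u \<Longrightarrow> \<phi> b = Some v \<Longrightarrow> \<phi> (a - b) = Some (u - v)"
  using pl_add[of a "-b" u "-v"] pl_uminus[of b v] S subf_uminus by auto

lemma pl_None_nz: "\<phi> a = None \<Longrightarrow> a \<noteq> 0"
  using pl_0 by auto

lemma pl_inverse_None: "a \<in> K \<Longrightarrow> \<phi> a = None \<Longrightarrow> \<phi> (inverse a) = Some 0"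
  using pl_inv_iff pl_None_nz by blast

lemma pl_inverse_0: "a \<in> K \<Longrightarrow> a \<noteq> 0 \<Longrightarrow> \<phi> a = Some 0 \<Longrightarrow> \<phi> (inverse a) = None"
  using pl_inv_iff[of "inverse a"] S subf_inverse by fastforce

lemma pl_inverse: "a \<in> K \<Longrightarrow> \<phi> a = Some u \<Longrightarrow> u \<noteq> 0 \<Longrightarrow> \<phi> (inverse a) = Some (inverse u)"
proof -
  assume a: "a \<in> K" "\<phi> a = Some u" "u \<noteq> 0"
  have a0: "a \<noteq> 0" using a pl_0 by auto
  have ia: "inverse a \<in> K" using S a subf_inverse by blast
  have "\<phi> (inverse a) \<noteq> None"
  proof
    assume "\<phi> (inverse a) = None"
    then have "\<phi> (inverse (inverse a)) = Some 0" using pl_inverse_None ia by blast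
    then show False using a by simp
  qed
  then obtain w where w: "\<phi> (inverse a) = Some w" by auto
  have "\<phi> (a * inverse a) = Some (u * w)" using pl_mult[OF a(1) ia a(2) w] .
  then have "u * w = 1" using a0 pl_one by simp
  then show ?thesis using w a(3) by (metis inverse_unique)
qed

lemma pl_mult_None: "a \<in> K \<Longrightarrow> b \<in> K \<Longrightarrow> \<phi> a = None \<Longrightarrow> \<phi> b = Some v \<Longrightarrow> v \<noteq> 0 \<Longrightarrow>
    \<phi> (a * b) = None"
proof (rule ccontr)
  assume a: "a \<in> K" "b \<in> K" "\<phi> a = None" "\<phi> b = Some v" "v \<noteq> 0" "\<phi> (a * b) \<noteq> None"
  then obtain w where w: "\<phi> (a * b) = Some w" by auto
  have b0: "b \<noteq> 0" using a pl_0 by auto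
  have "\<phi> (a * b * inverse b) = Some (w * inverse v)"
    using pl_mult[OF _ _ w pl_inverse[OF a(2,4,5)]] S a by (simp add: subf_mult subf_inverse)
  moreover have "a * b * inverse b = a" using b0 by (simp add: mult.assoc)
  ultimately show False using a(3) by simp
qed

lemma pl_mult_None': "a \<in> K \<Longrightarrow> b \<in> K \<Longrightarrow> \<phi> a = Some v \<Longrightarrow> \<phi> b = None \<Longrightarrow> v \<noteq> 0 \<Longrightarrow>
    \<phi> (a * b) = None"
  using pl_mult_None[of b a v] by (simp add: mult.commute)

lemma pl_mult_NoneNone: "a \<in> K \<Longrightarrow> b \<in> K \<Longrightarrow> \<phi> a = None \<Longrightarrow> \<phi> b = None \<Longrightarrow> \<phi> (a * b) = None"
proof -
  assume a: "a \<in> K" "b \<in> K" "\<phi> a = None" "\<phi> b = None"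
  have "\<phi> (inverse a * inverse b) = Some (0 * 0)"
    using pl_mult[OF _ _ pl_inverse_None[OF a(1,3)] pl_inverse_None[OF a(2,4)]] S a
    by (simp add: subf_inverse)
  then have "\<phi> (inverse (a * b)) = Some 0" by (simp add: mult.commute)
  moreover have "a * b \<noteq> 0" using a pl_None_nz by auto
  ultimately show ?thesis using pl_inv_iff[of "a*b"] S a subf_mult by blast
qed

lemma pl_add_None: "a \<in> K \<Longrightarrow> b \<in> K \<Longrightarrow> \<phi> a = None \<Longrightarrow> \<phi> b = Some v \<Longrightarrow> \<phi> (a + b) = None"
proof (rule ccontr)
  assume a: "a \<in> K" "b \<in> K" "\<phi> a = None" "\<phi> b = Some v" "\<phi> (a + b) \<noteq> None"
  then obtain w where "\<phi> (a + b) = Some w" by auto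
  then have "\<phi> (a + b - b) = Some (w - v)" using pl_diff a S subf_add by blast
  then show False using a by simp
qed

lemma pl_sum: "(\<And>i. i \<in> I \<Longrightarrow> f i \<in> K \<and> \<phi> (f i) = Some (g i)) \<Longrightarrow> \<phi> (sum f I) = Some (sum g I)"
proof (induct I rule: infinite_finite_induct)
  case (insert x F)
  then show ?case using pl_add[of "f x" "sum f F"] subf_sum[OF S, of F f] by auto
qed (auto simp: pl_0)

lemma pl_prod: "(\<And>i. i \<in> I \<Longrightarrow> f i \<in> K \<and> \<phi> (f i) = Some (g i)) \<Longrightarrow> \<phi> (prod f I) = Some (prod g I)"
proof (induct I rule: infinite_finite_induct)
  case (insert x F)
  then show ?case using pl_mult[of "f x" "prod f F"] subf_prod[OF S, of F f] by auto
qed (auto simp: pl_one)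

lemma pl_power: "a \<in> K \<Longrightarrow> \<phi> a = Some u \<Longrightarrow> \<phi> (a ^ n) = Some (u ^ n)"
  by (induct n) (auto simp: pl_one intro!: pl_mult subf_power[OF S])

lemma pl_of_nat: "\<phi> (of_nat n) = Some (of_nat n)"
  by (induct n) (auto simp: pl_0 add.commute intro!: pl_add subf_of_nat[OF S] subf_1[OF S] pl_one)

lemma pl_of_int: "\<phi> (of_int m) = Some (of_int m)"
  by (cases m rule: int_cases) (auto simp: pl_of_nat simp del: of_nat_Suc
      intro!: pl_uminus subf_of_nat[OF S])

lemma pl_divide: "a \<in> K \<Longrightarrow> b \<in> K \<Longrightarrow> \<phi> a = Some u \<Longrightarrow> \<phi> b = Some v \<Longrightarrow> v \<noteq> 0 \<Longrightarrow>
   \<phi> (a / b) = Some (u / v)"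
  by (simp add: divide_inverse pl_mult pl_inverse subf_inverse[OF S])

lemma pl_values_ring:
  "a \<in> K \<Longrightarrow> b \<in> K \<Longrightarrow> b \<noteq> 0 \<Longrightarrow> \<phi> (a / b) \<noteq> None \<or> \<phi> (b / a) = Some 0"
  using pl_inverse_None[of "a/b"] subf_divide[OF S] by (cases "\<phi> (a/b)") auto

end

lemma place_comp:
  fixes \<phi> :: "'a::field \<Rightarrow> 'b::field option" and \<psi> :: "'b \<Rightarrow> 'c::field option"
  assumes P: "is_place K \<phi>" "subf K" and Q: "is_place L \<psi>" "subf L"
    and V: "\<And>a u. \<phi> a = Some u \<Longrightarrow> u \<in> L"
  shows "is_place K (\<lambda>a. case \<phi> a of None \<Rightarrow> None | Some u \<Rightarrow> \<psi> u)"
  unfolding is_place_def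
proof (intro conjI ballI allI impI)
  show "(case \<phi> a of None \<Rightarrow> None | Some u \<Rightarrow> \<psi> u) = None" if "a \<notin> K" for a
    using pl_notin[OF P that] by simp
  show "(case \<phi> 1 of None \<Rightarrow> None | Some u \<Rightarrow> \<psi> u) = Some 1"
    using pl_one[OF P] pl_one[OF Q] by simp
next
  fix a b u v assume ab: "a \<in> K" "b \<in> K" and
    u: "(case \<phi> a of None \<Rightarrow> None | Some u \<Rightarrow> \<psi> u) = Some u" and
    v: "(case \<phi> b of None \<Rightarrow> None | Some u \<Rightarrow> \<psi> u) = Some v"
  obtain a' where a': "\<phi> a = Some a'" "\<psi> a' = Some u" using u by (cases "\<phi> a") auto
  obtain b' where b': "\<phi> b = Some b'" "\<psi> b' = Some v" using v by (cases "\<phi> b") auto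
  show "(case \<phi> (a + b) of None \<Rightarrow> None | Some u \<Rightarrow> \<psi> u) = Some (u + v)"
    using pl_add[OF P ab a'(1) b'(1)] pl_add[OF Q V[OF a'(1)] V[OF b'(1)] a'(2) b'(2)] by simp
  show "(case \<phi> (a * b) of None \<Rightarrow> None | Some u \<Rightarrow> \<psi> u) = Some (u * v)"
    using pl_mult[OF P ab a'(1) b'(1)] pl_mult[OF Q V[OF a'(1)] V[OF b'(1)] a'(2) b'(2)] by simp
next
  fix a assume a: "a \<in> K" "a \<noteq> 0"
  show "(case \<phi> a of None \<Rightarrow> None | Some u \<Rightarrow> \<psi> u) = None \<longleftrightarrow>
        (case \<phi> (inverse a) of None \<Rightarrow> None | Some u \<Rightarrow> \<psi> u) = Some 0"
  proof (cases "\<phi> a")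
    case None
    then show ?thesis using pl_inverse_None[OF P a(1)] pl_0[OF Q] by simp
  next
    case (Some u)
    show ?thesis
    proof (cases "u = 0")
      case True
      then show ?thesis using Some pl_inverse_0[OF P a] pl_0[OF Q] by simp
    next
      case False
      have "\<phi> (inverse a) = Some (inverse u)" using pl_inverse[OF P a(1) Some False] .
      then show ?thesis using Some pl_inv_iff[OF Q V[OF Some] False] by simp
    qed
  qed
qed

lemma place_restrict:
  assumes "is_place L \<psi>" "subf L" "subf K" "K \<subseteq> L"
  shows "is_place K (\<lambda>a. if a \<in> K then \<psi> a else None)"
  using assms unfolding is_place_def subf_def by (auto simp: subset_iff)

lemma place_pullback:
  fixes h :: "'a::field \<Rightarrow> 'b::field"
  assumes P: "is_place L \<phi>" "subf L" and K: "subf K"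
    and hK: "\<And>a. a \<in> K \<Longrightarrow> h a \<in> L"
    and hadd: "\<And>a b. a \<in> K \<Longrightarrow> b \<in> K \<Longrightarrow> h (a + b) = h a + h b"
    and hmult: "\<And>a b. a \<in> K \<Longrightarrow> b \<in> K \<Longrightarrow> h (a * b) = h a * h b"
    and hinv: "\<And>a. a \<in> K \<Longrightarrow> h (inverse a) = inverse (h a)"
    and h1: "h 1 = 1" and hinj: "\<And>a. a \<in> K \<Longrightarrow> h a = 0 \<Longrightarrow> a = 0"
  shows "is_place K (\<lambda>a. if a \<in> K then \<phi> (h a) else None)"
  unfolding is_place_def
proof (intro conjI ballI allI impI)
  show "(if 1 \<in> K then \<phi> (h 1) else None) = Some 1" using K h1 pl_one[OF P] by (simp add: subf_1)
next
  fix a b u v assume "a \<in> K" "b \<in> K" "(if a \<in> K then \<phi> (h a) else None) = Some u"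
    "(if b \<in> K then \<phi> (h b) else None) = Some v"
  then show "(if a + b \<in> K then \<phi> (h (a + b)) else None) = Some (u + v)"
    "(if a * b \<in> K then \<phi> (h (a * b)) else None) = Some (u * v)"
    using pl_add[OF P] pl_mult[OF P] hK hadd hmult K by (auto simp: subf_add subf_mult)
next
  fix a assume a: "a \<in> K" "a \<noteq> 0"
  then have "h a \<noteq> 0" using hinj by blast
  then show "(if a \<in> K then \<phi> (h a) else None) = None \<longleftrightarrow>
    (if inverse a \<in> K then \<phi> (h (inverse a)) else None) = Some 0"
    using pl_inv_iff[OF P hK[OF a(1)]] a hinv K by (simp add: subf_inverse)
qed auto

section \<open>Places are the identity on a real closed field\<close>

definition kc :: "real \<Rightarrow> RXY" where "kc r = Fract [:[:r:]:] 1"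

lemma kc_add: "kc (a + b) = kc a + kc b" and kc_mult: "kc (a * b) = kc a * kc b"
  and kc_uminus: "kc (- a) = - kc a" and kc_0: "kc 0 = 0" and kc_1: "kc 1 = 1"
  and kc_diff: "kc (a - b) = kc a - kc b"
  by (simp_all add: kc_def pCons_one fract_collapse flip: One_fract_def)

lemma kc_of_nat: "kc (of_nat n) = of_nat n"
  by (induct n) (simp_all add: kc_add kc_0 kc_1)

lemma kc_of_int: "kc (of_int m) = of_int m"
  by (cases m rule: int_cases) (simp_all add: kc_of_nat kc_uminus del: of_nat_Suc)

lemma kc_inverse: "kc (inverse a) = inverse (kc a)"
  by (cases "a = 0") (simp_all add: kc_def fract_collapse eq_fract pCons_one)

lemma kc_eq_0: "kc a = 0 \<longleftrightarrow> a = 0"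
  by (simp add: kc_def eq_fract Zero_fract_def)

lemma real_subfield_subf: "real_subfield R \<Longrightarrow> subf R"
  by (auto simp: real_subfield_def subf_def)

lemma place_id_on_R:
  assumes RC: "real_closed_subfield R" and P: "is_place K \<phi>" "subf K"
    and kK: "\<And>r. r \<in> R \<Longrightarrow> kc r \<in> K"
  shows "r \<in> R \<Longrightarrow> \<phi> (kc r) = Some r"
proof -
  have RS: "subf R" using RC by (simp add: real_closed_subfield_def real_subfield_subf)
  have sq: "\<And>a. a \<in> R \<Longrightarrow> a > 0 \<Longrightarrow> \<exists>b\<in>R. b * b = a"
    using RC by (simp add: real_closed_subfield_def)
  have fin: "\<phi> (kc r) \<noteq> None" if r: "r \<in> R" for r
  proof
    assume N: "\<phi> (kc r) = None"
    then have r0: "r \<noteq> 0" using pl_0[OF P] kc_0 by auto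
    define s where "s = \<bar>inverse r\<bar>"
    have sR: "s \<in> R" using RS r by (auto simp: s_def abs_if intro: subf_inverse subf_uminus)
    have s0: "s > 0" using r0 by (simp add: s_def)
    have "\<phi> (inverse (kc r)) = Some 0" using pl_inverse_None[OF P kK[OF r] N] .
    then have ks: "\<phi> (kc s) = Some 0"
      using pl_uminus[OF P, of "inverse (kc r)" 0] kK r RS P(2)
      by (auto simp: s_def abs_if kc_uminus kc_inverse subf_inverse)
    obtain n :: nat where n: "inverse s < of_nat n" using reals_Archimedean2 by blast
    define m where "m = of_nat n * s - 1"
    have m0: "m > 0" using n s0 by (simp add: m_def field_simps)
    have mR: "m \<in> R" using RS sR by (simp add: m_def subf_diff subf_mult subf_of_nat subf_1)
    obtain w where w: "w \<in> R" "w * w = m" using sq[OF mR m0] by blast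
    have "\<phi> (of_nat n * kc s - 1) = Some (of_nat n * 0 - 1)"
      using pl_diff[OF P _ _ pl_mult[OF P _ _ pl_of_nat[OF P] ks] pl_one[OF P]] kK[OF sR] P(2)
      by (simp add: subf_mult subf_of_nat subf_1)
    then have km: "\<phi> (kc m) = Some (-1)" by (simp add: m_def kc_diff kc_mult kc_of_nat kc_1)
    have "kc m = kc w * kc w" using w(2) kc_mult[of w w] by simp
    show False
    proof (cases "\<phi> (kc w)")
      case None
      then show False using pl_mult_NoneNone[OF P kK[OF w(1)] kK[OF w(1)]] km \<open>kc m = _\<close> by simp
    next
      case (Some u)
      then have "\<phi> (kc m) = Some (u * u)" using pl_mult[OF P kK[OF w(1)] kK[OF w(1)]] \<open>kc m = _\<close> by simp
      then have "u * u = -1" using km by simp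
      moreover have "u * u \<ge> 0" by simp
      ultimately show False by simp
    qed
  qed
  have pos: "u \<ge> 0" if r: "r \<in> R" "r > 0" and u: "\<phi> (kc r) = Some u" for r u
  proof -
    obtain w where w: "w \<in> R" "w * w = r" using sq r by blast
    obtain u' where u': "\<phi> (kc w) = Some u'" using fin[OF w(1)] by auto
    have "\<phi> (kc r) = Some (u' * u')" using pl_mult[OF P kK[OF w(1)] kK[OF w(1)] u' u'] w(2)
      kc_mult[of w w] by simp
    then show ?thesis using u by simp
  qed
  assume r: "r \<in> R"
  obtain u where u: "\<phi> (kc r) = Some u" using fin[OF r] by auto
  have val: "\<phi> (kc (of_int m - of_nat n * r)) = Some (of_int m - of_nat n * u)" for m n
    using pl_diff[OF P _ _ pl_of_int[OF P] pl_mult[OF P _ _ pl_of_nat[OF P] u]] kK[OF r] P(2)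
    by (simp add: kc_diff kc_mult kc_of_nat kc_of_int subf_of_int subf_of_nat subf_mult)
  have val2: "\<phi> (kc (of_nat n * r - of_int m)) = Some (of_nat n * u - of_int m)" for m n
    using pl_diff[OF P _ _ pl_mult[OF P _ _ pl_of_nat[OF P] u] pl_of_int[OF P]] kK[OF r] P(2)
    by (simp add: kc_diff kc_mult kc_of_nat kc_of_int subf_of_int subf_of_nat subf_mult)
  have inR: "of_int m - of_nat n * r \<in> R" "of_nat n * r - of_int m \<in> R" for m n
    using RS r by (auto intro!: subf_diff subf_mult subf_of_int subf_of_nat)
  have "\<not> u > r"
  proof
    assume ur: "u > r"
    obtain n :: nat where n: "inverse (u - r) < of_nat n" using reals_Archimedean2 by blast
    have "of_nat n * (u - r) > 1" using n ur by (simp add: field_simps)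
    define m where "m = \<lfloor>of_nat n * r\<rfloor> + 1"
    have m1: "of_nat n * r < of_int m" "of_int m \<le> of_nat n * r + 1" unfolding m_def by linarith+
    have "of_int m - of_nat n * r > 0" using m1 by simp
    from pos[OF inR(1) this val] have "of_int m - of_nat n * u \<ge> 0" .
    then show False using m1 \<open>of_nat n * (u - r) > 1\<close> by (simp add: algebra_simps)
  qed
  moreover have "\<not> u < r"
  proof
    assume ur: "u < r"
    obtain n :: nat where n: "inverse (r - u) < of_nat n" using reals_Archimedean2 by blast
    have "of_nat n * (r - u) > 1" using n ur by (simp add: field_simps)
    define m where "m = \<lfloor>of_nat n * u\<rfloor> + 1"
    have m1: "of_nat n * u < of_int m" "of_int m \<le> of_nat n * u + 1" unfolding m_def by linarith+
    have "of_nat n * r - of_int m > 0" using m1 \<open>of_nat n * (r - u) > 1\<close> by (simp add: algebra_simps)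
    from pos[OF inR(2) this val2] have "of_nat n * u - of_int m \<ge> 0" .
    then show False using m1 by simp
  qed
  ultimately show ?thesis using u by simp
qed


definition inF :: "real set \<Rightarrow> real poly \<Rightarrow> bool" where
  "inF F p \<longleftrightarrow> (\<forall>i. coeff p i \<in> F)"

context
  fixes F :: "real set" assumes S: "subf F"
begin

lemma inF_0: "inF F 0" using S by (simp add: inF_def subf_0)
lemma inF_1: "inF F 1" using S by (simp add: inF_def coeff_1 subf_0 subf_1)
lemma inF_const: "c \<in> F \<Longrightarrow> inF F [:c:]" using S by (simp add: inF_def coeff_pCons split: nat.split add: subf_0)
lemma inF_X: "inF F [:0, 1:]" using S by (simp add: inF_def coeff_pCons split: nat.split add: subf_0 subf_1)
lemma inF_add: "inF F p \<Longrightarrow> inF F q \<Longrightarrow> inF F (p + q)" using S by (simp add: inF_def subf_add)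
lemma inF_uminus: "inF F p \<Longrightarrow> inF F (- p)" using S by (simp add: inF_def subf_uminus)
lemma inF_diff: "inF F p \<Longrightarrow> inF F q \<Longrightarrow> inF F (p - q)" using S by (simp add: inF_def subf_diff)
lemma inF_mult: "inF F p \<Longrightarrow> inF F q \<Longrightarrow> inF F (p * q)"
  using S by (auto simp: inF_def coeff_mult intro!: subf_sum subf_mult)
lemma inF_smult: "c \<in> F \<Longrightarrow> inF F p \<Longrightarrow> inF F (smult c p)" using S by (simp add: inF_def subf_mult)
lemma inF_monom: "c \<in> F \<Longrightarrow> inF F (monom c k)" using S by (simp add: inF_def coeff_monom subf_0)
lemma inF_power: "inF F p \<Longrightarrow> inF F (p ^ n)" by (induct n) (simp_all add: inF_1 inF_mult)

lemma inF_divmod: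
  assumes "inF F p" "inF F q" "q \<noteq> 0"
  shows "\<exists>s t. inF F s \<and> inF F t \<and> p = s * q + t \<and> (t = 0 \<or> degree t < degree q)"
  using assms
proof (induction "degree p" arbitrary: p rule: less_induct)
  case less
  show ?case
  proof (cases "degree q = 0")
    case True
    then obtain c where c: "q = [:c:]" by (metis degree_eq_zeroE)
    then have c0: "c \<noteq> 0" using less by auto
    have cF: "c \<in> F" using less(3) c by (auto simp: inF_def dest: spec[of _ 0])
    have "p = smult (inverse c) p * q + 0" using c c0 by simp
    moreover have "inF F (smult (inverse c) p)" using inF_smult S cF less subf_inverse by blast
    ultimately show ?thesis using inF_0 by blast
  next
    case False
    show ?thesis
    proof (cases "degree p < degree q")
      case True
      then show ?thesis using less inF_0 by (intro exI[of _ 0] exI[of _ p]) auto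
    next
      case False
      define c where "c = lead_coeff p / lead_coeff q"
      define k where "k = degree p - degree q"
      define p' where "p' = p - monom c k * q"
      have p0: "p \<noteq> 0" using False \<open>degree q \<noteq> 0\<close> by auto
      have c0: "c \<noteq> 0" using p0 less(4) by (simp add: c_def)
      have cF: "c \<in> F" using less(2,3) S by (simp add: c_def inF_def subf_divide)
      have dm: "degree (monom c k * q) = degree p"
        using c0 less(4) False by (simp add: degree_mult_eq degree_monom_eq k_def)
      have "coeff (monom c k * q) (degree p) = lead_coeff (monom c k * q)" using dm by simp
      also have "\<dots> = c * lead_coeff q" by (simp add: lead_coeff_mult lead_coeff_monom degree_monom_eq c0)
      finally have lm: "coeff (monom c k * q) (degree p) = lead_coeff p" using less(4) by (simp add: c_def)
      have dle: "degree p' \<le> degree p" unfolding p'_def using dm by (simp add: degree_diff_le)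
      have cz: "coeff p' (degree p) = 0" unfolding p'_def using lm by simp
      have dlt: "degree p' < degree p"
      proof (rule ccontr)
        assume "\<not> degree p' < degree p"
        then have "degree p' = degree p" using dle by simp
        then have "p' = 0" using cz by (metis leading_coeff_0_iff)
        then show False using \<open>degree p' = degree p\<close> \<open>degree q \<noteq> 0\<close> False by simp
      qed
      have ip': "inF F p'" unfolding p'_def using less(2,3) cF by (simp add: inF_diff inF_mult inF_monom)
      obtain s t where st: "inF F s" "inF F t" "p' = s * q + t" "t = 0 \<or> degree t < degree q"
        using less(1)[OF dlt ip' less(3,4)] by blast
      have "p = (s + monom c k) * q + t" using st(3) unfolding p'_def by (simp add: algebra_simps)
      then show ?thesis using st inF_add inF_monom cF by blast
    qed
  qed
qed

lemma inF_gcd: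
  assumes "inF F a" "inF F b"
  shows "\<exists>d u v a' b'. inF F d \<and> inF F a' \<and> inF F b' \<and> a = d * a' \<and> b = d * b' \<and>
          u * a + v * b = d \<and> ((a \<noteq> 0 \<or> b \<noteq> 0) \<longrightarrow> d \<noteq> 0)"
  using assms
proof (induction "if b = 0 then 0 else Suc (degree b)" arbitrary: a b rule: less_induct)
  case less
  show ?case
  proof (cases "b = 0")
    case True
    then show ?thesis using less inF_1 inF_0
      by (intro exI[of _ a] exI[of _ 1] exI[of _ 0] exI[of _ 1] exI[of _ 0]) auto
  next
    case False
    obtain s t where st: "inF F s" "inF F t" "a = s * b + t" "t = 0 \<or> degree t < degree b"
      using inF_divmod[OF less(2,3) False] by blast
    have "(if t = 0 then 0 else Suc (degree t)) < (if b = 0 then 0 else Suc (degree b))"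
      using st(4) False by auto
    from less(1)[OF this less(3) st(2)] obtain d u v b' t' where
      IH: "inF F d" "inF F b'" "inF F t'" "b = d * b'" "t = d * t'" "u * b + v * t = d"
         "(b \<noteq> 0 \<or> t \<noteq> 0) \<longrightarrow> d \<noteq> 0" by blast
    have "a = d * (s * b' + t')" using st(3) IH(4,5) by (simp add: algebra_simps)
    moreover have "v * a + (u - v * s) * b = d" using st(3) IH(6) by (simp add: algebra_simps)
    moreover have "inF F (s * b' + t')" using IH st inF_add inF_mult by blast
    ultimately show ?thesis using IH False by blast
  qed
qed

lemma inF_coprime_rep:
  assumes "inF F p" "inF F q" "q \<noteq> 0"
  shows "\<exists>p' q'. inF F p' \<and> inF F q' \<and> q' \<noteq> 0 \<and> Fract p q = Fract p' q' \<and>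
           (\<forall>a. poly p' a \<noteq> 0 \<or> poly q' a \<noteq> 0)"
proof -
  obtain d u v p' q' where g: "inF F d" "inF F p'" "inF F q'" "p = d * p'" "q = d * q'"
    "u * p + v * q = d" "d \<noteq> 0" using inF_gcd[OF assms(1,2)] assms(3) by blast
  have "d * (u * p' + v * q') = d * 1" using g(4-6) by (simp add: algebra_simps)
  then have uv: "u * p' + v * q' = 1" using g(7) by (metis mult_cancel_left)
  have q0: "q' \<noteq> 0" using g assms by auto
  have "Fract p q = Fract p' q'" using g(4,5,7) by (simp add: mult_fract_cancel)
  moreover have "poly p' a \<noteq> 0 \<or> poly q' a \<noteq> 0" for a
  proof -
    have "poly u a * poly p' a + poly v a * poly q' a = 1" using arg_cong[OF uv, of "\<lambda>r. poly r a"] by simp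
    then show ?thesis by auto
  qed
  ultimately show ?thesis using g q0 by blast
qed

end

lemma coeff_mult_le_sum:
  fixes p q :: "'a::{comm_semiring_0,semiring_no_zero_divisors} poly"
  assumes "degree p \<le> m" "degree q \<le> n"
  shows "coeff (p * q) (m + n) = coeff p m * coeff q n"
proof (cases "degree p = m \<and> degree q = n")
  case True
  then show ?thesis using coeff_mult_degree_sum by blast
next
  case False
  then have lt: "degree p < m \<or> degree q < n" using assms by auto
  then have "coeff p m * coeff q n = 0" by (auto simp: coeff_eq_0)
  moreover have "degree (p * q) < m + n"
    using degree_mult_le[of p q] lt assms by linarith
  ultimately show ?thesis by (simp add: coeff_eq_0)
qed

lemma Fract_add1: "Fract (a + b) 1 = Fract a 1 + Fract b (1::'a::idom)"
  by simp

lemma Fract_mult1: "Fract (a * b) 1 = Fract a 1 * Fract b (1::'a::idom)"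
  by simp

lemma Fract_sum: "Fract (sum f A) 1 = (\<Sum>i\<in>A. Fract (f i) (1::'a::idom))"
  by (induct A rule: infinite_finite_induct) (simp_all add: fract_collapse Fract_add1 del: add_fract)

lemma Fract_power: "Fract (p ^ n) 1 = Fract p (1::'a::idom) ^ n"
  by (induct n) (simp_all add: fract_collapse Fract_mult1 del: mult_fract)

lemma Fract_poly_expand:
  fixes p :: "'a::idom poly"
  shows "Fract p 1 = (\<Sum>i\<le>degree p. Fract [:coeff p i:] 1 * Fract [:0, 1:] 1 ^ i)"
proof -
  have "Fract p 1 = Fract (\<Sum>i\<le>degree p. monom (coeff p i) i) 1" by (simp add: poly_as_sum_of_monoms)
  also have "\<dots> = (\<Sum>i\<le>degree p. Fract (monom (coeff p i) i) 1)" by (rule Fract_sum)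
  also have "\<dots> = (\<Sum>i\<le>degree p. Fract [:coeff p i:] 1 * Fract [:0, 1:] 1 ^ i)"
    by (rule sum.cong) (simp_all add: monom_altdef Fract_power[symmetric])
  finally show ?thesis .
qed


section \<open>Places of IR(Y)\<close>

type_synonym RY = "real poly fract"

definition psiG :: "(real poly \<Rightarrow> real poly \<Rightarrow> bool) \<Rightarrow> (real poly \<Rightarrow> real poly \<Rightarrow> real) \<Rightarrow> RY \<Rightarrow> real option"
  where "psiG ok ev g = (if \<exists>p q. q \<noteq> 0 \<and> g = Fract p q \<and> ok p q
     then Some (ev (fst (SOME pq. snd pq \<noteq> 0 \<and> g = Fract (fst pq) (snd pq) \<and> ok (fst pq) (snd pq)))
                  (snd (SOME pq. snd pq \<noteq> 0 \<and> g = Fract (fst pq) (snd pq) \<and> ok (fst pq) (snd pq))))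
     else None)"

lemma psiG_rep:
  assumes W: "\<And>p q p' q'. q \<noteq> 0 \<Longrightarrow> q' \<noteq> 0 \<Longrightarrow> ok p q \<Longrightarrow> ok p' q' \<Longrightarrow> p * q' = p' * q \<Longrightarrow> ev p q = ev p' q'"
    and r: "q \<noteq> 0" "g = Fract p q" "ok p q"
  shows "psiG ok ev g = Some (ev p q)"
proof -
  have ex: "\<exists>pq. snd pq \<noteq> 0 \<and> g = Fract (fst pq) (snd pq) \<and> ok (fst pq) (snd pq)"
    using r by (intro exI[of _ "(p,q)"]) auto
  define pq where "pq = (SOME pq. snd pq \<noteq> 0 \<and> g = Fract (fst pq) (snd pq) \<and> ok (fst pq) (snd pq))"
  have pq: "snd pq \<noteq> 0 \<and> g = Fract (fst pq) (snd pq) \<and> ok (fst pq) (snd pq)"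
    unfolding pq_def by (rule someI_ex[OF ex])
  have "fst pq * q = p * snd pq" using pq r eq_fract(1)[of "snd pq" q "fst pq" p] by auto
  then have "ev (fst pq) (snd pq) = ev p q" using W[of "snd pq" q "fst pq" p] pq r by auto
  have "\<exists>p q. q \<noteq> 0 \<and> g = Fract p q \<and> ok p q" using r by blast
  then have "psiG ok ev g = Some (ev (fst pq) (snd pq))"
    unfolding psiG_def pq_def[symmetric] by (simp only: if_True)
  then show ?thesis using \<open>ev (fst pq) (snd pq) = ev p q\<close> by simp
qed

lemma psiG_None_iff:
  "psiG ok ev g = None \<longleftrightarrow> \<not> (\<exists>p q. q \<noteq> 0 \<and> g = Fract p q \<and> ok p q)"
proof (cases "\<exists>p q. q \<noteq> 0 \<and> g = Fract p q \<and> ok p q")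
  case True
  then show ?thesis unfolding psiG_def by (simp only: if_True simp_thms option.distinct)
next
  case False
  then show ?thesis unfolding psiG_def by (simp only: if_False simp_thms)
qed

lemma psiG_None:
  "(\<And>p q. q \<noteq> 0 \<Longrightarrow> g = Fract p q \<Longrightarrow> \<not> ok p q) \<Longrightarrow> psiG ok ev g = None"
  using psiG_None_iff[of ok ev g] by blast

lemma psiG_SomeE:
  assumes "psiG ok ev g = Some v"
  obtains p q where "q \<noteq> 0" "g = Fract p q" "ok p q" "v = ev p q"
proof -
  have "\<exists>p q. q \<noteq> 0 \<and> g = Fract p q \<and> ok p q" using assms psiG_None_iff[of ok ev g] by auto
  then have ex: "\<exists>pq. snd pq \<noteq> 0 \<and> g = Fract (fst pq) (snd pq) \<and> ok (fst pq) (snd pq)"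
    by auto
  define pq where "pq = (SOME pq. snd pq \<noteq> 0 \<and> g = Fract (fst pq) (snd pq) \<and> ok (fst pq) (snd pq))"
  have pq: "snd pq \<noteq> 0 \<and> g = Fract (fst pq) (snd pq) \<and> ok (fst pq) (snd pq)"
    unfolding pq_def by (rule someI_ex[OF ex])
  have "psiG ok ev g = Some (ev (fst pq) (snd pq))"
    using \<open>\<exists>p q. _\<close> unfolding psiG_def pq_def[symmetric] by (simp only: if_True)
  then have "v = ev (fst pq) (snd pq)" using assms by simp
  then show ?thesis using that pq by blast
qed

lemma subf_UNIV: "subf (UNIV :: 'a::field set)"
  by (simp add: subf_def)

lemma psiG_place:
  assumes W: "\<And>p q p' q'. q \<noteq> 0 \<Longrightarrow> q' \<noteq> 0 \<Longrightarrow> ok p q \<Longrightarrow> ok p' q' \<Longrightarrow> p * q' = p' * q \<Longrightarrow> ev p q = ev p' q'"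
    and A: "\<And>p1 q1 p2 q2. q1 \<noteq> 0 \<Longrightarrow> q2 \<noteq> 0 \<Longrightarrow> ok p1 q1 \<Longrightarrow> ok p2 q2 \<Longrightarrow>
              ok (p1 * q2 + p2 * q1) (q1 * q2) \<and> ev (p1 * q2 + p2 * q1) (q1 * q2) = ev p1 q1 + ev p2 q2"
    and M: "\<And>p1 q1 p2 q2. q1 \<noteq> 0 \<Longrightarrow> q2 \<noteq> 0 \<Longrightarrow> ok p1 q1 \<Longrightarrow> ok p2 q2 \<Longrightarrow>
              ok (p1 * p2) (q1 * q2) \<and> ev (p1 * p2) (q1 * q2) = ev p1 q1 * ev p2 q2"
    and O: "ok 1 1" "ev 1 1 = 1"
    and I: "\<And>p q. p \<noteq> 0 \<Longrightarrow> q \<noteq> 0 \<Longrightarrow>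
       (\<forall>p' q'. q' \<noteq> 0 \<longrightarrow> Fract p q = Fract p' q' \<longrightarrow> \<not> ok p' q') \<longleftrightarrow>
       (\<exists>p' q'. q' \<noteq> 0 \<and> Fract q p = Fract p' q' \<and> ok p' q' \<and> ev p' q' = 0)"
  shows "is_place UNIV (psiG ok ev)"
  unfolding is_place_def
proof (intro conjI ballI allI impI)
  show "psiG ok ev 1 = Some 1" using psiG_rep[OF W, where q=1 and g=1 and p=1] O by (simp add: fract_collapse)
next
  fix a b u v assume u: "psiG ok ev a = Some u" and v: "psiG ok ev b = Some v"
  obtain p1 q1 where 1: "q1 \<noteq> 0" "a = Fract p1 q1" "ok p1 q1" "u = ev p1 q1" by (rule psiG_SomeE[OF u])
  obtain p2 q2 where 2: "q2 \<noteq> 0" "b = Fract p2 q2" "ok p2 q2" "v = ev p2 q2" by (rule psiG_SomeE[OF v])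
  have q12: "q1 * q2 \<noteq> 0" using 1(1) 2(1) by simp
  have ea: "a + b = Fract (p1 * q2 + p2 * q1) (q1 * q2)" unfolding 1(2) 2(2) using 1(1) 2(1) by simp
  have em: "a * b = Fract (p1 * p2) (q1 * q2)" unfolding 1(2) 2(2) by simp
  note A' = A[OF 1(1) 2(1) 1(3) 2(3)] and M' = M[OF 1(1) 2(1) 1(3) 2(3)]
  show "psiG ok ev (a + b) = Some (u + v)"
    using psiG_rep[OF W q12 ea] A' 1(4) 2(4) by simp
  show "psiG ok ev (a * b) = Some (u * v)"
    using psiG_rep[OF W q12 em] M' 1(4) 2(4) by simp
next
  fix g :: RY assume "g \<noteq> 0"
  obtain p q where pq: "g = Fract p q" "q \<noteq> 0" by (cases g) auto
  have p0: "p \<noteq> 0" using pq \<open>g \<noteq> 0\<close> by (auto simp: fract_collapse)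
  have ig: "inverse g = Fract q p" using pq by simp
  show "psiG ok ev g = None \<longleftrightarrow> psiG ok ev (inverse g) = Some 0"
  proof
    assume "psiG ok ev g = None"
    then have "\<forall>p' q'. q' \<noteq> 0 \<longrightarrow> Fract p q = Fract p' q' \<longrightarrow> \<not> ok p' q'"
      using pq psiG_None_iff[of ok ev g] by auto
    then obtain p' q' where "q' \<noteq> 0" "Fract q p = Fract p' q'" "ok p' q'" "ev p' q' = 0"
      using I[OF p0 pq(2)] by blast
    then show "psiG ok ev (inverse g) = Some 0" using psiG_rep[OF W, where q=q' and g="inverse g" and p=p'] ig by simp
  next
    assume "psiG ok ev (inverse g) = Some 0"
    then obtain p' q' where "q' \<noteq> 0" "inverse g = Fract p' q'" "ok p' q'" "0 = ev p' q'"
      by (rule psiG_SomeE)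
    then have "\<forall>p' q'. q' \<noteq> 0 \<longrightarrow> Fract p q = Fract p' q' \<longrightarrow> \<not> ok p' q'"
      using I[OF p0 pq(2)] ig by auto
    then show "psiG ok ev g = None" using pq by (intro psiG_None) auto
  qed
qed simp


definition psi_fin :: "real \<Rightarrow> RY \<Rightarrow> real option" where
  "psi_fin a = psiG (\<lambda>p q. poly q a \<noteq> 0) (\<lambda>p q. poly p a / poly q a)"

lemma psi_fin_W: "q \<noteq> 0 \<Longrightarrow> q' \<noteq> 0 \<Longrightarrow> poly q a \<noteq> 0 \<Longrightarrow> poly q' a \<noteq> 0 \<Longrightarrow> p * q' = p' * q \<Longrightarrow>
   poly p a / poly q a = poly p' a / poly q' a" for a :: real and p q p' q' :: "real poly"
proof -
  assume "poly q a \<noteq> 0" "poly q' a \<noteq> 0" "p * q' = p' * q"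
  have "poly p a * poly q' a = poly p' a * poly q a"
    using arg_cong[OF \<open>p * q' = p' * q\<close>, of "\<lambda>r. poly r a"] by (metis poly_mult)
  then show ?thesis using \<open>poly q a \<noteq> 0\<close> \<open>poly q' a \<noteq> 0\<close> by (simp add: field_simps)
qed

lemma psi_fin_val: "q \<noteq> 0 \<Longrightarrow> poly q a \<noteq> 0 \<Longrightarrow> psi_fin a (Fract p q) = Some (poly p a / poly q a)"
  unfolding psi_fin_def by (rule psiG_rep) (auto intro: psi_fin_W)

lemma psi_fin_None: "q \<noteq> 0 \<Longrightarrow> poly q a = 0 \<Longrightarrow> poly p a \<noteq> 0 \<Longrightarrow> psi_fin a (Fract p q) = None"
  unfolding psi_fin_def
proof (rule psiG_None)
  fix p' q' assume a: "q \<noteq> 0" "poly q a = 0" "poly p a \<noteq> 0" "q' \<noteq> 0" "Fract p q = Fract p' q'"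
  then have "p * q' = p' * q" by (simp add: eq_fract)
  then have "poly p a * poly q' a = poly p' a * poly q a" using arg_cong[of _ _ "\<lambda>r. poly r a"] by (metis poly_mult)
  then show "\<not> poly q' a \<noteq> 0" using a by simp
qed

lemma psi_fin_place: "is_place UNIV (psi_fin a)"
  unfolding psi_fin_def
proof (rule psiG_place)
  fix p q :: "real poly" assume p0: "p \<noteq> 0" and q0: "q \<noteq> 0"
  show "(\<forall>p' q'. q' \<noteq> 0 \<longrightarrow> Fract p q = Fract p' q' \<longrightarrow> \<not> poly q' a \<noteq> 0) \<longleftrightarrow>
        (\<exists>p' q'. q' \<noteq> 0 \<and> Fract q p = Fract p' q' \<and> poly q' a \<noteq> 0 \<and> poly p' a / poly q' a = 0)"
  proof
    assume H: "\<forall>p' q'. q' \<noteq> 0 \<longrightarrow> Fract p q = Fract p' q' \<longrightarrow> \<not> poly q' a \<noteq> 0"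
    have "inF UNIV p" "inF UNIV q" by (simp_all add: inF_def)
    from inF_coprime_rep[OF subf_UNIV this q0] obtain p1 q1 where
      c0: "inF UNIV p1 \<and> inF UNIV q1 \<and> q1 \<noteq> 0 \<and> Fract p q = Fract p1 q1 \<and>
           (\<forall>a. poly p1 a \<noteq> 0 \<or> poly q1 a \<noteq> 0)" by iprover
    then have c: "q1 \<noteq> 0" "Fract p q = Fract p1 q1" "poly p1 a \<noteq> 0 \<or> poly q1 a \<noteq> 0"
      by (simp_all only: simp_thms)
    have q1a: "poly q1 a = 0" using H[rule_format, OF c(1) c(2)] by simp
    then have p1a: "poly p1 a \<noteq> 0" using c by auto
    then have p10: "p1 \<noteq> 0" by auto
    have "Fract q p = Fract q1 p1" using c(2) p0 q0 c(1) p10 by (simp add: eq_fract algebra_simps)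
    then show "\<exists>p' q'. q' \<noteq> 0 \<and> Fract q p = Fract p' q' \<and> poly q' a \<noteq> 0 \<and> poly p' a / poly q' a = 0"
      using p10 p1a q1a \<open>Fract q p = Fract q1 p1\<close> by (intro exI[of _ q1] exI[of _ p1]) simp
  next
    assume "\<exists>p' q'. q' \<noteq> 0 \<and> Fract q p = Fract p' q' \<and> poly q' a \<noteq> 0 \<and> poly p' a / poly q' a = 0"
    then obtain p' q' where a0: "q' \<noteq> 0 \<and> Fract q p = Fract p' q' \<and> poly q' a \<noteq> 0 \<and>
       poly p' a / poly q' a = 0" by iprover
    then have a: "q' \<noteq> 0" "Fract q p = Fract p' q'" "poly q' a \<noteq> 0" "poly p' a = 0"
      by auto
    show "\<forall>p'' q''. q'' \<noteq> 0 \<longrightarrow> Fract p q = Fract p'' q'' \<longrightarrow> \<not> poly q'' a \<noteq> 0"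
    proof (intro allI impI notI)
      fix p'' q'' assume b: "q'' \<noteq> 0" "Fract p q = Fract p'' q''" "poly q'' a \<noteq> 0"
      have e1: "q * q' = p' * p" using a p0 by (simp add: eq_fract)
      have e2: "p * q'' = p'' * q" using b q0 by (simp add: eq_fract)
      have "(q * p) * (q' * q'') = (q * q') * (p * q'')" by (simp only: mult_ac)
      also have "\<dots> = (p' * p) * (p'' * q)" by (simp only: e1 e2)
      also have "\<dots> = (q * p) * (p' * p'')" by (simp only: mult_ac)
      finally have "(q * p) * (q' * q'') = (q * p) * (p' * p'')" .
      then have "q' * q'' = p' * p''" using p0 q0 by simp
      then have "poly q' a * poly q'' a = poly p' a * poly p'' a" using arg_cong[of _ _ "\<lambda>r. poly r a"] by (metis poly_mult)
      then show False using a b by simp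
    qed
  qed
next
  fix p q p' q' :: "real poly"
  assume "q \<noteq> 0" "q' \<noteq> 0" "poly q a \<noteq> 0" "poly q' a \<noteq> 0" "p * q' = p' * q"
  then show "poly p a / poly q a = poly p' a / poly q' a" by (rule psi_fin_W)
next
  fix p1 q1 p2 q2 :: "real poly" assume "poly q1 a \<noteq> 0" "poly q2 a \<noteq> 0"
  then show "poly (q1 * q2) a \<noteq> 0 \<and> poly (p1 * q2 + p2 * q1) a / poly (q1 * q2) a =
      poly p1 a / poly q1 a + poly p2 a / poly q2 a"
    by (simp add: add_divide_distrib)
next
  fix p1 q1 p2 q2 :: "real poly" assume "poly q1 a \<noteq> 0" "poly q2 a \<noteq> 0"
  then show "poly (q1 * q2) a \<noteq> 0 \<and> poly (p1 * p2) a / poly (q1 * q2) a =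
      poly p1 a / poly q1 a * (poly p2 a / poly q2 a)"
    by simp
qed simp_all


definition psi_inf :: "RY \<Rightarrow> real option" where
  "psi_inf = psiG (\<lambda>p q. degree p \<le> degree q) (\<lambda>p q. coeff p (degree q) / lead_coeff q)"

lemma psi_inf_W:
  fixes p q p' q' :: "real poly"
  assumes "q \<noteq> 0" "q' \<noteq> 0" "degree p \<le> degree q" "degree p' \<le> degree q'" "p * q' = p' * q"
  shows "coeff p (degree q) / lead_coeff q = coeff p' (degree q') / lead_coeff q'"
proof -
  have "coeff (p * q') (degree q + degree q') = coeff p (degree q) * lead_coeff q'"
    using coeff_mult_le_sum[of p "degree q" q' "degree q'"] assms by simp
  moreover have "coeff (p' * q) (degree q' + degree q) = coeff p' (degree q') * lead_coeff q"
    using coeff_mult_le_sum[of p' "degree q'" q "degree q"] assms by simp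
  ultimately have "coeff p (degree q) * lead_coeff q' = coeff p' (degree q') * lead_coeff q"
    using assms(5) by (simp add: add.commute)
  then show ?thesis using assms by (simp add: field_simps)
qed

lemma psi_inf_val: "q \<noteq> 0 \<Longrightarrow> degree p \<le> degree q \<Longrightarrow>
   psi_inf (Fract p q) = Some (coeff p (degree q) / lead_coeff q)"
  unfolding psi_inf_def by (rule psiG_rep) (auto intro: psi_inf_W)

lemma psi_inf_None: "q \<noteq> 0 \<Longrightarrow> degree p > degree q \<Longrightarrow> psi_inf (Fract p q) = None"
  unfolding psi_inf_def
proof (rule psiG_None)
  fix p' q' assume a: "q \<noteq> 0" "degree p > degree q" "q' \<noteq> 0" "Fract p q = Fract p' q'"
  then have e: "p * q' = p' * q" by (simp add: eq_fract)
  have p0: "p \<noteq> 0" using a by auto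
  show "\<not> degree p' \<le> degree q'"
  proof
    assume d: "degree p' \<le> degree q'"
    have p'0: "p' \<noteq> 0" using e p0 a by auto
    have "degree p + degree q' = degree p' + degree q"
      using arg_cong[OF e, of degree] p0 a p'0 by (simp add: degree_mult_eq)
    then show False using a d by simp
  qed
qed

lemma psi_inf_place: "is_place UNIV psi_inf"
  unfolding psi_inf_def
proof (rule psiG_place)
  fix p1 q1 p2 q2 :: "real poly"
  assume q: "q1 \<noteq> 0" "q2 \<noteq> 0" and d: "degree p1 \<le> degree q1" "degree p2 \<le> degree q2"
  have dq: "degree (q1 * q2) = degree q1 + degree q2" using q by (simp add: degree_mult_eq)
  have lq: "lead_coeff (q1 * q2) = lead_coeff q1 * lead_coeff q2" by (simp add: lead_coeff_mult)
  have c1: "coeff (p1 * q2) (degree q1 + degree q2) = coeff p1 (degree q1) * lead_coeff q2"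
    using coeff_mult_le_sum[of p1 "degree q1" q2 "degree q2"] d by simp
  have c2: "coeff (p2 * q1) (degree q1 + degree q2) = coeff p2 (degree q2) * lead_coeff q1"
    using coeff_mult_le_sum[of p2 "degree q2" q1 "degree q1"] d by (simp add: add.commute)
  have c3: "coeff (p1 * p2) (degree q1 + degree q2) = coeff p1 (degree q1) * coeff p2 (degree q2)"
    using coeff_mult_le_sum[of p1 "degree q1" p2 "degree q2"] d by simp
  have "degree (p1 * q2 + p2 * q1) \<le> degree (q1 * q2)"
    using dq d degree_mult_le[of p1 q2] degree_mult_le[of p2 q1]
    by (intro degree_add_le) auto
  moreover have "coeff (p1 * q2 + p2 * q1) (degree (q1 * q2)) / lead_coeff (q1 * q2) =
      coeff p1 (degree q1) / lead_coeff q1 + coeff p2 (degree q2) / lead_coeff q2"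
    using c1 c2 q unfolding dq lq by (simp add: field_simps coeff_mult_degree_sum)
  ultimately show "degree (p1 * q2 + p2 * q1) \<le> degree (q1 * q2) \<and>
      coeff (p1 * q2 + p2 * q1) (degree (q1 * q2)) / lead_coeff (q1 * q2) =
      coeff p1 (degree q1) / lead_coeff q1 + coeff p2 (degree q2) / lead_coeff q2" by simp
  have "degree (p1 * p2) \<le> degree (q1 * q2)" using dq d degree_mult_le[of p1 p2] by simp
  moreover have "coeff (p1 * p2) (degree (q1 * q2)) / lead_coeff (q1 * q2) =
      coeff p1 (degree q1) / lead_coeff q1 * (coeff p2 (degree q2) / lead_coeff q2)"
    using c3 q unfolding dq lq by (simp add: field_simps coeff_mult_degree_sum)
  ultimately show "degree (p1 * p2) \<le> degree (q1 * q2) \<and>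
      coeff (p1 * p2) (degree (q1 * q2)) / lead_coeff (q1 * q2) =
      coeff p1 (degree q1) / lead_coeff q1 * (coeff p2 (degree q2) / lead_coeff q2)" by simp
next
  fix p q :: "real poly" assume p0: "p \<noteq> 0" and q0: "q \<noteq> 0"
  show "(\<forall>p' q'. q' \<noteq> 0 \<longrightarrow> Fract p q = Fract p' q' \<longrightarrow> \<not> degree p' \<le> degree q') \<longleftrightarrow>
        (\<exists>p' q'. q' \<noteq> 0 \<and> Fract q p = Fract p' q' \<and> degree p' \<le> degree q' \<and>
            coeff p' (degree q') / lead_coeff q' = 0)"
  proof
    assume H: "\<forall>p' q'. q' \<noteq> 0 \<longrightarrow> Fract p q = Fract p' q' \<longrightarrow> \<not> degree p' \<le> degree q'"
    have "\<not> degree p \<le> degree q" using H[rule_format, OF q0 refl] .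
    then have "degree q < degree p" by simp
    then show "\<exists>p' q'. q' \<noteq> 0 \<and> Fract q p = Fract p' q' \<and> degree p' \<le> degree q' \<and>
            coeff p' (degree q') / lead_coeff q' = 0"
      using p0 by (intro exI[of _ q] exI[of _ p]) (auto simp: coeff_eq_0)
  next
    assume "\<exists>p' q'. q' \<noteq> 0 \<and> Fract q p = Fract p' q' \<and> degree p' \<le> degree q' \<and>
            coeff p' (degree q') / lead_coeff q' = 0"
    then obtain p' q' where a0: "q' \<noteq> 0 \<and> Fract q p = Fract p' q' \<and> degree p' \<le> degree q' \<and>
            coeff p' (degree q') / lead_coeff q' = 0" by iprover
    then have a: "q' \<noteq> 0" "Fract q p = Fract p' q'" "degree p' \<le> degree q'"
      "coeff p' (degree q') = 0" by auto
    have e1: "q * q' = p' * p" using a p0 by (simp add: eq_fract)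
    have p'0: "p' \<noteq> 0" using e1 q0 a by auto
    have dlt: "degree p' < degree q'"
      using a(3,4) p'0 by (metis le_neq_implies_less leading_coeff_0_iff)
    show "\<forall>p'' q''. q'' \<noteq> 0 \<longrightarrow> Fract p q = Fract p'' q'' \<longrightarrow> \<not> degree p'' \<le> degree q''"
    proof (intro allI impI notI)
      fix p'' q'' assume b: "q'' \<noteq> 0" "Fract p q = Fract p'' q''" "degree p'' \<le> degree q''"
      have e2: "p * q'' = p'' * q" using b q0 by (simp add: eq_fract)
      have "(q * p) * (q' * q'') = (q * q') * (p * q'')" by (simp only: mult_ac)
      also have "\<dots> = (p' * p) * (p'' * q)" by (simp only: e1 e2)
      also have "\<dots> = (q * p) * (p' * p'')" by (simp only: mult_ac)
      finally have "(q * p) * (q' * q'') = (q * p) * (p' * p'')" .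
      then have e3: "q' * q'' = p' * p''" using p0 q0 by simp
      have p''0: "p'' \<noteq> 0" using e3 a b by auto
      have "degree q' + degree q'' = degree p' + degree p''"
        using arg_cong[OF e3, of degree] a b p'0 p''0 by (simp add: degree_mult_eq)
      then show False using dlt b by simp
    qed
  qed
next
  fix p q p' q' :: "real poly"
  assume "q \<noteq> 0" "q' \<noteq> 0" "degree p \<le> degree q" "degree p' \<le> degree q'" "p * q' = p' * q"
  then show "coeff p (degree q) / lead_coeff q = coeff p' (degree q') / lead_coeff q'" by (rule psi_inf_W)
qed simp_all

definition pl :: "real option \<Rightarrow> RY \<Rightarrow> real option" where
  "pl oa = (case oa of Some a \<Rightarrow> psi_fin a | None \<Rightarrow> psi_inf)"

lemma pl_place: "is_place UNIV (pl oa)"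
  by (cases oa) (simp_all add: pl_def psi_fin_place psi_inf_place)


lemma Fbar_Y_iff: "g \<in> Fbar_Y F \<longleftrightarrow> (\<exists>p q. inF F p \<and> inF F q \<and> q \<noteq> 0 \<and> g = Fract p q)"
  unfolding Fbar_Y_def inF_def by blast

lemma Fbar_Y_subf: assumes S: "subf F" shows "subf (Fbar_Y F)"
  unfolding subf_def
proof (intro conjI ballI)
  show "0 \<in> Fbar_Y F" unfolding Fbar_Y_iff using inF_0[OF S] inF_1[OF S]
    by (intro exI[of _ 0] exI[of _ 1]) (simp add: fract_collapse)
  show "1 \<in> Fbar_Y F" unfolding Fbar_Y_iff using inF_1[OF S]
    by (intro exI[of _ 1] exI[of _ 1]) (simp add: fract_collapse)
next
  fix a b assume "a \<in> Fbar_Y F" "b \<in> Fbar_Y F"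
  then obtain p1 q1 p2 q2 where 1: "inF F p1" "inF F q1" "q1 \<noteq> 0" "a = Fract p1 q1"
    and 2: "inF F p2" "inF F q2" "q2 \<noteq> 0" "b = Fract p2 q2" unfolding Fbar_Y_iff by blast
  show "a + b \<in> Fbar_Y F" unfolding Fbar_Y_iff using 1 2
    by (intro exI[of _ "p1 * q2 + p2 * q1"] exI[of _ "q1 * q2"]) (simp add: inF_add inF_mult S)
  show "a * b \<in> Fbar_Y F" unfolding Fbar_Y_iff using 1 2
    by (intro exI[of _ "p1 * p2"] exI[of _ "q1 * q2"]) (simp add: inF_mult S)
  show "- a \<in> Fbar_Y F" unfolding Fbar_Y_iff using 1
    by (intro exI[of _ "- p1"] exI[of _ "q1"]) (simp add: inF_uminus S)
next
  fix a assume "a \<in> Fbar_Y F"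
  then obtain p q where 1: "inF F p" "inF F q" "q \<noteq> 0" "a = Fract p q" unfolding Fbar_Y_iff by blast
  show "inverse a \<in> Fbar_Y F"
  proof (cases "p = 0")
    case True
    then show ?thesis unfolding Fbar_Y_iff using 1 inF_0[OF S] inF_1[OF S]
      by (intro exI[of _ 0] exI[of _ 1]) (simp add: fract_collapse)
  next
    case False
    then show ?thesis unfolding Fbar_Y_iff using 1
      by (intro exI[of _ q] exI[of _ p]) simp
  qed
qed

lemma cst_in: "subf F \<Longrightarrow> r \<in> F \<Longrightarrow> cst r \<in> Fbar_Y F"
  unfolding Fbar_Y_iff cst_def by (intro exI[of _ "[:r:]"] exI[of _ 1]) (simp add: inF_const inF_1)

lemma Y_in: "subf F \<Longrightarrow> Y_el \<in> Fbar_Y F"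
  unfolding Fbar_Y_iff Y_el_def by (intro exI[of _ "[:0, 1:]"] exI[of _ 1]) (simp add: inF_X inF_1)

lemma Fract1_in: "subf F \<Longrightarrow> inF F p \<Longrightarrow> Fract p 1 \<in> Fbar_Y F"
  unfolding Fbar_Y_iff by (intro exI[of _ p] exI[of _ 1]) (simp add: inF_1)

lemma Y_nz: "Y_el \<noteq> 0"
  by (simp add: Y_el_def Zero_fract_def eq_fract)

lemma pl_cst: "pl oa (cst r) = Some r"
  by (cases oa) (simp_all add: pl_def cst_def psi_fin_val psi_inf_val)

lemma pl_Y: "pl oa Y_el = oa"
  by (cases oa) (simp_all add: pl_def Y_el_def psi_fin_val psi_inf_None)

lemma Fract_poly_expand_le:
  fixes p :: "'a::idom poly"
  assumes "degree p \<le> n"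
  shows "Fract p 1 = (\<Sum>i\<le>n. Fract [:coeff p i:] 1 * Fract [:0, 1:] 1 ^ i)"
proof -
  have "Fract p 1 = Fract (\<Sum>i\<le>n. monom (coeff p i) i) 1" by (simp add: poly_as_sum_of_monoms' assms)
  also have "\<dots> = (\<Sum>i\<le>n. Fract (monom (coeff p i) i) 1)" by (rule Fract_sum)
  also have "\<dots> = (\<Sum>i\<le>n. Fract [:coeff p i:] 1 * Fract [:0, 1:] 1 ^ i)"
    by (rule sum.cong) (simp_all add: monom_altdef Fract_power[symmetric])
  finally show ?thesis .
qed

lemma RY_expand: "degree p \<le> n \<Longrightarrow> Fract p 1 = (\<Sum>i\<le>n. cst (coeff p i) * Y_el ^ i)"
  unfolding cst_def Y_el_def by (rule Fract_poly_expand_le)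

lemma RY_expand_inf:
  assumes "degree p \<le> n"
  shows "Fract p 1 = Y_el ^ n * (\<Sum>i\<le>n. cst (coeff p i) * inverse Y_el ^ (n - i))"
proof -
  have *: "Y_el ^ n * (cst (coeff p i) * inverse Y_el ^ (n - i)) = cst (coeff p i) * Y_el ^ i"
    if "i \<le> n" for i
  proof -
    have "Y_el ^ n = Y_el ^ i * Y_el ^ (n - i)" using that by (simp flip: power_add)
    then show ?thesis using Y_nz by (simp add: power_inverse field_simps)
  qed
  have "(\<Sum>i\<le>n. Y_el ^ n * (cst (coeff p i) * inverse Y_el ^ (n - i))) = (\<Sum>i\<le>n. cst (coeff p i) * Y_el ^ i)"
    by (intro sum.cong refl) (simp add: *)
  then show ?thesis using RY_expand[OF assms] by (simp add: sum_distrib_left)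
qed

context
  fixes F :: "real set" and \<psi> :: "RY \<Rightarrow> real option"
  assumes S: "subf F" and P: "is_place (Fbar_Y F) \<psi>" and C: "\<And>r. r \<in> F \<Longrightarrow> \<psi> (cst r) = Some r"
begin

lemma SY: "subf (Fbar_Y F)" using Fbar_Y_subf[OF S] .

lemma place_eval_fin:
  assumes Y: "\<psi> Y_el = Some a" and p: "inF F p"
  shows "\<psi> (Fract p 1) = Some (poly p a)"
proof -
  have "\<psi> (\<Sum>i\<le>degree p. cst (coeff p i) * Y_el ^ i) = Some (\<Sum>i\<le>degree p. coeff p i * a ^ i)"
    using p by (intro pl_sum[OF P SY]) (auto simp: inF_def C Y intro!: pl_mult[OF P SY] pl_power[OF P SY]
      subf_mult[OF SY] subf_power[OF SY] cst_in[OF S] Y_in[OF S])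
  then show ?thesis by (simp add: RY_expand[of p "degree p"] poly_altdef)
qed

lemma place_eval_inf:
  assumes Y: "\<psi> Y_el = None" and p: "inF F p"
  shows "\<psi> (\<Sum>i\<le>n. cst (coeff p i) * inverse Y_el ^ (n - i)) = Some (coeff p n)"
proof -
  have Z: "\<psi> (inverse Y_el) = Some 0" using pl_inverse_None[OF P SY Y_in[OF S] Y] .
  have "\<psi> (\<Sum>i\<le>n. cst (coeff p i) * inverse Y_el ^ (n - i)) = Some (\<Sum>i\<le>n. coeff p i * 0 ^ (n - i))"
    using p by (intro pl_sum[OF P SY]) (auto simp: inF_def C Z intro!: pl_mult[OF P SY] pl_power[OF P SY]
      subf_mult[OF SY] subf_power[OF SY] cst_in[OF S] Y_in[OF S] subf_inverse[OF SY])
  moreover have "(\<Sum>i\<le>n. coeff p i * (0::real) ^ (n - i)) = coeff p n"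
  proof -
    have "(\<Sum>i\<le>n. coeff p i * (0::real) ^ (n - i)) = (\<Sum>i\<le>n. if i = n then coeff p i else 0)"
      by (rule sum.cong) auto
    then show ?thesis by simp
  qed
  ultimately show ?thesis by simp
qed

lemma inv_sum_in: "inF F p \<Longrightarrow> (\<Sum>i\<le>n. cst (coeff p i) * inverse Y_el ^ (n - i)) \<in> Fbar_Y F"
  by (auto simp: inF_def intro!: subf_sum[OF SY] subf_mult[OF SY] subf_power[OF SY] cst_in[OF S]
      Y_in[OF S] subf_inverse[OF SY])

lemma place_unique_fin:
  assumes Y: "\<psi> Y_el = Some a" and g: "g \<in> Fbar_Y F"
  shows "\<psi> g = psi_fin a g"
proof -
  obtain p q where pq: "inF F p" "inF F q" "q \<noteq> 0" "g = Fract p q" using g unfolding Fbar_Y_iff by blast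
  from inF_coprime_rep[OF S pq(1,2,3)] obtain p' q' where
    c0: "inF F p' \<and> inF F q' \<and> q' \<noteq> 0 \<and> Fract p q = Fract p' q' \<and> (\<forall>a. poly p' a \<noteq> 0 \<or> poly q' a \<noteq> 0)"
    by iprover
  then have c: "inF F p'" "inF F q'" "q' \<noteq> 0" "g = Fract p' q'" "poly p' a \<noteq> 0 \<or> poly q' a \<noteq> 0"
    using pq(4) by (simp_all only: simp_thms)
  have gg: "g = Fract p' 1 * inverse (Fract q' 1)" using c(3,4) by simp
  have pin: "Fract p' 1 \<in> Fbar_Y F" "Fract q' 1 \<in> Fbar_Y F" using Fract1_in[OF S] c by auto
  have q'nz: "Fract q' 1 \<noteq> 0" using c(3) by (simp add: Zero_fract_def eq_fract)
  note ep = place_eval_fin[OF Y c(1)] and eq = place_eval_fin[OF Y c(2)]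
  show ?thesis
  proof (cases "poly q' a = 0")
    case False
    have "\<psi> g = Some (poly p' a * inverse (poly q' a))"
      unfolding gg by (rule pl_mult[OF P SY pin(1) subf_inverse[OF SY pin(2)] ep pl_inverse[OF P SY pin(2) eq False]])
    then show ?thesis using psi_fin_val[OF c(3) False, of p'] c(4) by (simp add: divide_inverse)
  next
    case True
    then have pa: "poly p' a \<noteq> 0" using c(5) by simp
    have "\<psi> (inverse (Fract q' 1)) = None" using pl_inverse_0[OF P SY pin(2) q'nz] eq True by simp
    then have "\<psi> g = None" unfolding gg
      by (rule pl_mult_None'[OF P SY pin(1) subf_inverse[OF SY pin(2)] ep _ pa])
    then show ?thesis using psi_fin_None[OF c(3) True pa] c(4) by simp
  qed
qed

lemma place_unique_inf:
  assumes Y: "\<psi> Y_el = None" and g: "g \<in> Fbar_Y F"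
  shows "\<psi> g = psi_inf g"
proof -
  obtain p q where pq: "inF F p" "inF F q" "q \<noteq> 0" "g = Fract p q" using g unfolding Fbar_Y_iff by blast
  define n where "n = max (degree p) (degree q)"
  define SP where "SP = (\<Sum>i\<le>n. cst (coeff p i) * inverse Y_el ^ (n - i))"
  define SQ where "SQ = (\<Sum>i\<le>n. cst (coeff q i) * inverse Y_el ^ (n - i))"
  have eP: "Fract p 1 = Y_el ^ n * SP" unfolding SP_def by (rule RY_expand_inf) (simp add: n_def)
  have eQ: "Fract q 1 = Y_el ^ n * SQ" unfolding SQ_def by (rule RY_expand_inf) (simp add: n_def)
  have q1: "Fract q 1 \<noteq> 0" using pq(3) by (simp add: Zero_fract_def eq_fract)
  then have SQ0: "SQ \<noteq> 0" using eQ by auto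
  have "g = Fract p 1 * inverse (Fract q 1)" using pq by simp
  also have "\<dots> = SP * inverse SQ" using Y_nz SQ0 unfolding eP eQ by (simp add: field_simps)
  finally have gg: "g = SP * inverse SQ" .
  have vP: "\<psi> SP = Some (coeff p n)" unfolding SP_def by (rule place_eval_inf[OF Y pq(1)])
  have vQ: "\<psi> SQ = Some (coeff q n)" unfolding SQ_def by (rule place_eval_inf[OF Y pq(2)])
  have inP: "SP \<in> Fbar_Y F" "SQ \<in> Fbar_Y F" unfolding SP_def SQ_def using inv_sum_in pq by auto
  show ?thesis
  proof (cases "degree p \<le> degree q")
    case True
    then have n: "n = degree q" by (simp add: n_def)
    have lq: "coeff q n \<noteq> 0" using pq(3) n by simp
    have "\<psi> g = Some (coeff p n * inverse (coeff q n))"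
      unfolding gg by (rule pl_mult[OF P SY inP(1) subf_inverse[OF SY inP(2)] vP pl_inverse[OF P SY inP(2) vQ lq]])
    then show ?thesis using psi_inf_val[OF pq(3) True] pq(4) n by (simp add: divide_inverse)
  next
    case False
    then have n: "n = degree p" by (simp add: n_def)
    have p0: "p \<noteq> 0" using False by auto
    have lp: "coeff p n \<noteq> 0" using p0 n by simp
    have cq: "coeff q n = 0" using False n by (simp add: coeff_eq_0)
    have "\<psi> (inverse SQ) = None" using pl_inverse_0[OF P SY inP(2) SQ0] vQ cq by simp
    then have "\<psi> g = None" unfolding gg
      by (rule pl_mult_None'[OF P SY inP(1) subf_inverse[OF SY inP(2)] vP _ lp])
    then show ?thesis using psi_inf_None[OF pq(3)] False pq(4) by simp
  qed
qed

lemma place_unique: "\<psi> g = (if g \<in> Fbar_Y F then pl (\<psi> Y_el) g else None)"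
proof (cases "g \<in> Fbar_Y F")
  case True
  then show ?thesis using place_unique_fin place_unique_inf by (cases "\<psi> Y_el") (simp_all add: pl_def)
next
  case False
  then show ?thesis using pl_notin[OF P SY] by simp
qed

end

lemma pl_restrict_place: "subf F \<Longrightarrow> is_place (Fbar_Y F) (\<lambda>g. if g \<in> Fbar_Y F then pl oa g else None)"
  by (rule place_restrict[OF pl_place subf_UNIV Fbar_Y_subf]) auto

lemma zeta_F_eq:
  assumes "subf (Fbar R \<xi>)"
  shows "zeta_F R \<xi> \<zeta> = (\<lambda>g. if g \<in> Fbar_Y (Fbar R \<xi>) then pl (\<zeta> y_el) g else None)"
  unfolding zeta_F_def
proof (rule the_equality)
  show "is_place (Fbar_Y (Fbar R \<xi>)) (\<lambda>g. if g \<in> Fbar_Y (Fbar R \<xi>) then pl (\<zeta> y_el) g else None) \<and>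
    (\<forall>r\<in>Fbar R \<xi>. (if cst r \<in> Fbar_Y (Fbar R \<xi>) then pl (\<zeta> y_el) (cst r) else None) = Some r) \<and>
    (if Y_el \<in> Fbar_Y (Fbar R \<xi>) then pl (\<zeta> y_el) Y_el else None) = \<zeta> y_el"
    using pl_restrict_place[OF assms] cst_in[OF assms] Y_in[OF assms] by (simp add: pl_cst pl_Y)
next
  fix \<psi> assume H: "is_place (Fbar_Y (Fbar R \<xi>)) \<psi> \<and> (\<forall>r\<in>Fbar R \<xi>. \<psi> (cst r) = Some r) \<and> \<psi> Y_el = \<zeta> y_el"
  show "\<psi> = (\<lambda>g. if g \<in> Fbar_Y (Fbar R \<xi>) then pl (\<zeta> y_el) g else None)"
  proof
    fix g show "\<psi> g = (if g \<in> Fbar_Y (Fbar R \<xi>) then pl (\<zeta> y_el) g else None)"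
      using place_unique[OF assms, of \<psi> g] H by simp
  qed
qed

section \<open>Local positivity\<close>

definition nbh :: "real option \<Rightarrow> real set \<Rightarrow> bool" where
  "nbh oa T \<longleftrightarrow> (case oa of Some a \<Rightarrow> \<exists>d>0. \<forall>t. \<bar>t - a\<bar> < d \<longrightarrow> t \<in> T
                            | None \<Rightarrow> \<exists>M. \<forall>t. M < \<bar>t\<bar> \<longrightarrow> t \<in> T)"

lemma nbh_UNIV: "nbh oa UNIV"
  by (cases oa) (auto simp: nbh_def intro: exI[of _ 1])

lemma nbh_Int: "nbh oa T1 \<Longrightarrow> nbh oa T2 \<Longrightarrow> nbh oa (T1 \<inter> T2)"
proof (cases oa)
  case None
  assume "nbh oa T1" "nbh oa T2"
  then obtain M1 M2 where "\<forall>t. M1 < \<bar>t\<bar> \<longrightarrow> t \<in> T1" "\<forall>t. M2 < \<bar>t\<bar> \<longrightarrow> t \<in> T2"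
    using None by (auto simp: nbh_def)
  then have "\<forall>t. max M1 M2 < \<bar>t\<bar> \<longrightarrow> t \<in> T1 \<inter> T2" by auto
  then show ?thesis unfolding nbh_def None option.case by (rule exI)
next
  case (Some a)
  assume "nbh oa T1" "nbh oa T2"
  then obtain d1 d2 where "d1 > 0" "\<forall>t. \<bar>t - a\<bar> < d1 \<longrightarrow> t \<in> T1" "d2 > 0" "\<forall>t. \<bar>t - a\<bar> < d2 \<longrightarrow> t \<in> T2"
    using Some by (auto simp: nbh_def)
  then have "min d1 d2 > 0 \<and> (\<forall>t. \<bar>t - a\<bar> < min d1 d2 \<longrightarrow> t \<in> T1 \<inter> T2)" by auto
  then show ?thesis unfolding nbh_def Some option.case by (rule exI)
qed

lemma nbh_avoid:
  assumes "nbh oa T" "finite S"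
  shows "\<exists>t\<in>T. t \<notin> S"
proof -
  have "infinite T"
  proof (cases oa)
    case None
    then obtain M where M: "\<forall>t. M < \<bar>t\<bar> \<longrightarrow> t \<in> T" using assms by (auto simp: nbh_def)
    have "{\<bar>M\<bar><..} \<subseteq> T" using M by auto
    then show ?thesis using infinite_Ioi finite_subset by blast
  next
    case (Some a)
    then obtain d where d: "d > 0" "\<forall>t. \<bar>t - a\<bar> < d \<longrightarrow> t \<in> T" using assms by (auto simp: nbh_def)
    have "{a - d<..<a + d} \<subseteq> T" using d by auto
    moreover have "infinite {a - d<..<a + d}" using d by (intro infinite_Ioo) simp
    ultimately show ?thesis using finite_subset by blast
  qed
  then have "T - S \<noteq> {}" using assms(2) by (metis Diff_infinite_finite finite.emptyI)
  then show ?thesis by blast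
qed

lemma poly_pos_near:
  fixes r :: "real poly"
  assumes "poly r a > 0"
  shows "\<exists>d>0. \<forall>t. \<bar>t - a\<bar> < d \<longrightarrow> poly r t > 0"
proof -
  have "(\<lambda>x. poly r x) \<midarrow>a\<rightarrow> poly r a" using poly_isCont[where p=r and x=a] by (simp add: isCont_def)
  from LIM_D[OF this assms] obtain s where s: "s > 0"
    "\<forall>x. x \<noteq> a \<and> norm (x - a) < s \<longrightarrow> norm (poly r x - poly r a) < poly r a" by blast
  show ?thesis
  proof (intro exI[of _ s] conjI allI impI)
    fix t assume "\<bar>t - a\<bar> < s"
    then show "poly r t > 0" using s(2)[rule_format, of t] assms by (cases "t = a") auto
  qed (rule s(1))
qed

lemma local_pos:
  assumes "pl oa g = Some v" "v > 0"
  shows "nbh oa {t. \<exists>w>0. psi_fin t g = Some w}"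
proof (cases oa)
  case (Some a)
  then have "psi_fin a g = Some v" using assms by (simp add: pl_def)
  then obtain p q where pq: "q \<noteq> 0" "g = Fract p q" "poly q a \<noteq> 0" "v = poly p a / poly q a"
    unfolding psi_fin_def by (rule psiG_SomeE)
  have "poly (p * q) a > 0" using pq assms(2) by (simp add: zero_less_divide_iff zero_less_mult_iff)
  from poly_pos_near[OF this] obtain d where d: "d > 0" "\<forall>t. \<bar>t - a\<bar> < d \<longrightarrow> poly (p * q) t > 0" by blast
  have "\<exists>w>0. psi_fin t g = Some w" if "\<bar>t - a\<bar> < d" for t
  proof -
    have pt: "poly p t * poly q t > 0" using d(2) that by simp
    then have "poly q t \<noteq> 0" by auto
    then show ?thesis using psi_fin_val[OF pq(1) \<open>poly q t \<noteq> 0\<close>, of p] pq(2) pt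
      by (simp add: zero_less_divide_iff zero_less_mult_iff)
  qed
  then show ?thesis using Some d(1) unfolding nbh_def by auto
next
  case None
  then have "psi_inf g = Some v" using assms by (simp add: pl_def)
  then obtain p q where pq: "q \<noteq> 0" "g = Fract p q" "degree p \<le> degree q"
      "v = coeff p (degree q) / lead_coeff q"
    unfolding psi_inf_def by (rule psiG_SomeE)
  have cp: "coeff p (degree q) \<noteq> 0" using pq assms(2) by auto
  then have dpq: "degree p = degree q" using pq(3) by (metis coeff_eq_0 le_neq_implies_less)
  define r where "r = reflect_poly p * reflect_poly q"
  have "poly r 0 = lead_coeff p * lead_coeff q" by (simp add: r_def)
  also have "\<dots> > 0" using pq(4) assms(2) dpq by (simp add: zero_less_divide_iff zero_less_mult_iff)
  finally have "poly r 0 > 0" .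
  from poly_pos_near[OF this] obtain d where d: "d > 0" "\<forall>t. \<bar>t - 0\<bar> < d \<longrightarrow> poly r t > 0" by blast
  have "\<exists>w>0. psi_fin t g = Some w" if t: "inverse d < \<bar>t\<bar>" for t
  proof -
    have t0: "t \<noteq> 0" using t d(1) by (metis abs_zero inverse_positive_iff_positive less_asym)
    have "\<bar>inverse t\<bar> < d" using t d(1) t0
      by (metis abs_inverse abs_ge_zero inverse_less_imp_less inverse_inverse_eq)
    then have "poly r (inverse t) > 0" using d(2) by simp
    moreover have "poly r (inverse t) = (inverse t ^ degree p * inverse t ^ degree q) * (poly p t * poly q t)"
      using t0 by (simp add: r_def poly_reflect_poly_nz)
    ultimately have pt: "poly p t * poly q t > 0"
      by (metis zero_less_mult_iff zero_less_power2 power2_eq_square dpq t0 inverse_nonzero_iff_nonzero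
          power_not_zero less_irrefl not_square_less_zero power_mult_distrib)
    then have "poly q t \<noteq> 0" by auto
    then show ?thesis using psi_fin_val[OF pq(1) \<open>poly q t \<noteq> 0\<close>, of p] pq(2) pt
      by (simp add: zero_less_divide_iff zero_less_mult_iff)
  qed
  then show ?thesis using None unfolding nbh_def by auto
qed


abbreviation mapc :: "real poly \<Rightarrow> real poly poly" where
  "mapc \<equiv> map_poly (\<lambda>c. [:c:])"

lemma coeff_mapc: "coeff (mapc p) i = [:coeff p i:]"
  by (simp add: coeff_map_poly)

lemma pCons_add1: "[:a + b:] = [:a:] + [:b:]"
  by (simp add: add_pCons)

lemma pCons_sum: "[:sum f A:] = (\<Sum>x\<in>A. [:f x:])"
  by (induct A rule: infinite_finite_induct) (simp_all add: pCons_add1 del: add_pCons)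

lemma mapc_add: "mapc (p + q) = mapc p + mapc q"
  by (rule poly_eqI) (simp add: coeff_mapc)

lemma mapc_mult: "mapc (p * q) = mapc p * mapc q"
  by (rule poly_eqI) (simp add: coeff_mapc coeff_mult pCons_sum mult.commute)

lemma mapc_1: "mapc 1 = 1"
  by (simp add: pCons_one)

lemma mapc_eq_0[simp]: "mapc p = 0 \<longleftrightarrow> p = 0"
  by (metis coeff_mapc pCons_eq_0_iff poly_eqI coeff_0 map_poly_0)

lemma mapc_inj: "mapc p = mapc q \<longleftrightarrow> p = q"
  by (metis coeff_mapc pCons_eq_iff poly_eqI)

definition emb :: "RY \<Rightarrow> RXY" where
  "emb g = (SOME B. \<exists>p q. q \<noteq> 0 \<and> g = Fract p q \<and> B = Fract (mapc p) (mapc q))"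

lemma emb_Fract: assumes "q \<noteq> 0" shows "emb (Fract p q) = Fract (mapc p) (mapc q)"
proof -
  have ex: "\<exists>B. \<exists>p' q'. q' \<noteq> 0 \<and> Fract p q = Fract p' q' \<and> B = Fract (mapc p') (mapc q')"
    using assms by blast
  obtain p' q' where pq: "q' \<noteq> 0" "Fract p q = Fract p' q'" "emb (Fract p q) = Fract (mapc p') (mapc q')"
    using someI_ex[OF ex] unfolding emb_def[symmetric] by blast
  have "p * q' = p' * q" using pq assms by (simp add: eq_fract)
  then have "mapc p * mapc q' = mapc p' * mapc q" by (simp flip: mapc_mult)
  then show ?thesis using pq assms by (simp add: eq_fract mapc_eq_0)
qed

lemma emb_add: "emb (a + b) = emb a + emb b"
  by (cases a, cases b) (simp add: emb_Fract mapc_add mapc_mult)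

lemma emb_mult: "emb (a * b) = emb a * emb b"
  by (cases a, cases b) (simp add: emb_Fract mapc_mult)

lemma emb_1: "emb 1 = 1"
  using emb_Fract[of 1 1] by (simp add: mapc_1 fract_collapse)

lemma emb_0: "emb 0 = 0"
  using emb_Fract[of 1 0] by (simp add: fract_collapse)

lemma emb_0': "emb 0 = 0"
  using emb_Fract[of 1 0] by (simp add: fract_collapse)

lemma emb_inverse: "emb (inverse a) = inverse (emb a)"
proof (cases a)
  case (Fract p q)
  then show ?thesis
    by (cases "p = 0") (simp_all add: emb_Fract fract_collapse emb_0')
qed

lemma emb_eq_0: "emb a = 0 \<longleftrightarrow> a = 0"
proof (cases a)
  case (Fract p q)
  then show ?thesis by (simp add: emb_Fract Zero_fract_def eq_fract mapc_eq_0)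
qed

lemma emb_Y: "emb Y_el = y_el"
  by (simp add: Y_el_def y_el_def emb_Fract mapc_1 map_poly_pCons pCons_one)

lemma emb_cst: "emb (cst r) = kc r"
  by (simp add: cst_def kc_def emb_Fract mapc_1 map_poly_pCons)

definition inR2 :: "real set \<Rightarrow> real poly poly \<Rightarrow> bool" where
  "inR2 R P \<longleftrightarrow> (\<forall>i. inF R (coeff P i))"

lemma Rxy_iff: "B \<in> Rxy R \<longleftrightarrow> (\<exists>P Q. inR2 R P \<and> inR2 R Q \<and> Q \<noteq> 0 \<and> B = Fract P Q)"
  unfolding Rxy_def inR2_def inF_def by blast

lemma Rx_iff: "B \<in> Rx R \<longleftrightarrow> (\<exists>p q. inF R p \<and> inF R q \<and> q \<noteq> 0 \<and> B = Fract [:p:] [:q:])"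
  unfolding Rx_def inF_def by blast

lemma Ry_iff: "B \<in> Ry R \<longleftrightarrow> (\<exists>p q. inF R p \<and> inF R q \<and> q \<noteq> 0 \<and> B = Fract (mapc p) (mapc q))"
  unfolding Ry_def inF_def by blast

lemma Ry_emb: "Ry R = emb ` Fbar_Y R"
proof
  show "Ry R \<subseteq> emb ` Fbar_Y R"
  proof
    fix B assume "B \<in> Ry R"
    then obtain p q where "inF R p" "inF R q" "q \<noteq> 0" "B = Fract (mapc p) (mapc q)" unfolding Ry_iff by blast
    then show "B \<in> emb ` Fbar_Y R"
      by (intro image_eqI[of _ _ "Fract p q"]) (auto simp: emb_Fract Fbar_Y_iff)
  qed
  show "emb ` Fbar_Y R \<subseteq> Ry R"
  proof
    fix B assume "B \<in> emb ` Fbar_Y R"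
    then obtain g where g: "g \<in> Fbar_Y R" "B = emb g" by blast
    then obtain p q where "inF R p" "inF R q" "q \<noteq> 0" "B = emb (Fract p q)" unfolding Fbar_Y_iff by blast
    then show "B \<in> Ry R" unfolding Ry_iff by (auto simp: emb_Fract)
  qed
qed

context fixes R :: "real set" assumes S: "subf R"
begin

lemma inR2_0: "inR2 R 0" by (simp add: inR2_def inF_0[OF S])
lemma inR2_1: "inR2 R 1" by (simp add: inR2_def coeff_1 inF_0[OF S] inF_1[OF S])
lemma inR2_add: "inR2 R P \<Longrightarrow> inR2 R Q \<Longrightarrow> inR2 R (P + Q)" by (simp add: inR2_def inF_add[OF S])
lemma inR2_uminus: "inR2 R P \<Longrightarrow> inR2 R (- P)" by (simp add: inR2_def inF_uminus[OF S])
lemma inF_sum: "(\<And>i. i \<in> A \<Longrightarrow> inF R (f i)) \<Longrightarrow> inF R (sum f A)"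
  by (induct A rule: infinite_finite_induct) (simp_all add: inF_0[OF S] inF_add[OF S])
lemma inR2_mult: "inR2 R P \<Longrightarrow> inR2 R Q \<Longrightarrow> inR2 R (P * Q)"
  by (simp add: inR2_def coeff_mult inF_sum inF_mult[OF S])
lemma inR2_const: "inF R p \<Longrightarrow> inR2 R [:p:]"
  by (simp add: inR2_def coeff_pCons inF_0[OF S] split: nat.split)
lemma inR2_X: "inR2 R [:0, 1:]"
  by (simp add: inR2_def coeff_pCons inF_0[OF S] inF_1[OF S] split: nat.split)
lemma inR2_mapc: "inF R p \<Longrightarrow> inR2 R (mapc p)"
  unfolding inR2_def coeff_mapc using S by (metis inF_const inF_def)

lemma Rx_I: "inF R p \<Longrightarrow> inF R q \<Longrightarrow> q \<noteq> 0 \<Longrightarrow> Fract [:p:] [:q:] \<in> Rx R"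
  unfolding Rx_iff by blast

lemma Rxy_subf: "subf (Rxy R)"
  unfolding subf_def
proof (intro conjI ballI)
  show "0 \<in> Rxy R" unfolding Rxy_iff
    by (intro exI[of _ 0] exI[of _ 1]) (simp add: inR2_0 inR2_1 fract_collapse)
  show "1 \<in> Rxy R" unfolding Rxy_iff
    by (intro exI[of _ 1] exI[of _ 1]) (simp add: inR2_1 fract_collapse)
next
  fix a b assume "a \<in> Rxy R" "b \<in> Rxy R"
  then obtain p1 q1 p2 q2 where 1: "inR2 R p1" "inR2 R q1" "q1 \<noteq> 0" "a = Fract p1 q1"
    and 2: "inR2 R p2" "inR2 R q2" "q2 \<noteq> 0" "b = Fract p2 q2" unfolding Rxy_iff by blast
  show "a + b \<in> Rxy R" unfolding Rxy_iff using 1 2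
    by (intro exI[of _ "p1 * q2 + p2 * q1"] exI[of _ "q1 * q2"]) (simp add: inR2_add inR2_mult)
  show "a * b \<in> Rxy R" unfolding Rxy_iff using 1 2
    by (intro exI[of _ "p1 * p2"] exI[of _ "q1 * q2"]) (simp add: inR2_mult)
  show "- a \<in> Rxy R" unfolding Rxy_iff using 1
    by (intro exI[of _ "- p1"] exI[of _ "q1"]) (simp add: inR2_uminus)
next
  fix a assume "a \<in> Rxy R"
  then obtain p q where 1: "inR2 R p" "inR2 R q" "q \<noteq> 0" "a = Fract p q" unfolding Rxy_iff by blast
  show "inverse a \<in> Rxy R"
  proof (cases "p = 0")
    case True
    then show ?thesis unfolding Rxy_iff using 1
      by (intro exI[of _ 0] exI[of _ 1]) (simp add: fract_collapse inR2_0 inR2_1)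
  next
    case False
    then show ?thesis unfolding Rxy_iff using 1 by (intro exI[of _ q] exI[of _ p]) simp
  qed
qed

lemma Rx_subf: "subf (Rx R)"
  unfolding subf_def
proof (intro conjI ballI)
  show "0 \<in> Rx R" using Rx_I[OF inF_0[OF S] inF_1[OF S]] by (simp add: fract_collapse)
  show "1 \<in> Rx R" using Rx_I[OF inF_1[OF S] inF_1[OF S]] by (simp add: fract_collapse pCons_one)
next
  fix a b assume "a \<in> Rx R" "b \<in> Rx R"
  then obtain p1 q1 p2 q2 where 1: "inF R p1" "inF R q1" "q1 \<noteq> 0" "a = Fract [:p1:] [:q1:]"
    and 2: "inF R p2" "inF R q2" "q2 \<noteq> 0" "b = Fract [:p2:] [:q2:]" unfolding Rx_iff by blast
  have "a + b = Fract [:p1 * q2 + p2 * q1:] [:q1 * q2:]" using 1 2 by (simp add: algebra_simps)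
  then show "a + b \<in> Rx R" using Rx_I 1 2 by (simp add: inF_add[OF S] inF_mult[OF S])
  have "a * b = Fract [:p1 * p2:] [:q1 * q2:]" using 1 2 by (simp add: mult.commute)
  then show "a * b \<in> Rx R" using Rx_I 1 2 by (simp add: inF_mult[OF S])
  have "- a = Fract [:- p1:] [:q1:]" using 1 by simp
  then show "- a \<in> Rx R" using Rx_I 1 by (simp add: inF_uminus[OF S])
next
  fix a assume "a \<in> Rx R"
  then obtain p q where 1: "inF R p" "inF R q" "q \<noteq> 0" "a = Fract [:p:] [:q:]" unfolding Rx_iff by blast
  show "inverse a \<in> Rx R"
  proof (cases "p = 0")
    case True
    then show ?thesis using Rx_I[OF inF_0[OF S] inF_1[OF S]] 1 by (simp add: fract_collapse)
  next
    case False
    then show ?thesis using Rx_I[of q p] 1 by simp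
  qed
qed

lemma Ry_subf: "subf (Ry R)"
proof -
  have SY: "subf (Fbar_Y R)" using Fbar_Y_subf[OF S] .
  show ?thesis unfolding Ry_emb subf_def
  proof (intro conjI ballI)
    show "0 \<in> emb ` Fbar_Y R" using subf_0[OF SY] emb_0 by (metis image_eqI)
    show "1 \<in> emb ` Fbar_Y R" using subf_1[OF SY] emb_1 by (metis image_eqI)
  next
    fix a b assume "a \<in> emb ` Fbar_Y R" "b \<in> emb ` Fbar_Y R"
    then obtain a' b' where "a' \<in> Fbar_Y R" "b' \<in> Fbar_Y R" "a = emb a'" "b = emb b'" by blast
    note ab = this
    have "emb (- a') = - emb a'" using emb_add[of "- a'" a'] emb_0 by (simp add: eq_neg_iff_add_eq_0)
    then show "a + b \<in> emb ` Fbar_Y R" "a * b \<in> emb ` Fbar_Y R" "- a \<in> emb ` Fbar_Y R"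
      using ab subf_add[OF SY, of a' b'] subf_mult[OF SY, of a' b'] subf_uminus[OF SY, of a'] emb_add[of a' b'] emb_mult[of a' b']
      by (metis image_eqI)+
  next
    fix a assume "a \<in> emb ` Fbar_Y R"
    then obtain a' where "a' \<in> Fbar_Y R" "a = emb a'" by blast
    then show "inverse a \<in> emb ` Fbar_Y R" using subf_inverse[OF SY, of a'] emb_inverse[of a'] by (metis image_eqI)
  qed
qed

lemma Rxy_I: "inR2 R P \<Longrightarrow> inR2 R Q \<Longrightarrow> Q \<noteq> 0 \<Longrightarrow> Fract P Q \<in> Rxy R"
  unfolding Rxy_iff by blast

lemma Rx_Rxy: "Rx R \<subseteq> Rxy R"
proof
  fix B assume "B \<in> Rx R"
  then obtain p q where "inF R p" "inF R q" "q \<noteq> 0" "B = Fract [:p:] [:q:]" unfolding Rx_iff by blast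
  then show "B \<in> Rxy R" using Rxy_I inR2_const by simp
qed

lemma Ry_Rxy: "Ry R \<subseteq> Rxy R"
proof
  fix B assume "B \<in> Ry R"
  then obtain p q where "inF R p" "inF R q" "q \<noteq> 0" "B = Fract (mapc p) (mapc q)" unfolding Ry_iff by blast
  then show "B \<in> Rxy R" using Rxy_I inR2_mapc by simp
qed

lemma kc_Rx: "r \<in> R \<Longrightarrow> kc r \<in> Rx R"
  using Rx_I[OF inF_const[OF S] inF_1[OF S], of r] by (simp add: kc_def pCons_one)

lemma kc_Ry: "r \<in> R \<Longrightarrow> kc r \<in> Ry R"
  unfolding Ry_emb using emb_cst cst_in[OF S] by (metis image_eqI)

lemma y_Ry: "y_el \<in> Ry R"
  unfolding Ry_emb using emb_Y Y_in[OF S] by (metis image_eqI)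

end

lemma Fract_expand_y: "Fract N 1 = (\<Sum>i\<le>degree N. Fract [:coeff N i:] 1 * y_el ^ i)"
  unfolding y_el_def by (rule Fract_poly_expand)


definition cf :: "real poly poly \<Rightarrow> nat \<Rightarrow> RXY" where
  "cf P i = Fract [:coeff P i:] 1"

lemma cf_add: "cf (P + Q) i = cf P i + cf Q i"
  by (simp add: cf_def add_pCons)

lemma cf_0: "cf 0 i = 0"
  by (simp add: cf_def fract_collapse)

lemma cf_mult: "cf (P * Q) k = (\<Sum>i\<le>k. cf P i * cf Q (k - i))"
  by (simp add: cf_def coeff_mult pCons_sum Fract_sum mult.commute)

lemma cf_eq_0: "cf P i = 0 \<longleftrightarrow> coeff P i = 0"
  by (simp add: cf_def Zero_fract_def eq_fract)

lemma cf_beyond: "degree P < i \<Longrightarrow> cf P i = 0"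
  by (simp add: cf_eq_0 coeff_eq_0)

lemma cf_Rx: "subf R \<Longrightarrow> inR2 R P \<Longrightarrow> cf P i \<in> Rx R"
  using Rx_I[of R "coeff P i" 1] by (simp add: cf_def inR2_def inF_1 pCons_one)

lemma cf_mapc: "cf (mapc p) i = kc (coeff p i)"
  by (simp add: cf_def kc_def coeff_mapc)

definition SP :: "real poly poly \<Rightarrow> RXY \<Rightarrow> RXY" where
  "SP P e = (\<Sum>i\<le>degree P. (cf P i / e) * y_el ^ i)"

lemma Fract_SP: "e \<noteq> 0 \<Longrightarrow> Fract P 1 = e * SP P e"
  unfolding SP_def Fract_expand_y[of P] cf_def[symmetric]
  by (simp add: sum_distrib_left)

section \<open>The Gauss extension\<close>

context
  fixes R :: "real set" and \<xi> :: "RXY \<Rightarrow> real option"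
  assumes S: "subf R" and X: "is_place (Rx R) \<xi>"
begin

lemma SX: "subf (Rx R)" using Rx_subf[OF S] .

definition valid :: "real poly poly \<Rightarrow> RXY \<Rightarrow> bool" where
  "valid P e \<longleftrightarrow> inR2 R P \<and> e \<in> Rx R \<and> e \<noteq> 0 \<and> (\<forall>i. \<xi> (cf P i / e) \<noteq> None)"

definition G :: "real poly poly \<Rightarrow> RXY \<Rightarrow> real poly" where
  "G P e = (\<Sum>i\<le>degree P. monom (the (\<xi> (cf P i / e))) i)"

lemma coeff_G: "coeff (G P e) i = the (\<xi> (cf P i / e))"
proof (cases "i \<le> degree P")
  case True
  have "coeff (G P e) i = (\<Sum>j\<le>degree P. if j = i then the (\<xi> (cf P j / e)) else 0)"
    unfolding G_def coeff_sum by (intro sum.cong) (auto simp: coeff_monom)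
  then show ?thesis using True by simp
next
  case False
  have "coeff (G P e) i = (\<Sum>j\<le>degree P. 0)"
    unfolding G_def coeff_sum using False by (intro sum.cong) (auto simp: coeff_monom)
  then show ?thesis using False cf_beyond[of P i] pl_0[OF X SX] by simp
qed

lemma degree_G: "degree (G P e) \<le> degree P"
  unfolding G_def by (intro degree_sum_le) (auto simp: degree_monom_le intro: order.trans[OF degree_monom_le])

lemma valid_cfRx: "valid P e \<Longrightarrow> cf P i / e \<in> Rx R"
  unfolding valid_def using cf_Rx[OF S] subf_divide[OF SX] by blast

lemma valid_val: "valid P e \<Longrightarrow> \<xi> (cf P i / e) = Some (coeff (G P e) i)"
  unfolding coeff_G valid_def by auto

lemma valid_add:
  assumes "valid P e" "valid Q e"
  shows "valid (P + Q) e \<and> G (P + Q) e = G P e + G Q e"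
proof -
  have v: "\<xi> (cf (P + Q) i / e) = Some (coeff (G P e) i + coeff (G Q e) i)" for i
    using pl_add[OF X SX valid_cfRx[OF assms(1)] valid_cfRx[OF assms(2)] valid_val[OF assms(1)] valid_val[OF assms(2)]]
    by (simp add: cf_add add_divide_distrib)
  have "valid (P + Q) e" using assms v inR2_add[OF S] unfolding valid_def by auto
  moreover have "G (P + Q) e = G P e + G Q e"
    by (rule poly_eqI) (simp add: coeff_G v)
  ultimately show ?thesis by simp
qed

lemma valid_mult:
  assumes "valid P e" "valid Q f"
  shows "valid (P * Q) (e * f) \<and> G (P * Q) (e * f) = G P e * G Q f"
proof -
  have ef: "e * f \<in> Rx R" "e * f \<noteq> 0" using assms subf_mult[OF SX] unfolding valid_def by auto
  have v: "\<xi> (cf (P * Q) k / (e * f)) = Some (coeff (G P e * G Q f) k)" for k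
  proof -
    have "cf (P * Q) k / (e * f) = (\<Sum>i\<le>k. (cf P i / e) * (cf Q (k - i) / f))"
      by (simp add: cf_mult sum_divide_distrib)
    moreover have "\<And>i. i \<in> {..k} \<Longrightarrow> (cf P i / e) * (cf Q (k - i) / f) \<in> Rx R \<and>
        \<xi> ((cf P i / e) * (cf Q (k - i) / f)) = Some (coeff (G P e) i * coeff (G Q f) (k - i))"
      using subf_mult[OF SX valid_cfRx[OF assms(1)] valid_cfRx[OF assms(2)]]
        pl_mult[OF X SX valid_cfRx[OF assms(1)] valid_cfRx[OF assms(2)] valid_val[OF assms(1)] valid_val[OF assms(2)]]
      by blast
    then have "\<xi> (\<Sum>i\<le>k. (cf P i / e) * (cf Q (k - i) / f)) =
        Some (\<Sum>i\<le>k. coeff (G P e) i * coeff (G Q f) (k - i))"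
      by (rule pl_sum[OF X SX])
    ultimately show ?thesis by (simp add: coeff_mult)
  qed
  have "valid (P * Q) (e * f)" using assms ef v inR2_mult[OF S] unfolding valid_def by auto
  moreover have "G (P * Q) (e * f) = G P e * G Q f"
    by (rule poly_eqI) (simp add: coeff_G v)
  ultimately show ?thesis by simp
qed

lemma valid_scale:
  assumes "valid P e" "e' \<in> Rx R" "e' \<noteq> 0" "\<xi> (e / e') = Some s"
  shows "valid P e' \<and> G P e' = smult s (G P e)"
proof -
  have ee: "e / e' \<in> Rx R" using assms subf_divide[OF SX] unfolding valid_def by auto
  have v: "\<xi> (cf P i / e') = Some (coeff (G P e) i * s)" for i
  proof -
    have e0: "e \<noteq> 0" using assms(1) unfolding valid_def by simp
    have eq: "cf P i / e' = (cf P i / e) * (e / e')" using e0 by simp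
    show ?thesis unfolding eq by (rule pl_mult[OF X SX valid_cfRx[OF assms(1)] ee valid_val[OF assms(1)] assms(4)])
  qed
  have "\<forall>i. \<xi> (cf P i / e') \<noteq> None" using v by simp
  moreover have "inR2 R P" using assms(1) unfolding valid_def by simp
  ultimately have "valid P e'" using assms(2,3) unfolding valid_def by simp
  moreover have "G P e' = smult s (G P e)" by (rule poly_eqI) (simp add: coeff_G v)
  ultimately show ?thesis by simp
qed

lemma valid_normalize:
  assumes "inR2 R P" "P \<noteq> 0"
  shows "\<exists>j. cf P j \<noteq> 0 \<and> valid P (cf P j) \<and> G P (cf P j) \<noteq> 0"
proof -
  have main: "\<forall>n. (\<exists>i\<le>n. cf P i \<noteq> 0) \<longrightarrow> (\<exists>j\<le>n. cf P j \<noteq> 0 \<and> (\<forall>i\<le>n. \<xi> (cf P i / cf P j) \<noteq> None))"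
  proof
    fix n show "(\<exists>i\<le>n. cf P i \<noteq> 0) \<longrightarrow> (\<exists>j\<le>n. cf P j \<noteq> 0 \<and> (\<forall>i\<le>n. \<xi> (cf P i / cf P j) \<noteq> None))"
    proof (induct n)
      case 0
      then show ?case using pl_one[OF X SX] by (auto simp: le_Suc_eq)
    next
      case (Suc n)
      show ?case
      proof
        assume ex: "\<exists>i\<le>Suc n. cf P i \<noteq> 0"
        show "\<exists>j\<le>Suc n. cf P j \<noteq> 0 \<and> (\<forall>i\<le>Suc n. \<xi> (cf P i / cf P j) \<noteq> None)"
        proof (cases "\<exists>i\<le>n. cf P i \<noteq> 0")
          case False
          then have z: "\<forall>i\<le>n. cf P i = 0" by auto
          then have "cf P (Suc n) \<noteq> 0" using ex by (auto simp: le_Suc_eq)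
          then show ?thesis using z pl_0[OF X SX] pl_one[OF X SX]
            by (intro exI[of _ "Suc n"]) (auto simp: le_Suc_eq)
        next
          case True
          with Suc obtain j where j: "j \<le> n" "cf P j \<noteq> 0" "\<forall>i\<le>n. \<xi> (cf P i / cf P j) \<noteq> None" by blast
          show ?thesis
          proof (cases "\<xi> (cf P (Suc n) / cf P j) = None")
            case False
            then show ?thesis using j by (intro exI[of _ j]) (auto simp: le_Suc_eq)
          next
            case True
            define a where "a = cf P (Suc n)"
            define b where "b = cf P j"
            have aR: "a \<in> Rx R" "b \<in> Rx R" using cf_Rx[OF S assms(1)] by (auto simp: a_def b_def)
            have a0: "a \<noteq> 0" using True pl_0[OF X SX] by (auto simp: a_def)
            have ba: "\<xi> (b / a) = Some 0"
              using pl_inverse_None[OF X SX subf_divide[OF SX aR(1) aR(2)]] True by (simp add: a_def b_def)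
            have "\<xi> (cf P i / a) \<noteq> None" if "i \<le> Suc n" for i
            proof (cases "i = Suc n")
              case True then show ?thesis using a0 pl_one[OF X SX] by (simp add: a_def)
            next
              case False
              then have "i \<le> n" using that by simp
              then obtain w where w: "\<xi> (cf P i / b) = Some w" using j(3) by (auto simp: b_def)
              have eq: "cf P i / a = (cf P i / b) * (b / a)" using j(2) by (simp add: b_def)
              show ?thesis unfolding eq using pl_mult[OF X SX subf_divide[OF SX cf_Rx[OF S assms(1)] aR(2)]
                  subf_divide[OF SX aR(2) aR(1)] w ba] by (simp only: option.distinct not_False_eq_True)
            qed
            then show ?thesis using a0 by (intro exI[of _ "Suc n"]) (auto simp: a_def)
          qed
        qed
      qed
    qed
  qed
  have "cf P (degree P) \<noteq> 0" using assms(2) by (simp add: cf_eq_0)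
  then obtain j where j: "j \<le> degree P" "cf P j \<noteq> 0" "\<forall>i\<le>degree P. \<xi> (cf P i / cf P j) \<noteq> None"
    using main by blast
  have all: "\<xi> (cf P i / cf P j) \<noteq> None" for i
    using j(3) cf_beyond[of P i] pl_0[OF X SX] by (cases "i \<le> degree P") auto
  have v: "valid P (cf P j)" unfolding valid_def using assms j(2) all cf_Rx[OF S assms(1)] by auto
  have "coeff (G P (cf P j)) j = 1" using j(2) pl_one[OF X SX] by (simp add: coeff_G)
  then have "G P (cf P j) \<noteq> 0" by auto
  then show ?thesis using v j(2) by blast
qed

lemma valid_cmp:
  assumes "valid A e1" "valid A e2" "G A e2 \<noteq> 0"
  shows "\<xi> (e2 / e1) \<noteq> None"
proof
  assume N: "\<xi> (e2 / e1) = None"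
  have e: "e1 \<in> Rx R" "e1 \<noteq> 0" "e2 \<in> Rx R" "e2 \<noteq> 0" using assms unfolding valid_def by auto
  have "\<xi> (inverse (e2 / e1)) = Some 0" using pl_inverse_None[OF X SX subf_divide[OF SX e(3,1)] N] .
  then have z: "\<xi> (e1 / e2) = Some 0" by simp
  have "coeff (G A e2) i = 0" for i
  proof -
    have eq: "cf A i / e2 = (cf A i / e1) * (e1 / e2)" using e by simp
    have "\<xi> (cf A i / e2) = Some (coeff (G A e1) i * 0)"
      unfolding eq by (rule pl_mult[OF X SX valid_cfRx[OF assms(1)] subf_divide[OF SX e(1,3)] valid_val[OF assms(1)] z])
    then show ?thesis using valid_val[OF assms(2)] by simp
  qed
  then show False using assms(3) by (simp add: poly_eq_iff)
qed

lemma valid_0: "e \<in> Rx R \<Longrightarrow> e \<noteq> 0 \<Longrightarrow> valid 0 e \<and> G 0 e = 0"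
  using pl_0[OF X SX] by (auto simp: valid_def cf_0 inR2_0[OF S] G_def)

lemma valid_1: "valid 1 1 \<and> G 1 1 = 1"
proof -
  have c: "cf 1 i = (if i = 0 then 1 else 0)" for i by (simp add: cf_def coeff_1 pCons_one fract_collapse)
  have "valid 1 1" unfolding valid_def using c pl_0[OF X SX] pl_one[OF X SX] subf_1[OF SX] inR2_1[OF S] by auto
  moreover have "G 1 1 = 1" unfolding G_def using c pl_one[OF X SX] by simp
  ultimately show ?thesis by simp
qed

definition repr :: "RXY \<Rightarrow> real poly poly \<Rightarrow> real poly poly \<Rightarrow> RXY \<Rightarrow> bool" where
  "repr B N D e \<longleftrightarrow> D \<noteq> 0 \<and> B = Fract N D \<and> valid N e \<and> valid D e \<and> G D e \<noteq> 0"

definition gx :: "RXY \<Rightarrow> RY option" where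
  "gx B = (if \<exists>N D e. repr B N D e then
     Some (let (N, D, e) = (SOME (N, D, e). repr B N D e) in Fract (G N e) (G D e)) else None)"

lemma repr_WD:
  assumes "repr B N D e" "repr B N' D' e'"
  shows "Fract (G N e) (G D e) = Fract (G N' e') (G D' e')"
proof -
  have a: "D \<noteq> 0" "B = Fract N D" "valid N e" "valid D e" "G D e \<noteq> 0" using assms(1) by (auto simp: repr_def)
  have b: "D' \<noteq> 0" "B = Fract N' D'" "valid N' e'" "valid D' e'" "G D' e' \<noteq> 0" using assms(2) by (auto simp: repr_def)
  have "Fract N D = Fract N' D'" using a(2) b(2) by simp
  then have eq: "N * D' = N' * D" using a(1) b(1) by (simp add: eq_fract)
  have "G (N * D') (e * e') = G N e * G D' e'" using valid_mult[OF a(3) b(4)] by simp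
  moreover have "G (N' * D) (e' * e) = G N' e' * G D e" using valid_mult[OF b(3) a(4)] by simp
  ultimately have "G N e * G D' e' = G N' e' * G D e" using eq by (simp add: mult.commute)
  then show ?thesis using a(5) b(5) by (simp add: eq_fract)
qed

lemma gx_rep: "repr B N D e \<Longrightarrow> gx B = Some (Fract (G N e) (G D e))"
proof -
  assume r: "repr B N D e"
  have ex: "\<exists>x. (case x of (N, D, e) \<Rightarrow> repr B N D e)" using r by auto
  obtain N' D' e' where x: "(SOME (N, D, e). repr B N D e) = (N', D', e')" by (metis prod_cases3)
  have "repr B N' D' e'" using someI_ex[OF ex] unfolding x by simp
  then have "Fract (G N' e') (G D' e') = Fract (G N e) (G D e)" using repr_WD[OF _ r] by simp
  moreover have "\<exists>N D e. repr B N D e" using r by blast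
  ultimately show ?thesis unfolding gx_def x by simp
qed

lemma gx_None: "\<not> (\<exists>N D e. repr B N D e) \<Longrightarrow> gx B = None"
  unfolding gx_def by simp

lemma gx_SomeE:
  assumes "gx B = Some g"
  obtains N D e where "repr B N D e" "g = Fract (G N e) (G D e)"
proof -
  have "\<exists>N D e. repr B N D e" using assms gx_None by fastforce
  then obtain N D e where r: "repr B N D e" by blast
  then have "g = Fract (G N e) (G D e)" using gx_rep[OF r] assms by simp
  then show ?thesis using that r by blast
qed

lemma repr_Rxy: "repr B N D e \<Longrightarrow> B \<in> Rxy R"
  unfolding repr_def valid_def using Rxy_I[OF S] by auto

lemma gx_NF:
  assumes N: "inR2 R N" "N \<noteq> 0" and D: "inR2 R D" "D \<noteq> 0"
    and eN: "valid N eN" "G N eN \<noteq> 0" and eD: "valid D eD" "G D eD \<noteq> 0"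
  shows "gx (Fract N D) = (case \<xi> (eN / eD) of None \<Rightarrow> None
            | Some s \<Rightarrow> Some (Fract (smult s (G N eN)) (G D eD)))"
proof (cases "\<xi> (eN / eD)")
  case (Some s)
  have e: "eN \<in> Rx R" "eN \<noteq> 0" "eD \<in> Rx R" "eD \<noteq> 0" using eN eD unfolding valid_def by auto
  have vs: "valid N eD \<and> G N eD = smult s (G N eN)" using valid_scale[OF eN(1) e(3,4) Some] .
  have "repr (Fract N D) N D eD" unfolding repr_def using D vs eD by auto
  then show ?thesis using gx_rep Some vs by simp
next
  case None
  have "\<not> (\<exists>N' D' e'. repr (Fract N D) N' D' e')"
  proof
    assume "\<exists>N' D' e'. repr (Fract N D) N' D' e'"
    then obtain N' D' e' where r: "repr (Fract N D) N' D' e'" by blast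
    have b: "D' \<noteq> 0" "Fract N D = Fract N' D'" "valid N' e'" "valid D' e'" "G D' e' \<noteq> 0"
      using r by (auto simp: repr_def)
    have eq: "N * D' = N' * D" using b(1,2) D(2) by (simp add: eq_fract)
    have v1: "valid (N * D') (eN * e')" "G (N * D') (eN * e') = G N eN * G D' e'"
      using valid_mult[OF eN(1) b(4)] by auto
    have v2: "valid (N * D') (e' * eD)" using valid_mult[OF b(3) eD(1)] eq by simp
    have "G (N * D') (eN * e') \<noteq> 0" using v1(2) eN(2) b(5) by simp
    from valid_cmp[OF v2 v1(1) this] have "\<xi> (eN * e' / (e' * eD)) \<noteq> None" .
    moreover have "e' \<noteq> 0" using b(3) unfolding valid_def by auto
    ultimately have "\<xi> (eN / eD) \<noteq> None" by (simp add: mult.commute)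
    then show False using None by simp
  qed
  then show ?thesis using None gx_None by simp
qed

lemma gx_0: "gx 0 = Some 0"
proof -
  have "repr 0 0 1 1" unfolding repr_def using valid_0[OF subf_1[OF SX]] valid_1
    by (simp add: fract_collapse)
  then show ?thesis using gx_rep valid_0[OF subf_1[OF SX]] by (simp add: fract_collapse)
qed

lemma gx_place: "is_place (Rxy R) gx"
  unfolding is_place_def
proof (intro conjI ballI allI impI)
  show "gx B = None" if "B \<notin> Rxy R" for B
    using that repr_Rxy gx_None by blast
  have "repr 1 1 1 1" unfolding repr_def using valid_1 by (simp add: fract_collapse)
  from gx_rep[OF this] show "gx 1 = Some 1" using valid_1 by (simp add: fract_collapse)
next
  fix a b u v assume u: "gx a = Some u" and v: "gx b = Some v"
  obtain N1 D1 e1 where 1: "repr a N1 D1 e1" "u = Fract (G N1 e1) (G D1 e1)" using gx_SomeE[OF u] by blast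
  obtain N2 D2 e2 where 2: "repr b N2 D2 e2" "v = Fract (G N2 e2) (G D2 e2)" using gx_SomeE[OF v] by blast
  have r1: "D1 \<noteq> 0" "a = Fract N1 D1" "valid N1 e1" "valid D1 e1" "G D1 e1 \<noteq> 0" using 1 by (auto simp: repr_def)
  have r2: "D2 \<noteq> 0" "b = Fract N2 D2" "valid N2 e2" "valid D2 e2" "G D2 e2 \<noteq> 0" using 2 by (auto simp: repr_def)
  have m1: "valid (N1 * D2) (e1 * e2)" "G (N1 * D2) (e1 * e2) = G N1 e1 * G D2 e2"
    using valid_mult[OF r1(3) r2(4)] by auto
  have m2: "valid (N2 * D1) (e1 * e2)" "G (N2 * D1) (e1 * e2) = G N2 e2 * G D1 e1"
    using valid_mult[OF r2(3) r1(4)] by (auto simp: mult.commute)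
  have m3: "valid (D1 * D2) (e1 * e2)" "G (D1 * D2) (e1 * e2) = G D1 e1 * G D2 e2"
    using valid_mult[OF r1(4) r2(4)] by auto
  have m4: "valid (N1 * N2) (e1 * e2)" "G (N1 * N2) (e1 * e2) = G N1 e1 * G N2 e2"
    using valid_mult[OF r1(3) r2(3)] by auto
  have ad: "valid (N1 * D2 + N2 * D1) (e1 * e2)"
     "G (N1 * D2 + N2 * D1) (e1 * e2) = G N1 e1 * G D2 e2 + G N2 e2 * G D1 e1"
    using valid_add[OF m1(1) m2(1)] m1(2) m2(2) by auto
  have "a + b = Fract (N1 * D2 + N2 * D1) (D1 * D2)" using r1(1,2) r2(1,2) by simp
  then have "repr (a + b) (N1 * D2 + N2 * D1) (D1 * D2) (e1 * e2)"
    unfolding repr_def using ad m3 r1(1,5) r2(1,5) by simp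
  from gx_rep[OF this] have "gx (a + b) = Some (Fract (G N1 e1 * G D2 e2 + G N2 e2 * G D1 e1) (G D1 e1 * G D2 e2))"
    unfolding ad(2) m3(2) .
  also have "\<dots> = Some (u + v)" unfolding 1(2) 2(2) using r1(5) r2(5) by (simp add: mult.commute)
  finally show "gx (a + b) = Some (u + v)" .
  have "a * b = Fract (N1 * N2) (D1 * D2)" using r1(1,2) r2(1,2) by simp
  then have "repr (a * b) (N1 * N2) (D1 * D2) (e1 * e2)"
    unfolding repr_def using m4 m3 r1(1,5) r2(1,5) by simp
  from gx_rep[OF this] have "gx (a * b) = Some (Fract (G N1 e1 * G N2 e2) (G D1 e1 * G D2 e2))"
    unfolding m4(2) m3(2) .
  also have "\<dots> = Some (u * v)" unfolding 1(2) 2(2) by simp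
  finally show "gx (a * b) = Some (u * v)" .
next
  fix B assume B: "B \<in> Rxy R" "B \<noteq> 0"
  then obtain N D where nd: "inR2 R N" "inR2 R D" "D \<noteq> 0" "B = Fract N D" unfolding Rxy_iff by blast
  have N0: "N \<noteq> 0" using nd B(2) by (auto simp: fract_collapse)
  obtain j where j: "cf N j \<noteq> 0" "valid N (cf N j)" "G N (cf N j) \<noteq> 0" using valid_normalize[OF nd(1) N0] by blast
  obtain k where k: "cf D k \<noteq> 0" "valid D (cf D k)" "G D (cf D k) \<noteq> 0" using valid_normalize[OF nd(2,3)] by blast
  define eN where "eN = cf N j"
  define eD where "eD = cf D k"
  have jj: "valid N eN" "G N eN \<noteq> 0" using j unfolding eN_def by auto
  have kk: "valid D eD" "G D eD \<noteq> 0" using k unfolding eD_def by auto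
  have eR: "eN \<in> Rx R" "eD \<in> Rx R" "eN \<noteq> 0" "eD \<noteq> 0" using jj(1) kk(1) unfolding valid_def by auto
  have f1: "gx B = (case \<xi> (eN / eD) of None \<Rightarrow> None | Some s \<Rightarrow> Some (Fract (smult s (G N eN)) (G D eD)))"
    unfolding nd(4) by (rule gx_NF[OF nd(1) N0 nd(2,3) jj kk])
  have "inverse B = Fract D N" using nd(4) by simp
  then have f2: "gx (inverse B) = (case \<xi> (eD / eN) of None \<Rightarrow> None | Some s \<Rightarrow> Some (Fract (smult s (G D eD)) (G N eN)))"
    using gx_NF[OF nd(2,3) nd(1) N0 kk jj] by (simp only:)
  have inv: "eD / eN = inverse (eN / eD)" by simp
  have q: "eN / eD \<in> Rx R" "eN / eD \<noteq> 0" using eR subf_divide[OF SX] by auto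
  show "gx B = None \<longleftrightarrow> gx (inverse B) = Some 0"
  proof (cases "\<xi> (eN / eD)")
    case None
    then have "\<xi> (eD / eN) = Some 0" unfolding inv by (rule pl_inverse_None[OF X SX q(1)])
    then show ?thesis unfolding f1 f2 None by (simp add: fract_collapse)
  next
    case (Some s)
    show ?thesis
    proof (cases "s = 0")
      case True
      then have "\<xi> (eD / eN) = None" unfolding inv using pl_inverse_0[OF X SX q] Some by simp
      then show ?thesis unfolding f1 f2 Some by simp
    next
      case False
      then have i2: "\<xi> (eD / eN) = Some (inverse s)" unfolding inv by (rule pl_inverse[OF X SX q(1) Some])
      have "Fract (smult (inverse s) (G D eD)) (G N eN) \<noteq> 0"
        using False kk(2) jj(2) by (simp add: Zero_fract_def eq_fract)
      then show ?thesis unfolding f1 f2 Some i2 by simp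
    qed
  qed
qed

end


context
  fixes R :: "real set" and \<xi> :: "RXY \<Rightarrow> real option"
  assumes S: "subf R" and X: "is_place (Rx R) \<xi>" and I: "\<And>r. r \<in> R \<Longrightarrow> \<xi> (kc r) = Some r"
begin

lemma SX7: "subf (Rx R)" using Rx_subf[OF S] .
lemma SXY7: "subf (Rxy R)" using Rxy_subf[OF S] .

lemma Fbar_iff: "r \<in> Fbar R \<xi> \<longleftrightarrow> (\<exists>a\<in>Rx R. \<xi> a = Some r)"
  by (simp add: Fbar_def)

lemma Fbar_I: "a \<in> Rx R \<Longrightarrow> \<xi> a = Some r \<Longrightarrow> r \<in> Fbar R \<xi>"
  unfolding Fbar_iff by blast

lemma Fbar_subf: "subf (Fbar R \<xi>)"
  unfolding subf_def
proof (intro conjI ballI)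
  show "0 \<in> Fbar R \<xi>" using Fbar_I[OF subf_0[OF SX7] pl_0[OF X SX7]] .
  show "1 \<in> Fbar R \<xi>" using Fbar_I[OF subf_1[OF SX7] pl_one[OF X SX7]] .
next
  fix u v assume "u \<in> Fbar R \<xi>" "v \<in> Fbar R \<xi>"
  then obtain a b where ab: "a \<in> Rx R" "\<xi> a = Some u" "b \<in> Rx R" "\<xi> b = Some v" unfolding Fbar_iff by blast
  show "u + v \<in> Fbar R \<xi>" using Fbar_I[OF subf_add[OF SX7 ab(1,3)] pl_add[OF X SX7 ab(1,3,2,4)]] .
  show "u * v \<in> Fbar R \<xi>" using Fbar_I[OF subf_mult[OF SX7 ab(1,3)] pl_mult[OF X SX7 ab(1,3,2,4)]] .
  show "- u \<in> Fbar R \<xi>" using Fbar_I[OF subf_uminus[OF SX7 ab(1)] pl_uminus[OF X SX7 ab(1,2)]] .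
next
  fix u assume "u \<in> Fbar R \<xi>"
  then obtain a where a: "a \<in> Rx R" "\<xi> a = Some u" unfolding Fbar_iff by blast
  show "inverse u \<in> Fbar R \<xi>"
  proof (cases "u = 0")
    case True
    then show ?thesis using Fbar_I[OF subf_0[OF SX7] pl_0[OF X SX7]] by simp
  next
    case False
    then show ?thesis using Fbar_I[OF subf_inverse[OF SX7 a(1)] pl_inverse[OF X SX7 a False]] by simp
  qed
qed

lemma R_Fbar: "r \<in> R \<Longrightarrow> r \<in> Fbar R \<xi>"
  unfolding Fbar_iff using I kc_Rx[OF S] by blast

lemma G_inF: "valid R \<xi> N e \<Longrightarrow> inF (Fbar R \<xi>) (G \<xi> N e)"
  unfolding inF_def Fbar_iff using valid_val[OF S X] valid_cfRx[OF S X] by metis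

lemma gx_vals: "gx R \<xi> B = Some g \<Longrightarrow> g \<in> Fbar_Y (Fbar R \<xi>)"
proof -
  assume "gx R \<xi> B = Some g"
  then obtain N D e where r: "repr R \<xi> B N D e" "g = Fract (G \<xi> N e) (G \<xi> D e)" by (rule gx_SomeE[OF S X])
  then have "valid R \<xi> N e" "valid R \<xi> D e" "G \<xi> D e \<noteq> 0" unfolding repr_def[OF S X] by auto
  then show ?thesis unfolding Fbar_Y_iff r(2) using G_inF
    by (intro exI[of _ "G \<xi> N e"] exI[of _ "G \<xi> D e"]) simp
qed

lemma cf_const: "cf [:p:] i = (if i = 0 then Fract [:p:] 1 else 0)"
  by (simp add: cf_def coeff_pCons fract_collapse split: nat.split)

lemma gx_Rx:
  assumes c: "c \<in> Rx R" "\<xi> c = Some s"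
  shows "gx R \<xi> c = Some (cst s)"
proof -
  obtain p q where pq: "inF R p" "inF R q" "q \<noteq> 0" "c = Fract [:p:] [:q:]" using c(1) unfolding Rx_iff by blast
  define e :: RXY where "e = Fract [:q:] 1"
  have e0: "e \<noteq> 0" using pq(3) by (simp add: e_def Zero_fract_def eq_fract)
  have eR: "e \<in> Rx R" using cf_Rx[OF S inR2_const[OF S pq(2)], of 0] by (simp add: e_def cf_def)
  have ce: "Fract [:p:] 1 / e = c" using pq(3,4) by (simp add: e_def)
  have v1: "\<xi> (cf [:p:] i / e) = (if i = 0 then Some s else Some 0)" for i
    using ce c(2) pl_0[OF X SX7] by (simp add: cf_const)
  have v2: "\<xi> (cf [:q:] i / e) = (if i = 0 then Some 1 else Some 0)" for i
    using e0 pl_0[OF X SX7] pl_one[OF X SX7] by (simp add: cf_const e_def)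
  have va: "valid R \<xi> [:p:] e" "valid R \<xi> [:q:] e"
    unfolding valid_def[OF S X] using v1 v2 e0 eR inR2_const[OF S] pq by auto
  have G1: "G \<xi> [:p:] e = [:s:]" unfolding G_def[OF S X] using v1[of 0] by (simp add: monom_0)
  have G2: "G \<xi> [:q:] e = 1" unfolding G_def[OF S X] using v2[of 0] by (simp add: pCons_one)
  have "repr R \<xi> c [:p:] [:q:] e" unfolding repr_def[OF S X] using pq va G2 by simp
  from gx_rep[OF S X this] show ?thesis unfolding G1 G2 by (simp add: cst_def)
qed

lemma gx_y: "gx R \<xi> y_el = Some Y_el"
proof -
  define N :: "real poly poly" where "N = [:0, 1:]"
  have cN: "cf N i = (if i = 1 then 1 else 0)" for i
    by (simp add: N_def cf_def coeff_pCons fract_collapse pCons_one split: nat.split)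
  have v: "\<xi> (cf N i / 1) = (if i = 1 then Some 1 else Some 0)" for i
    using pl_0[OF X SX7] pl_one[OF X SX7] by (simp add: cN)
  have va: "valid R \<xi> N 1" unfolding valid_def[OF S X] using v subf_1[OF SX7] inR2_X[OF S] by (auto simp: N_def)
  have dN: "degree N = 1" by (simp add: N_def)
  have GN: "G \<xi> N 1 = [:0, 1:]" unfolding G_def[OF S X] dN using v by (simp add: monom_altdef numeral_2_eq_2)
  have "repr R \<xi> y_el N 1 1" unfolding repr_def[OF S X] using va valid_1[OF S X] by (simp add: N_def y_el_def)
  from gx_rep[OF S X this] show ?thesis unfolding GN using valid_1[OF S X] by (simp add: Y_el_def)
qed

lemma gx_place': "is_place (Rxy R) (gx R \<xi>)" using gx_place[OF S X] .

lemma gx_gauss: "is_gauss_ext R \<xi> (gx R \<xi>)"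
  unfolding is_gauss_ext_def
proof (intro conjI allI impI)
  show "is_place (Rxy R) (gx R \<xi>)" by (rule gx_place')
  show "the (gx R \<xi> a) \<in> Fbar_Y (Fbar R \<xi>)" if "gx R \<xi> a \<noteq> None" for a
    using that gx_vals by auto
next
  fix c :: "nat \<Rightarrow> RXY" and n assume H: "\<forall>i\<le>n. c i \<in> Rx R \<and> \<xi> (c i) \<noteq> None"
  have yR: "y_el \<in> Rxy R" using y_Ry[OF S] Ry_Rxy[OF S] by auto
  show "gx R \<xi> (\<Sum>i\<le>n. c i * y_el ^ i) = Some (\<Sum>i\<le>n. cst (the (\<xi> (c i))) * Y_el ^ i)"
  proof (rule pl_sum[OF gx_place' SXY7])
    fix i assume "i \<in> {..n}"
    then have ci: "c i \<in> Rx R" "\<xi> (c i) = Some (the (\<xi> (c i)))" using H by auto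
    have ciR: "c i \<in> Rxy R" using ci(1) Rx_Rxy[OF S] by auto
    show "c i * y_el ^ i \<in> Rxy R \<and> gx R \<xi> (c i * y_el ^ i) = Some (cst (the (\<xi> (c i))) * Y_el ^ i)"
      using subf_mult[OF SXY7 ciR subf_power[OF SXY7 yR]]
        pl_mult[OF gx_place' SXY7 ciR subf_power[OF SXY7 yR] gx_Rx[OF ci] pl_power[OF gx_place' SXY7 yR gx_y]]
      by simp
  qed
qed

lemma valid_e: "valid R \<xi> P e \<Longrightarrow> e \<in> Rx R \<and> e \<noteq> 0 \<and> inR2 R P"
  by (simp add: valid_def[OF S X])

lemma SP_in: "valid R \<xi> N e \<Longrightarrow> SP N e \<in> Rxy R"
  unfolding SP_def using y_Ry[OF S] Ry_Rxy[OF S] Rx_Rxy[OF S] valid_cfRx[OF S X]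
  by (intro subf_sum[OF SXY7] subf_mult[OF SXY7] subf_power[OF SXY7]) auto

lemma Fract1_nz: "Q \<noteq> 0 \<Longrightarrow> Fract Q (1::'a::idom) \<noteq> 0"
  by (simp add: Zero_fract_def eq_fract)

lemma decomp:
  assumes "D \<noteq> 0" "eN \<noteq> 0" "eD \<noteq> 0"
  shows "Fract N D = (eN / eD) * (SP N eN / SP D eD)" "SP D eD \<noteq> 0"
proof -
  have "Fract D 1 = eD * SP D eD" using Fract_SP[OF assms(3)] .
  then show sd: "SP D eD \<noteq> 0" using Fract1_nz[OF assms(1)] by auto
  have "Fract N D = Fract N 1 / Fract D 1" using assms(1) by simp
  also have "\<dots> = (eN * SP N eN) / (eD * SP D eD)" using Fract_SP[OF assms(2)] Fract_SP[OF assms(3)] by simp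
  also have "\<dots> = (eN / eD) * (SP N eN / SP D eD)" by simp
  finally show "Fract N D = (eN / eD) * (SP N eN / SP D eD)" .
qed

lemma gauss_NF:
  assumes \<Phi>: "is_gauss_ext R \<xi> \<Phi>"
    and N: "inR2 R N" "N \<noteq> 0" and D: "inR2 R D" "D \<noteq> 0"
    and eN: "valid R \<xi> N eN" "G \<xi> N eN \<noteq> 0" and eD: "valid R \<xi> D eD" "G \<xi> D eD \<noteq> 0"
  shows "\<Phi> (Fract N D) = (case \<xi> (eN / eD) of None \<Rightarrow> None
            | Some s \<Rightarrow> Some (Fract (smult s (G \<xi> N eN)) (G \<xi> D eD)))"
proof -
  have P: "is_place (Rxy R) \<Phi>" using \<Phi> unfolding is_gauss_ext_def by simp
  have spec: "\<And>c n. (\<forall>i\<le>n. c i \<in> Rx R \<and> \<xi> (c i) \<noteq> None) \<Longrightarrow>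
        \<Phi> (\<Sum>i\<le>n. c i * y_el ^ i) = Some (\<Sum>i\<le>n. cst (the (\<xi> (c i))) * Y_el ^ i)"
    using \<Phi> unfolding is_gauss_ext_def by blast
  have e: "eN \<in> Rx R" "eN \<noteq> 0" "eD \<in> Rx R" "eD \<noteq> 0" using valid_e[OF eN(1)] valid_e[OF eD(1)] by auto
  have vS: "\<Phi> (SP P e) = Some (Fract (G \<xi> P e) 1)" if v: "valid R \<xi> P e" for P e
  proof -
    have "\<Phi> (SP P e) = Some (\<Sum>i\<le>degree P. cst (the (\<xi> (cf P i / e))) * Y_el ^ i)"
      unfolding SP_def using v valid_cfRx[OF S X v] valid_val[OF S X v] by (intro spec) auto
    also have "(\<Sum>i\<le>degree P. cst (the (\<xi> (cf P i / e))) * Y_el ^ i) = Fract (G \<xi> P e) 1"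
      using RY_expand[OF degree_G[OF S X, of P e]] by (simp add: coeff_G[OF S X])
    finally show ?thesis .
  qed
  obtain sd: "SP D eD \<noteq> 0" and dec: "Fract N D = (eN / eD) * (SP N eN / SP D eD)"
    using decomp[OF D(2) e(2) e(4)] by blast
  have inS: "SP N eN \<in> Rxy R" "SP D eD \<in> Rxy R" using SP_in eN(1) eD(1) by auto
  have w: "\<Phi> (SP N eN / SP D eD) = Some (Fract (G \<xi> N eN) (G \<xi> D eD))"
    using pl_divide[OF P SXY7 inS vS[OF eN(1)] vS[OF eD(1)] Fract1_nz[OF eD(2)]] eD(2) by simp
  have wR: "SP N eN / SP D eD \<in> Rxy R" using subf_divide[OF SXY7 inS] .
  have wnz: "Fract (G \<xi> N eN) (G \<xi> D eD) \<noteq> 0" using eN(2) eD(2) by (simp add: Zero_fract_def eq_fract)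
  have q: "eN / eD \<in> Rx R" "eN / eD \<noteq> 0" using e subf_divide[OF SX7] by auto
  have qR: "eN / eD \<in> Rxy R" using q Rx_Rxy[OF S] by auto
  show ?thesis
  proof (cases "\<xi> (eN / eD)")
    case (Some s)
    have "\<Phi> (\<Sum>i\<le>0. (\<lambda>_. eN / eD) i * y_el ^ i) = Some (\<Sum>i\<le>0. cst (the (\<xi> ((\<lambda>_. eN / eD) i))) * Y_el ^ i)"
      using q Some by (intro spec) auto
    then have c: "\<Phi> (eN / eD) = Some (cst s)" using Some by simp
    have "\<Phi> (Fract N D) = Some (cst s * Fract (G \<xi> N eN) (G \<xi> D eD))"
      unfolding dec by (rule pl_mult[OF P SXY7 qR wR c w])
    then show ?thesis using Some by (simp add: cst_def)
  next
    case None
    have i: "eD / eN \<in> Rx R" "eD / eN \<noteq> 0" using e subf_divide[OF SX7] by auto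
    have "\<xi> (eD / eN) = Some 0" using pl_inverse_None[OF X SX7 q(1) None] by simp
    then have "\<Phi> (\<Sum>i\<le>0. (\<lambda>_. eD / eN) i * y_el ^ i) = Some (\<Sum>i\<le>0. cst (the (\<xi> ((\<lambda>_. eD / eN) i))) * Y_el ^ i)"
      using i by (intro spec) auto
    then have "\<Phi> (eD / eN) = Some 0" using \<open>\<xi> (eD / eN) = Some 0\<close> by (simp add: cst_def fract_collapse)
    then have "\<Phi> (inverse (eD / eN)) = None"
      using pl_inverse_0[OF P SXY7 _ i(2)] i(1) Rx_Rxy[OF S] by auto
    then have c: "\<Phi> (eN / eD) = None" by simp
    have "\<Phi> (Fract N D) = None"
      unfolding dec by (rule pl_mult_None[OF P SXY7 qR wR c w wnz])
    then show ?thesis using None by simp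
  qed
qed

lemma gauss_unique:
  assumes \<Phi>: "is_gauss_ext R \<xi> \<Phi>"
  shows "\<Phi> = gx R \<xi>"
proof
  fix B
  have P: "is_place (Rxy R) \<Phi>" using \<Phi> unfolding is_gauss_ext_def by simp
  show "\<Phi> B = gx R \<xi> B"
  proof (cases "B \<in> Rxy R")
    case False
    then show ?thesis using pl_notin[OF P SXY7] pl_notin[OF gx_place' SXY7] by simp
  next
    case True
    show ?thesis
    proof (cases "B = 0")
      case True
      then show ?thesis using pl_0[OF P SXY7] pl_0[OF gx_place' SXY7] by simp
    next
      case False
      obtain N D where nd: "inR2 R N" "inR2 R D" "D \<noteq> 0" "B = Fract N D" using \<open>B \<in> Rxy R\<close> unfolding Rxy_iff by blast
      have N0: "N \<noteq> 0" using nd False by (auto simp: fract_collapse)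
      obtain j where j: "cf N j \<noteq> 0" "valid R \<xi> N (cf N j)" "G \<xi> N (cf N j) \<noteq> 0" using valid_normalize[OF S X nd(1) N0] by blast
      obtain k where k: "cf D k \<noteq> 0" "valid R \<xi> D (cf D k)" "G \<xi> D (cf D k) \<noteq> 0" using valid_normalize[OF S X nd(2,3)] by blast
      show ?thesis unfolding nd(4)
        using gauss_NF[OF \<Phi> nd(1) N0 nd(2,3) j(2,3) k(2,3)] gauss_NF[OF gx_gauss nd(1) N0 nd(2,3) j(2,3) k(2,3)]
        by simp
    qed
  qed
qed

lemma xi_y_eq: "xi_y R \<xi> = gx R \<xi>"
  unfolding xi_y_def
proof (rule the_equality)
  show "is_gauss_ext R \<xi> (gx R \<xi>)" by (rule gx_gauss)
next
  fix \<Phi> assume "is_gauss_ext R \<xi> \<Phi>"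
  then show "\<Phi> = gx R \<xi>" by (rule gauss_unique)
qed

end


section \<open>Separation of two distinct real places\<close>

lemma rat_between:
  fixes w v :: real assumes "w < v"
  shows "\<exists>m n. n > 0 \<and> w < of_int m / of_int n \<and> of_int m / of_int n < v"
proof -
  obtain q where q: "q \<in> \<rat>" "w < q" "q < v" using Rats_dense_in_real[OF assms] by blast
  obtain m n where mn: "q = of_int m / of_int n" "n \<noteq> 0" using q(1) by (auto elim!: Rats_cases')
  show ?thesis
  proof (cases "n > 0")
    case True then show ?thesis using mn q by blast
  next
    case False
    then have "- n > 0" "q = of_int (- m) / of_int (- n)" using mn by auto
    then show ?thesis using q by blast
  qed
qed

context
  fixes K :: "'a::field set" and \<eta> \<theta> :: "'a \<Rightarrow> real option"
  assumes S: "subf K" and P1: "is_place K \<eta>" and P2: "is_place K \<theta>"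
begin

lemma cq_val: "n \<noteq> 0 \<Longrightarrow> \<phi> = \<eta> \<or> \<phi> = \<theta> \<Longrightarrow> \<phi> (of_int m / of_int n) = Some (of_int m / of_int n)"
  using pl_divide[OF P1 S subf_of_int[OF S] subf_of_int[OF S] pl_of_int[OF P1 S] pl_of_int[OF P1 S]]
    pl_divide[OF P2 S subf_of_int[OF S] subf_of_int[OF S] pl_of_int[OF P2 S] pl_of_int[OF P2 S]]
  by auto

lemma sep_fin:
  assumes B: "B \<in> K" and w: "\<eta> B = Some w" and v: "\<theta> B = Some v" and wv: "v < w"
  shows "\<exists>D\<in>K. (\<exists>a>0. \<eta> D = Some a) \<and> (\<exists>a>0. \<theta> (- D) = Some a)"
proof -
  obtain m n where mn: "n > 0" "v < of_int m / of_int n" "of_int m / of_int n < w"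
    using rat_between[OF wv] by blast
  define c where "c = (of_int m / of_int n :: 'a)"
  have cK: "c \<in> K" unfolding c_def using S by (intro subf_divide subf_of_int)
  have c1: "\<eta> c = Some (of_int m / of_int n)" "\<theta> c = Some (of_int m / of_int n)"
    using cq_val mn(1) unfolding c_def by auto
  have "\<eta> (B - c) = Some (w - of_int m / of_int n)" using pl_diff[OF P1 S B cK w c1(1)] .
  moreover have "\<theta> (- (B - c)) = Some (- (v - of_int m / of_int n))"
    using pl_uminus[OF P2 S subf_diff[OF S B cK] pl_diff[OF P2 S B cK v c1(2)]] .
  ultimately show ?thesis using mn subf_diff[OF S B cK] by (intro bexI[of _ "B - c"]) auto
qed

lemma sep_inf:
  assumes B: "B \<in> K" and w: "\<eta> B = Some w" and v: "\<theta> B = None"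
  shows "\<exists>D\<in>K. (\<exists>a>0. \<eta> D = Some a) \<and> (\<exists>a>0. \<theta> (- D) = Some a)"
proof -
  obtain m n where mn: "n > 0" "w - 1 < of_int m / of_int n" "of_int m / of_int n < w"
    using rat_between[of "w - 1" w] by auto
  define c where "c = (of_int m / of_int n :: 'a)"
  define r where "r = (of_int m / of_int n :: real)"
  have cK: "c \<in> K" unfolding c_def using S by (intro subf_divide subf_of_int)
  have c1: "\<eta> c = Some r" "\<theta> c = Some r" using cq_val mn(1) unfolding c_def r_def by auto
  define E where "E = B - c"
  have EK: "E \<in> K" unfolding E_def using subf_diff[OF S B cK] .
  have Ew: "\<eta> E = Some (w - r)" unfolding E_def using pl_diff[OF P1 S B cK w c1(1)] .
  have Ev: "\<theta> E = None" unfolding E_def using pl_add_None[OF P2 S B subf_uminus[OF S cK] v pl_uminus[OF P2 S cK c1(2)]]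
    by simp
  define F where "F = 1 + E * E"
  have FK: "F \<in> K" unfolding F_def using S EK by (intro subf_add subf_mult subf_1)
  have Fw: "\<eta> F = Some (1 + (w - r) * (w - r))" unfolding F_def
    using pl_add[OF P1 S subf_1[OF S] subf_mult[OF S EK EK] pl_one[OF P1 S] pl_mult[OF P1 S EK EK Ew Ew]] .
  have Fv: "\<theta> F = None" unfolding F_def
    using pl_add_None[OF P2 S subf_mult[OF S EK EK] subf_1[OF S] pl_mult_NoneNone[OF P2 S EK EK Ev Ev] pl_one[OF P2 S]]
    by (simp add: add.commute)
  have pos: "1 + (w - r) * (w - r) > 0" by (simp add: add_pos_nonneg)
  have F0: "F \<noteq> 0" using Fw pl_0[OF P1 S] pos by auto
  have iF: "inverse F \<in> K" using subf_inverse[OF S FK] .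
  define D where "D = 2 * inverse F - 1"
  have two: "(2::'a) \<in> K" "\<eta> 2 = Some 2" "\<theta> 2 = Some 2"
    using subf_of_nat[OF S, of 2] pl_of_nat[OF P1 S, of 2] pl_of_nat[OF P2 S, of 2] by auto
  have DK: "D \<in> K" unfolding D_def using S two iF by (intro subf_diff subf_mult subf_1)
  have "\<eta> D = Some (2 * inverse (1 + (w - r) * (w - r)) - 1)" unfolding D_def
    using pl_diff[OF P1 S subf_mult[OF S two(1) iF] subf_1[OF S]
      pl_mult[OF P1 S two(1) iF two(2) pl_inverse[OF P1 S FK Fw]] pl_one[OF P1 S]] pos by simp
  moreover have "2 * inverse (1 + (w - r) * (w - r)) - 1 > 0"
  proof -
    have d: "0 < w - r" "w - r < 1" using mn unfolding r_def by auto
    have "(w - r) * (w - r) < (w - r) * 1" using mult_strict_left_mono[OF d(2) d(1)] .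
    then have "(w - r) * (w - r) < w - r" by simp
    then have "(w - r) * (w - r) < 1" using d by linarith
    then show ?thesis using pos by (simp add: field_simps)
  qed
  moreover have "\<theta> (- D) = Some 1" unfolding D_def
    using pl_uminus[OF P2 S DK[unfolded D_def] pl_diff[OF P2 S subf_mult[OF S two(1) iF] subf_1[OF S]
      pl_mult[OF P2 S two(1) iF two(3) pl_inverse_None[OF P2 S FK Fv]] pl_one[OF P2 S]]] by simp
  ultimately show ?thesis using DK by (intro bexI[of _ D]) auto
qed

end

lemma separation:
  fixes K :: "'a::field set" and \<eta> \<theta> :: "'a \<Rightarrow> real option"
  assumes S: "subf K" and P1: "is_place K \<eta>" and P2: "is_place K \<theta>" and ne: "\<eta> B \<noteq> \<theta> B"
  shows "\<exists>D\<in>K. (\<exists>a>0. \<eta> D = Some a) \<and> (\<exists>a>0. \<theta> (- D) = Some a)"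
proof -
  have B: "B \<in> K"
  proof (rule ccontr)
    assume "B \<notin> K"
    then have "\<eta> B = None" "\<theta> B = None" using pl_notin[OF P1 S] pl_notin[OF P2 S] by auto
    then show False using ne by simp
  qed
  have swap: "\<exists>D\<in>K. (\<exists>a>0. \<eta> D = Some a) \<and> (\<exists>a>0. \<theta> (- D) = Some a)"
    if "\<exists>D\<in>K. (\<exists>a>0. \<theta> D = Some a) \<and> (\<exists>a>0. \<eta> (- D) = Some a)"
  proof -
    from that obtain D where D: "D \<in> K" "\<exists>a>0. \<theta> D = Some a" "\<exists>a>0. \<eta> (- D) = Some a" by blast
    have mD: "- D \<in> K" using subf_uminus[OF S D(1)] .
    have "\<exists>a>0. \<theta> (- (- D)) = Some a" using D(2) by simp
    then have "(\<exists>a>0. \<eta> (- D) = Some a) \<and> (\<exists>a>0. \<theta> (- (- D)) = Some a)" using D(3) by (rule conjI[rotated])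
    then show ?thesis using mD by (rule bexI)
  qed
  show ?thesis
  proof (cases "\<eta> B")
    case None
    then obtain v where v: "\<theta> B = Some v" using ne by (cases "\<theta> B") auto
    show ?thesis by (rule swap, rule sep_inf[OF S P2 P1 B v None])
  next
    case (Some w)
    show ?thesis
    proof (cases "\<theta> B")
      case None
      show ?thesis by (rule sep_inf[OF S P1 P2 B Some None])
    next
      case (Some v)
      have "w \<noteq> v" using ne \<open>\<eta> B = Some w\<close> Some by auto
      then show ?thesis
      proof (cases "v < w")
        case True
        show ?thesis by (rule sep_fin[OF S P1 P2 B \<open>\<eta> B = Some w\<close> Some True])
      next
        case False
        then have "w < v" using \<open>w \<noteq> v\<close> by simp
        have th: "\<theta> B = Some v" by fact
        have et: "\<eta> B = Some w" by fact
        from sep_fin[of K \<theta> \<eta> B v w, OF S P2 P1 B th et \<open>w < v\<close>]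
        show ?thesis by (rule swap)
      qed
    qed
  qed
qed

lemma gen_top_basic:
  assumes "generate_topology_on SS U" "x \<in> U"
  shows "\<exists>F. finite F \<and> F \<subseteq> SS \<and> x \<in> \<Inter>F \<and> \<Inter>F \<subseteq> U"
  using assms
proof (induction arbitrary: x rule: generate_topology_on.induct)
  case Empty
  then show ?case by simp
next
  case (Int a b)
  have xa: "x \<in> a" and xb: "x \<in> b" using Int.prems by auto
  from Int.IH(1)[OF xa] obtain F1 where 1: "finite F1" "F1 \<subseteq> SS" "x \<in> \<Inter>F1" "\<Inter>F1 \<subseteq> a"
    by (elim exE conjE)
  from Int.IH(2)[OF xb] obtain F2 where 2: "finite F2" "F2 \<subseteq> SS" "x \<in> \<Inter>F2" "\<Inter>F2 \<subseteq> b"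
    by (elim exE conjE)
  have "finite (F1 \<union> F2)" "F1 \<union> F2 \<subseteq> SS" "x \<in> \<Inter>(F1 \<union> F2)" "\<Inter>(F1 \<union> F2) \<subseteq> a \<inter> b"
    using 1 2 by auto
  then show ?case by (intro exI[of _ "F1 \<union> F2"]) (simp only: simp_thms)
next
  case (UN K)
  from UN.prems obtain k where k: "k \<in> K" "x \<in> k" by (elim UnionE)
  from UN.IH[OF k] obtain F where F: "finite F" "F \<subseteq> SS" "x \<in> \<Inter>F" "\<Inter>F \<subseteq> k"
    by (elim exE conjE)
  have "\<Inter>F \<subseteq> \<Union>K" using F(4) k(1) by auto
  then show ?case using F(1-3) by (intro exI[of _ F]) (simp only: simp_thms)
next
  case (Basis s)
  then show ?case by (intro exI[of _ "{s}"]) auto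
qed

lemma H'_sub: "H' K b \<subseteq> M K"
  by (auto simp: H'_def)

lemma H'_1: "subf K \<Longrightarrow> H' K 1 = M K"
  by (auto simp: H'_def M_def pl_one)

lemma topspace_M: "subf K \<Longrightarrow> topspace (M_top K) = M K"
proof -
  assume S: "subf K"
  have "\<Union>{H' K b |b. b \<in> K} = M K"
    using H'_sub[of K] H'_1[OF S] subf_1[OF S] by blast
  then show ?thesis unfolding M_top_def by simp
qed

lemma nbh_Inter:
  assumes "finite F" "\<And>s. s \<in> F \<Longrightarrow> \<exists>T. nbh oa T \<and> (\<forall>t\<in>T. Z t \<in> s)"
  shows "\<exists>T. nbh oa T \<and> (\<forall>t\<in>T. Z t \<in> \<Inter>F)"
  using assms
proof (induct F rule: finite_induct)
  case empty
  then show ?case using nbh_UNIV by auto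
next
  case (insert s F)
  obtain T1 where T1: "nbh oa T1" "\<forall>t\<in>T1. Z t \<in> s" using insert by blast
  obtain T2 where T2: "nbh oa T2" "\<forall>t\<in>T2. Z t \<in> \<Inter>F" using insert by blast
  show ?case using nbh_Int[OF T1(1) T2(1)] T1(2) T2(2) by (intro exI[of _ "T1 \<inter> T2"]) auto
qed


lemma Rats_subf: "subf R \<Longrightarrow> q \<in> \<rat> \<Longrightarrow> q \<in> (R :: real set)"
  by (auto elim!: Rats_cases' intro!: subf_divide subf_of_int)

lemma emb_uminus: "emb (- a) = - emb a"
  using emb_add[of "- a" a] emb_0 by (simp add: eq_neg_iff_add_eq_0)

lemma emb_inj: "emb a = emb b \<Longrightarrow> a = b"
proof -
  assume "emb a = emb b"
  then have "emb (a + - b) = 0" using emb_add[of a "- b"] emb_uminus[of b] by simp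
  then show "a = b" using emb_eq_0[of "a + - b"] by simp
qed

lemma Fract1_nz0: "Q \<noteq> 0 \<Longrightarrow> Fract Q (1::'a::idom) \<noteq> 0"
  by (simp add: Zero_fract_def eq_fract)

lemma poly_altdef_le: "degree p \<le> n \<Longrightarrow> poly p x = (\<Sum>i\<le>n. coeff p i * x ^ i)"
  for p :: "real poly" and x :: real
proof -
  assume d: "degree p \<le> n"
  have "(\<Sum>i\<le>n. coeff p i * x ^ i) = (\<Sum>i\<le>degree p. coeff p i * x ^ i)"
    using d by (intro sum.mono_neutral_right) (auto simp: coeff_eq_0)
  then show ?thesis by (simp add: poly_altdef)
qed

context
  fixes R :: "real set" and \<xi> :: "RXY \<Rightarrow> real option"
  assumes RC: "real_closed_subfield R" and X: "is_place (Rx R) \<xi>" and I: "\<And>r. r \<in> R \<Longrightarrow> \<xi> (kc r) = Some r"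
begin

lemma S: "subf R" using RC by (simp add: real_closed_subfield_def real_subfield_subf)
lemma SX8: "subf (Rx R)" using Rx_subf[OF S] .
lemma SY8: "subf (Ry R)" using Ry_subf[OF S] .
lemma SXY8: "subf (Rxy R)" using Rxy_subf[OF S] .
lemma SF: "subf (Fbar_Y R)" using Fbar_Y_subf[OF S] .
lemma gxP: "is_place (Rxy R) (gx R \<xi>)" using gx_place[OF S X] .

lemma iota_eq: "iota R \<xi> \<zeta> = (\<lambda>a. case gx R \<xi> a of None \<Rightarrow> None | Some u \<Rightarrow> pl (\<zeta> y_el) u)"
proof
  fix a
  show "iota R \<xi> \<zeta> a = (case gx R \<xi> a of None \<Rightarrow> None | Some u \<Rightarrow> pl (\<zeta> y_el) u)"
  proof (cases "gx R \<xi> a")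
    case None
    then show ?thesis by (simp add: iota_def xi_y_eq[OF S X I])
  next
    case (Some u)
    have "u \<in> Fbar_Y (Fbar R \<xi>)" using gx_vals[OF S X I Some] .
    then show ?thesis using Some by (simp add: iota_def xi_y_eq[OF S X I] zeta_F_eq[OF Fbar_subf[OF S X I]])
  qed
qed

lemma iota_place: "is_place (Rxy R) (iota R \<xi> \<zeta>)"
  unfolding iota_eq by (rule place_comp[OF gxP SXY8 pl_place subf_UNIV]) simp

lemma iota_M: "iota R \<xi> \<zeta> \<in> M (Rxy R)"
  using iota_place by (simp add: M_def)

lemma classify:
  assumes Z: "\<zeta> \<in> M (Ry R)" and g: "g \<in> Fbar_Y R"
  shows "\<zeta> (emb g) = pl (\<zeta> y_el) g"
proof -
  have PZ: "is_place (Ry R) \<zeta>" using Z by (simp add: M_def)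
  define \<zeta>' where "\<zeta>' = (\<lambda>g. if g \<in> Fbar_Y R then \<zeta> (emb g) else None)"
  have hK: "\<And>a. a \<in> Fbar_Y R \<Longrightarrow> emb a \<in> Ry R" unfolding Ry_emb by blast
  have hinj: "\<And>a. a \<in> Fbar_Y R \<Longrightarrow> emb a = 0 \<Longrightarrow> a = 0" using emb_eq_0 by simp
  have P': "is_place (Fbar_Y R) \<zeta>'" unfolding \<zeta>'_def
    using place_pullback[OF PZ SY8 SF hK emb_add emb_mult emb_inverse emb_1 hinj] .
  have C: "\<zeta>' (cst r) = Some r" if r: "r \<in> R" for r
    using place_id_on_R[OF RC PZ SY8 kc_Ry[OF S] r] cst_in[OF S r] by (simp add: \<zeta>'_def emb_cst)
  have Y: "\<zeta>' Y_el = \<zeta> y_el" using Y_in[OF S] by (simp add: \<zeta>'_def emb_Y)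
  have "\<zeta>' g = (if g \<in> Fbar_Y R then pl (\<zeta>' Y_el) g else None)" by (rule place_unique[OF S P' C])
  then show ?thesis using g Y by (simp add: \<zeta>'_def)
qed

lemma gx_mapc: "inF R p \<Longrightarrow> gx R \<xi> (Fract (mapc p) 1) = Some (Fract p 1)"
proof -
  assume p: "inF R p"
  have e1: "Fract (mapc p) 1 = (\<Sum>i\<le>degree p. kc (coeff p i) * y_el ^ i)"
    using Fract_poly_expand_le[of "mapc p" "degree p"] degree_map_poly[of "\<lambda>c. [:c:]" p]
    by (simp add: coeff_mapc kc_def y_el_def)
  have spec: "\<And>c n. (\<forall>i\<le>n. c i \<in> Rx R \<and> \<xi> (c i) \<noteq> None) \<Longrightarrow>
        gx R \<xi> (\<Sum>i\<le>n. c i * y_el ^ i) = Some (\<Sum>i\<le>n. cst (the (\<xi> (c i))) * Y_el ^ i)"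
    using gx_gauss[OF S X I] unfolding is_gauss_ext_def by blast
  have cR: "\<forall>i\<le>degree p. kc (coeff p i) \<in> Rx R \<and> \<xi> (kc (coeff p i)) \<noteq> None"
    using p I kc_Rx[OF S] by (auto simp: inF_def)
  have "gx R \<xi> (Fract (mapc p) 1) = Some (\<Sum>i\<le>degree p. cst (the (\<xi> (kc (coeff p i)))) * Y_el ^ i)"
    unfolding e1 by (rule spec[OF cR])
  also have "(\<Sum>i\<le>degree p. cst (the (\<xi> (kc (coeff p i)))) * Y_el ^ i) = (\<Sum>i\<le>degree p. cst (coeff p i) * Y_el ^ i)"
    using p I by (intro sum.cong) (auto simp: inF_def)
  also have "\<dots> = Fract p 1" using RY_expand[of p "degree p"] by simp
  finally show ?thesis .
qed

lemma gx_emb: assumes g: "g \<in> Fbar_Y R" shows "gx R \<xi> (emb g) = Some g"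
proof -
  obtain p q where pq: "inF R p" "inF R q" "q \<noteq> 0" "g = Fract p q" using g unfolding Fbar_Y_iff by blast
  have e: "emb g = Fract (mapc p) 1 / Fract (mapc q) 1" using pq(3,4) by (simp add: emb_Fract)
  have inR: "Fract (mapc p) 1 \<in> Rxy R" "Fract (mapc q) 1 \<in> Rxy R"
    using Rxy_I[OF S inR2_mapc[OF S pq(1)] inR2_1[OF S]] Rxy_I[OF S inR2_mapc[OF S pq(2)] inR2_1[OF S]] by auto
  have "gx R \<xi> (emb g) = Some (Fract p 1 / Fract q 1)"
    unfolding e by (rule pl_divide[OF gxP SXY8 inR gx_mapc[OF pq(1)] gx_mapc[OF pq(2)] Fract1_nz0[OF pq(3)]])
  then show ?thesis using pq(3,4) by simp
qed

lemma iota_Ry: assumes Z: "\<zeta> \<in> M (Ry R)" and a: "a \<in> Ry R" shows "iota R \<xi> \<zeta> a = \<zeta> a"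
proof -
  obtain g where g: "g \<in> Fbar_Y R" "a = emb g" using a unfolding Ry_emb by blast
  show ?thesis unfolding iota_eq g(2) using gx_emb[OF g(1)] classify[OF Z g(1)] by simp
qed

lemma iota_Rx: assumes a: "a \<in> Rx R" shows "iota R \<xi> \<zeta> a = \<xi> a"
proof (cases "\<xi> a")
  case (Some s)
  then show ?thesis unfolding iota_eq using gx_Rx[OF S X I a Some] by (simp add: pl_cst)
next
  case None
  have aR: "a \<in> Rxy R" using a Rx_Rxy[OF S] by auto
  have a0: "a \<noteq> 0" using pl_None_nz[OF X SX8 None] .
  have ia: "inverse a \<in> Rx R" using subf_inverse[OF SX8 a] .
  have "\<xi> (inverse a) = Some 0" using pl_inverse_None[OF X SX8 a None] .
  then have "gx R \<xi> (inverse a) = Some (cst 0)" using gx_Rx[OF S X I ia] by simp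
  then have "gx R \<xi> (inverse a) = Some 0" by (simp add: cst_def fract_collapse)
  then have "gx R \<xi> (inverse (inverse a)) = None"
    using pl_inverse_0[OF gxP SXY8 subf_inverse[OF SXY8 aR]] a0 by simp
  then show ?thesis unfolding iota_eq using None by simp
qed

lemma iota_inj: "inj_on (iota R \<xi>) (M (Ry R))"
proof (rule inj_onI)
  fix \<zeta>1 \<zeta>2 assume Z: "\<zeta>1 \<in> M (Ry R)" "\<zeta>2 \<in> M (Ry R)" and eq: "iota R \<xi> \<zeta>1 = iota R \<xi> \<zeta>2"
  have P: "is_place (Ry R) \<zeta>1" "is_place (Ry R) \<zeta>2" using Z by (auto simp: M_def)
  show "\<zeta>1 = \<zeta>2"
  proof
    fix a show "\<zeta>1 a = \<zeta>2 a"
    proof (cases "a \<in> Ry R")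
      case True
      then show ?thesis using iota_Ry[OF Z(1) True] iota_Ry[OF Z(2) True] eq by simp
    next
      case False
      then show ?thesis using pl_notin[OF P(1) SY8] pl_notin[OF P(2) SY8] by simp
    qed
  qed
qed

lemma basic_nbhd:
  assumes Z0: "\<zeta>0 \<in> M (Ry R)" and T: "nbh (\<zeta>0 y_el) T"
  shows "\<exists>h\<in>Ry R. \<zeta>0 \<in> H' (Ry R) h \<and> (\<forall>\<zeta>\<in>H' (Ry R) h. \<zeta> y_el = \<zeta>0 y_el \<or> (\<exists>t\<in>T. \<zeta> y_el = Some t))"
proof (cases "\<zeta>0 y_el")
  case (Some a)
  then obtain d where d: "d > 0" "\<forall>t. \<bar>t - a\<bar> < d \<longrightarrow> t \<in> T" using T by (auto simp: nbh_def)
  obtain r1 where r1: "r1 \<in> \<rat>" "a - d < r1" "r1 < a" using Rats_dense_in_real[of "a - d" a] d(1) by auto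
  obtain r2 where r2: "r2 \<in> \<rat>" "a < r2" "r2 < a + d" using Rats_dense_in_real[of a "a + d"] d(1) by auto
  have rR: "r1 \<in> R" "r2 \<in> R" using r1(1) r2(1) Rats_subf[OF S] by auto
  define P where "P = [:- r1, 1:] * [:r2, - 1:]"
  have PR: "inF R P" unfolding P_def using rR S
    by (intro inF_mult[OF S]) (auto simp: inF_def coeff_pCons subf_0 subf_1 subf_uminus split: nat.split)
  define g where "g = Fract P (1 :: real poly)"
  have gR: "g \<in> Fbar_Y R" unfolding g_def by (rule Fract1_in[OF S PR])
  have val_fin: "pl (Some t) g = Some ((t - r1) * (r2 - t))" for t
    unfolding g_def pl_def using psi_fin_val[of 1 t P] by (simp add: P_def algebra_simps)
  have val_inf: "pl None g = None"
    unfolding g_def pl_def using psi_inf_None[of 1 P] by (simp add: P_def degree_mult_eq)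
  define h where "h = emb g"
  have hR: "h \<in> Ry R" unfolding h_def Ry_emb using gR by blast
  have hv: "\<zeta> h = pl (\<zeta> y_el) g" if "\<zeta> \<in> M (Ry R)" for \<zeta> unfolding h_def using classify[OF that gR] .
  have "\<zeta>0 \<in> H' (Ry R) h" unfolding H'_def using Z0 hv[OF Z0] Some val_fin r1 r2 by auto
  moreover have "\<exists>t\<in>T. \<zeta> y_el = Some t" if z: "\<zeta> \<in> H' (Ry R) h" for \<zeta>
  proof -
    have zM: "\<zeta> \<in> M (Ry R)" and pos: "\<exists>v. \<zeta> h = Some v \<and> v > 0" using z unfolding H'_def by auto
    show ?thesis
    proof (cases "\<zeta> y_el")
      case None
      then show ?thesis using pos hv[OF zM] val_inf by simp
    next
      case (Some t)
      then have "(t - r1) * (r2 - t) > 0" using pos hv[OF zM] val_fin by auto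
      then have "r1 < t \<and> t < r2" using r1 r2 by (auto simp: zero_less_mult_iff)
      then have "\<bar>t - a\<bar> < d" using r1 r2 by auto
      then show ?thesis using d(2) Some by auto
    qed
  qed
  ultimately show ?thesis using hR by blast
next
  case None
  then obtain Mb where Mb: "\<forall>t. Mb < \<bar>t\<bar> \<longrightarrow> t \<in> T" using T by (auto simp: nbh_def)
  define m :: real where "m = of_nat (nat \<lceil>\<bar>Mb\<bar>\<rceil>) + 1"
  have m: "m > \<bar>Mb\<bar>" "m \<ge> 0" unfolding m_def by linarith+
  have mR: "m \<in> R" unfolding m_def using S by (intro subf_add subf_of_nat subf_1)
  define P where "P = [:- (m * m), 0, 1:]"
  define Q :: "real poly" where "Q = [:1, 0, 1:]"
  have PR: "inF R P" "inF R Q" unfolding P_def Q_def using mR S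
    by (auto simp: inF_def coeff_pCons subf_0 subf_1 subf_uminus subf_mult split: nat.split)
  have Q0: "Q \<noteq> 0" by (simp add: Q_def)
  define g where "g = Fract P Q"
  have gR: "g \<in> Fbar_Y R" unfolding g_def Fbar_Y_iff using PR Q0 by blast
  have pQ: "poly Q t = 1 + t * t" for t by (simp add: Q_def)
  have pQ0: "poly Q t \<noteq> 0" for t unfolding pQ by (metis add_pos_nonneg zero_less_one zero_le_square less_irrefl)
  have val_fin: "pl (Some t) g = Some ((t * t - m * m) / (1 + t * t))" for t
    unfolding g_def pl_def using psi_fin_val[OF Q0 pQ0[of t], of P] pQ by (simp add: P_def algebra_simps)
  have val_inf: "pl None g = Some 1"
    unfolding g_def pl_def using psi_inf_val[OF Q0, of P] by (simp add: P_def Q_def)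
  define h where "h = emb g"
  have hR: "h \<in> Ry R" unfolding h_def Ry_emb using gR by blast
  have hv: "\<zeta> h = pl (\<zeta> y_el) g" if "\<zeta> \<in> M (Ry R)" for \<zeta> unfolding h_def using classify[OF that gR] .
  have "\<zeta>0 \<in> H' (Ry R) h" unfolding H'_def using Z0 hv[OF Z0] None val_inf by auto
  moreover have "\<zeta> y_el = \<zeta>0 y_el \<or> (\<exists>t\<in>T. \<zeta> y_el = Some t)" if z: "\<zeta> \<in> H' (Ry R) h" for \<zeta>
  proof -
    have zM: "\<zeta> \<in> M (Ry R)" and pos: "\<exists>v. \<zeta> h = Some v \<and> v > 0" using z unfolding H'_def by auto
    show ?thesis
    proof (cases "\<zeta> y_el")
      case None
      then show ?thesis using \<open>\<zeta>0 y_el = None\<close> by simp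
    next
      case (Some t)
      then have "(t * t - m * m) / (1 + t * t) > 0" using pos hv[OF zM] val_fin by auto
      moreover have "1 + t * t > 0" by (metis add_pos_nonneg zero_less_one zero_le_square)
      ultimately have "m * m < t * t" by (simp add: zero_less_divide_iff)
      then have "m * m < \<bar>t\<bar> * \<bar>t\<bar>" by simp
      then have "m < \<bar>t\<bar>" using m(2) by (metis abs_ge_zero mult_mono not_less)
      then have "Mb < \<bar>t\<bar>" using m(1) by linarith
      then show ?thesis using Mb Some by auto
    qed
  qed
  ultimately show ?thesis using hR by blast
qed

end


lemma Union_H': "subf K \<Longrightarrow> \<Union>{H' K b |b. b \<in> K} = M K"
  using H'_sub[of K] H'_1 subf_1 by blast

definition zt :: "real set \<Rightarrow> real \<Rightarrow> RXY \<Rightarrow> real option" where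
  "zt R t = (\<lambda>B. if B \<in> Ry R then (if inv_into (Fbar_Y R) emb B \<in> Fbar_Y R
       then pl (Some t) (inv_into (Fbar_Y R) emb B) else None) else None)"

context
  fixes R :: "real set" and \<xi> :: "RXY \<Rightarrow> real option"
  assumes RC: "real_closed_subfield R" and X: "is_place (Rx R) \<xi>" and Iid: "\<And>r. r \<in> R \<Longrightarrow> \<xi> (kc r) = Some r"
begin

lemma S9: "subf R" using S[OF RC X Iid] .
lemma SY9: "subf (Ry R)" using Ry_subf[OF S9] .
lemma SX9: "subf (Rx R)" using Rx_subf[OF S9] .
lemma SXY9: "subf (Rxy R)" using Rxy_subf[OF S9] .
lemma SF9: "subf (Fbar_Y R)" using Fbar_Y_subf[OF S9] .

lemma iota_eq': "iota R \<xi> \<zeta> = (\<lambda>a. case gx R \<xi> a of None \<Rightarrow> None | Some u \<Rightarrow> pl (\<zeta> y_el) u)"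
  by (rule iota_eq[OF RC X Iid]) simp
lemma iota_M': "iota R \<xi> \<zeta> \<in> M (Rxy R)"
  by (rule iota_M[OF RC X Iid]) simp
lemma classify': "\<zeta> \<in> M (Ry R) \<Longrightarrow> g \<in> Fbar_Y R \<Longrightarrow> \<zeta> (emb g) = pl (\<zeta> y_el) g"
  by (rule classify[OF RC X Iid]) simp_all
lemma iota_Ry': "\<zeta> \<in> M (Ry R) \<Longrightarrow> a \<in> Ry R \<Longrightarrow> iota R \<xi> \<zeta> a = \<zeta> a"
  by (rule iota_Ry[OF RC X Iid]) simp_all
lemma iota_Rx': "a \<in> Rx R \<Longrightarrow> iota R \<xi> \<zeta> a = \<xi> a"
  by (rule iota_Rx[OF RC X Iid]) simp_all
lemma basic_nbhd': "\<zeta>0 \<in> M (Ry R) \<Longrightarrow> nbh (\<zeta>0 y_el) T \<Longrightarrow>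
  \<exists>h\<in>Ry R. \<zeta>0 \<in> H' (Ry R) h \<and> (\<forall>\<zeta>\<in>H' (Ry R) h. \<zeta> y_el = \<zeta>0 y_el \<or> (\<exists>t\<in>T. \<zeta> y_el = Some t))"
  by (rule basic_nbhd[OF RC X Iid]) simp_all
lemma iota_place': "is_place (Rxy R) (iota R \<xi> \<zeta>)"
  by (rule iota_place[OF RC X Iid]) simp

lemma iota_cont: "continuous_map (M_top (Ry R)) (M_top (Rxy R)) (iota R \<xi>)"
  unfolding M_top_def[of "Rxy R"]
proof (rule continuous_on_generated_topo)
  show "iota R \<xi> ` topspace (M_top (Ry R)) \<subseteq> \<Union>{H' (Rxy R) b |b. b \<in> Rxy R}"
    unfolding topspace_M[OF SY9] Union_H'[OF SXY9] using iota_M' by blast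
next
  fix U assume "U \<in> {H' (Rxy R) b |b. b \<in> Rxy R}"
  then obtain b where b: "b \<in> Rxy R" "U = H' (Rxy R) b" by blast
  define W where "W = iota R \<xi> -` U \<inter> M (Ry R)"
  define SS where "SS = {H' (Ry R) h |h. h \<in> Ry R}"
  have key: "\<exists>V\<in>SS. \<zeta>0 \<in> V \<and> V \<subseteq> W" if z0: "\<zeta>0 \<in> W" for \<zeta>0
  proof -
    have Z0: "\<zeta>0 \<in> M (Ry R)" using z0 by (simp add: W_def)
    obtain v where v: "iota R \<xi> \<zeta>0 b = Some v" "v > 0" using z0 b by (auto simp: W_def H'_def)
    have v1: "(case gx R \<xi> b of None \<Rightarrow> None | Some u \<Rightarrow> pl (\<zeta>0 y_el) u) = Some v"
      using v(1) by (simp add: iota_eq')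
    obtain g where g: "gx R \<xi> b = Some g"
      using v1 by (cases "gx R \<xi> b") auto
    have pv: "pl (\<zeta>0 y_el) g = Some v" using v1 g by simp
    have T: "nbh (\<zeta>0 y_el) {t. \<exists>w>0. psi_fin t g = Some w}" using local_pos[OF pv v(2)] .
    obtain h where h: "h \<in> Ry R" "\<zeta>0 \<in> H' (Ry R) h"
      "\<forall>\<zeta>\<in>H' (Ry R) h. \<zeta> y_el = \<zeta>0 y_el \<or> (\<exists>t\<in>{t. \<exists>w>0. psi_fin t g = Some w}. \<zeta> y_el = Some t)"
      using basic_nbhd'[OF Z0 T] by blast
    have "H' (Ry R) h \<subseteq> W"
    proof
      fix \<zeta> assume z: "\<zeta> \<in> H' (Ry R) h"
      have zM: "\<zeta> \<in> M (Ry R)" using z H'_sub by blast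
      have iv: "iota R \<xi> \<zeta> b = pl (\<zeta> y_el) g" using g unfolding iota_eq' by simp
      have "\<exists>w. iota R \<xi> \<zeta> b = Some w \<and> w > 0"
      proof (cases "\<zeta> y_el = \<zeta>0 y_el")
        case True
        then show ?thesis using iv pv v(2) by simp
      next
        case False
        then obtain t w where "\<zeta> y_el = Some t" "w > 0" "psi_fin t g = Some w" using h(3) z by blast
        then show ?thesis using iv by (simp add: pl_def)
      qed
      then show "\<zeta> \<in> W" unfolding W_def b(2) H'_def using iota_M' zM by simp
    qed
    then show ?thesis using h by (auto simp: SS_def)
  qed
  have "W = \<Union>{V \<in> SS. V \<subseteq> W}"
  proof
    show "W \<subseteq> \<Union>{V \<in> SS. V \<subseteq> W}"
    proof
      fix \<zeta>0 assume "\<zeta>0 \<in> W"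
      from key[OF this] obtain V where "V \<in> SS" "\<zeta>0 \<in> V" "V \<subseteq> W" by blast
      then show "\<zeta>0 \<in> \<Union>{V \<in> SS. V \<subseteq> W}" by blast
    qed
  qed blast
  moreover have "generate_topology_on SS (\<Union>{V \<in> SS. V \<subseteq> W})"
    by (rule generate_topology_on.UN) (auto intro: generate_topology_on.Basis)
  ultimately have "openin (M_top (Ry R)) W"
    unfolding M_top_def openin_topology_generated_by_iff SS_def by simp
  then show "openin (M_top (Ry R)) (iota R \<xi> -` U \<inter> topspace (M_top (Ry R)))"
    unfolding topspace_M[OF SY9] W_def .
qed

lemma emb_injF: "inj_on emb (Fbar_Y R)"
  by (rule inj_onI) (rule emb_inj)

lemma hinv_props:
  shows "\<And>a. a \<in> Ry R \<Longrightarrow> inv_into (Fbar_Y R) emb a \<in> Fbar_Y R"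
    and "\<And>a. a \<in> Ry R \<Longrightarrow> emb (inv_into (Fbar_Y R) emb a) = a"
  unfolding Ry_emb by (auto intro: inv_into_into f_inv_into_f)

lemma zt_place: "is_place (Ry R) (zt R t)"
proof -
  let ?h = "inv_into (Fbar_Y R) emb"
  have P: "is_place (Fbar_Y R) (\<lambda>g. if g \<in> Fbar_Y R then pl (Some t) g else None)"
    using pl_restrict_place[OF S9] .
  have hK: "\<And>a. a \<in> Ry R \<Longrightarrow> ?h a \<in> Fbar_Y R" using hinv_props(1) .
  have hf: "\<And>a. a \<in> Ry R \<Longrightarrow> emb (?h a) = a" using hinv_props(2) .
  have eq: "?h c = x" if "x \<in> Fbar_Y R" "emb x = c" for c x
    using inv_into_f_eq[OF emb_injF that] .
  have hadd: "?h (a + b) = ?h a + ?h b" if "a \<in> Ry R" "b \<in> Ry R" for a b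
  proof -
    have "?h a + ?h b \<in> Fbar_Y R" by (rule subf_add[OF SF9 hK[OF that(1)] hK[OF that(2)]])
    moreover have "emb (?h a + ?h b) = a + b" by (simp add: emb_add hf that)
    ultimately show ?thesis by (rule eq)
  qed
  have hmult: "?h (a * b) = ?h a * ?h b" if "a \<in> Ry R" "b \<in> Ry R" for a b
  proof -
    have "?h a * ?h b \<in> Fbar_Y R" by (rule subf_mult[OF SF9 hK[OF that(1)] hK[OF that(2)]])
    moreover have "emb (?h a * ?h b) = a * b" by (simp add: emb_mult hf that)
    ultimately show ?thesis by (rule eq)
  qed
  have hinv: "?h (inverse a) = inverse (?h a)" if "a \<in> Ry R" for a
  proof -
    have "inverse (?h a) \<in> Fbar_Y R" by (rule subf_inverse[OF SF9 hK[OF that]])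
    moreover have "emb (inverse (?h a)) = inverse a" by (simp add: emb_inverse hf that)
    ultimately show ?thesis by (rule eq)
  qed
  have h1: "?h 1 = 1" using eq[OF subf_1[OF SF9] emb_1] .
  have hinj: "a = 0" if "a \<in> Ry R" "?h a = 0" for a
  proof -
    have "a = emb (?h a)" using hf[OF that(1)] by simp
    also have "\<dots> = 0" using that(2) emb_0 by simp
    finally show ?thesis .
  qed
  show ?thesis unfolding zt_def using place_pullback[OF P SF9 SY9 hK hadd hmult hinv h1 hinj] .
qed

lemma zt_M: "zt R t \<in> M (Ry R)" using zt_place by (simp add: M_def)

lemma zt_emb: "g \<in> Fbar_Y R \<Longrightarrow> zt R t (emb g) = psi_fin t g"
proof -
  assume g: "g \<in> Fbar_Y R"
  have "emb g \<in> Ry R" unfolding Ry_emb using g by blast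
  moreover have "inv_into (Fbar_Y R) emb (emb g) = g" using inv_into_f_f[OF emb_injF g] .
  ultimately show ?thesis using g by (simp add: zt_def pl_def)
qed

lemma zt_y: "zt R t y_el = Some t"
  using zt_emb[OF Y_in[OF S9]] by (simp add: emb_Y pl_Y[of "Some t", unfolded pl_def, simplified])

section \<open>Uniqueness\<close>

lemma ext_SP:
  assumes E: "is_place (Rxy R) \<eta>" "\<forall>a\<in>Rx R. \<eta> a = \<xi> a" "\<eta> y_el = Some t"
    and v: "valid R \<xi> N e"
  shows "\<eta> (SP N e) = Some (poly (G \<xi> N e) t)"
proof -
  have yR: "y_el \<in> Rxy R" using y_Ry[OF S9] Ry_Rxy[OF S9] by auto
  have "\<eta> (SP N e) = Some (\<Sum>i\<le>degree N. coeff (G \<xi> N e) i * t ^ i)"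
    unfolding SP_def
  proof (rule pl_sum[OF E(1) SXY9])
    fix i assume "i \<in> {..degree N}"
    have cR: "cf N i / e \<in> Rx R" using valid_cfRx[OF S9 X v] .
    then have cR': "cf N i / e \<in> Rxy R" using Rx_Rxy[OF S9] by auto
    have "\<eta> (cf N i / e) = Some (coeff (G \<xi> N e) i)" using E(2) cR valid_val[OF S9 X v] by simp
    then show "cf N i / e * y_el ^ i \<in> Rxy R \<and> \<eta> (cf N i / e * y_el ^ i) = Some (coeff (G \<xi> N e) i * t ^ i)"
      using subf_mult[OF SXY9 cR' subf_power[OF SXY9 yR]]
        pl_mult[OF E(1) SXY9 cR' subf_power[OF SXY9 yR] _ pl_power[OF E(1) SXY9 yR E(3)]] by simp
  qed
  then show ?thesis using poly_altdef_le[OF degree_G[OF S9 X]] by simp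
qed

lemma forced:
  assumes D: "D \<in> Rxy R"
  shows "\<exists>Sx EV. finite Sx \<and> (\<forall>t \<eta>. t \<notin> Sx \<longrightarrow> is_place (Rxy R) \<eta> \<longrightarrow> (\<forall>a\<in>Rx R. \<eta> a = \<xi> a) \<longrightarrow>
            \<eta> y_el = Some t \<longrightarrow> \<eta> D = EV t)"
proof (cases "D = 0")
  case True
  show ?thesis
    by (rule exI[of _ "{}"], rule exI[of _ "\<lambda>_. Some 0"]) (simp add: True pl_0[OF _ SXY9])
next
  case False
  obtain N Dn where nd: "inR2 R N" "inR2 R Dn" "Dn \<noteq> 0" "D = Fract N Dn" using D unfolding Rxy_iff by blast
  have N0: "N \<noteq> 0" using nd False by (auto simp: fract_collapse)
  obtain j where j: "cf N j \<noteq> 0" "valid R \<xi> N (cf N j)" "G \<xi> N (cf N j) \<noteq> 0"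
    using valid_normalize[OF S9 X nd(1) N0] by blast
  obtain k where k: "cf Dn k \<noteq> 0" "valid R \<xi> Dn (cf Dn k)" "G \<xi> Dn (cf Dn k) \<noteq> 0"
    using valid_normalize[OF S9 X nd(2,3)] by blast
  define eN where "eN = cf N j"
  define eD where "eD = cf Dn k"
  define GN where "GN = G \<xi> N eN"
  define GD where "GD = G \<xi> Dn eD"
  have vN: "valid R \<xi> N eN" and vD: "valid R \<xi> Dn eD" and GN0: "GN \<noteq> 0" and GD0: "GD \<noteq> 0"
    using j k by (simp_all add: eN_def eD_def GN_def GD_def)
  have e: "eN \<in> Rx R" "eN \<noteq> 0" "eD \<in> Rx R" "eD \<noteq> 0"
    using valid_e[OF S9 X Iid vN] valid_e[OF S9 X Iid vD] by auto
  define Sx where "Sx = {t. poly (GN * GD) t = 0}"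
  have fin: "finite Sx" unfolding Sx_def using GN0 GD0 by (intro poly_roots_finite) simp
  define EV where "EV = (\<lambda>t. case \<xi> (eN / eD) of None \<Rightarrow> None | Some s \<Rightarrow> Some (s * (poly GN t / poly GD t)))"
  have "\<eta> D = EV t" if t: "t \<notin> Sx" and E: "is_place (Rxy R) \<eta>" "\<forall>a\<in>Rx R. \<eta> a = \<xi> a" "\<eta> y_el = Some t" for t \<eta>
  proof -
    have pt: "poly GN t \<noteq> 0" "poly GD t \<noteq> 0" using t by (auto simp: Sx_def)
    obtain sd: "SP Dn eD \<noteq> 0" and dec: "Fract N Dn = (eN / eD) * (SP N eN / SP Dn eD)"
      using decomp[OF S9 X Iid nd(3) e(2) e(4)] by blast
    have inS: "SP N eN \<in> Rxy R" "SP Dn eD \<in> Rxy R" using SP_in[OF S9 X Iid] vN vD by auto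
    have w: "\<eta> (SP N eN / SP Dn eD) = Some (poly GN t / poly GD t)"
      using pl_divide[OF E(1) SXY9 inS ext_SP[OF E vN] ext_SP[OF E vD]] pt by (simp add: GN_def GD_def)
    have wR: "SP N eN / SP Dn eD \<in> Rxy R" using subf_divide[OF SXY9 inS] .
    have q: "eN / eD \<in> Rx R" using subf_divide[OF SX9 e(1,3)] .
    then have qR: "eN / eD \<in> Rxy R" using Rx_Rxy[OF S9] by auto
    have qv: "\<eta> (eN / eD) = \<xi> (eN / eD)" using E(2) q by simp
    show ?thesis
    proof (cases "\<xi> (eN / eD)")
      case None
      have "\<eta> D = None" unfolding nd(4) dec
        by (rule pl_mult_None[OF E(1) SXY9 qR wR _ w]) (use qv None pt in simp_all)
      then show ?thesis using None by (simp add: EV_def)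
    next
      case (Some s)
      have "\<eta> D = Some (s * (poly GN t / poly GD t))" unfolding nd(4) dec
        by (rule pl_mult[OF E(1) SXY9 qR wR _ w]) (use qv Some in simp)
      then show ?thesis using Some by (simp add: EV_def)
    qed
  qed
  then show ?thesis using fin by blast
qed

lemma unique:
  assumes img: "\<iota> ` M (Ry R) \<subseteq> M (Rxy R)" and gm: "good_map R \<xi> \<iota>" and Z0: "\<zeta>0 \<in> M (Ry R)"
  shows "\<iota> \<zeta>0 = iota R \<xi> \<zeta>0"
proof (rule ccontr)
  assume ne: "\<iota> \<zeta>0 \<noteq> iota R \<xi> \<zeta>0"
  have cont: "continuous_map (M_top (Ry R)) (M_top (Rxy R)) \<iota>"
    and compat: "\<forall>\<zeta>\<in>M (Ry R). \<forall>a\<in>Ry R. \<iota> \<zeta> a = \<zeta> a"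
    and rx: "\<forall>\<zeta>\<in>M (Ry R). \<forall>a\<in>Rx R. \<iota> \<zeta> a = \<xi> a" using gm unfolding good_map_def by auto
  have Pi: "is_place (Rxy R) (\<iota> \<zeta>)" if "\<zeta> \<in> M (Ry R)" for \<zeta> using img that by (auto simp: M_def)
  obtain B where "\<iota> \<zeta>0 B \<noteq> iota R \<xi> \<zeta>0 B" using ne by (meson ext)
  from separation[OF SXY9 Pi[OF Z0] iota_place' this] obtain D where
    D: "D \<in> Rxy R" "\<exists>a>0. \<iota> \<zeta>0 D = Some a" "\<exists>a>0. iota R \<xi> \<zeta>0 (- D) = Some a" by blast
  have mD: "- D \<in> Rxy R" using subf_uminus[OF SXY9 D(1)] .
  define U1 where "U1 = {\<zeta> \<in> topspace (M_top (Ry R)). \<iota> \<zeta> \<in> H' (Rxy R) D}"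
  define U2 where "U2 = {\<zeta> \<in> topspace (M_top (Ry R)). iota R \<xi> \<zeta> \<in> H' (Rxy R) (- D)}"
  have o1: "openin (M_top (Rxy R)) (H' (Rxy R) D)" "openin (M_top (Rxy R)) (H' (Rxy R) (- D))"
    unfolding M_top_def using D(1) mD by (auto intro: topology_generated_by_Basis)
  have "openin (M_top (Ry R)) U1" unfolding U1_def by (rule openin_continuous_map_preimage[OF cont o1(1)])
  moreover have "openin (M_top (Ry R)) U2" unfolding U2_def by (rule openin_continuous_map_preimage[OF iota_cont o1(2)])
  ultimately have "openin (M_top (Ry R)) (U1 \<inter> U2)" by (rule openin_Int)
  then have gen: "generate_topology_on {H' (Ry R) h |h. h \<in> Ry R} (U1 \<inter> U2)"
    unfolding M_top_def openin_topology_generated_by_iff .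
  have z0U: "\<zeta>0 \<in> U1 \<inter> U2"
    using Z0 Pi[OF Z0] iota_M' D(2,3) unfolding U1_def U2_def topspace_M[OF SY9] H'_def by (auto simp: M_def)
  obtain F where F: "finite F" "F \<subseteq> {H' (Ry R) h |h. h \<in> Ry R}" "\<zeta>0 \<in> \<Inter>F" "\<Inter>F \<subseteq> U1 \<inter> U2"
    using gen_top_basic[OF gen z0U] by (elim exE conjE)
  have "\<exists>T. nbh (\<zeta>0 y_el) T \<and> (\<forall>t\<in>T. zt R t \<in> s)" if s: "s \<in> F" for s
  proof -
    obtain h where h: "h \<in> Ry R" "s = H' (Ry R) h" using F(2) s by blast
    obtain g where g: "g \<in> Fbar_Y R" "h = emb g" using h(1) unfolding Ry_emb by blast
    have "\<zeta>0 \<in> s" using F(3) s by blast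
    then obtain v where v: "\<zeta>0 h = Some v" "v > 0" unfolding h(2) H'_def by blast
    have pv: "pl (\<zeta>0 y_el) g = Some v" using v(1) classify'[OF Z0 g(1)] g(2) by simp
    have "zt R t \<in> s" if "t \<in> {t. \<exists>w>0. psi_fin t g = Some w}" for t
      using that zt_M zt_emb[OF g(1)] unfolding h(2) H'_def g(2) by auto
    then show ?thesis using local_pos[OF pv v(2)] by blast
  qed
  from nbh_Inter[OF F(1) this] obtain T where T: "nbh (\<zeta>0 y_el) T" "\<forall>t\<in>T. zt R t \<in> \<Inter>F" by blast
  obtain Sx EV where SE: "finite Sx" "\<And>t \<eta>. t \<notin> Sx \<Longrightarrow> is_place (Rxy R) \<eta> \<Longrightarrow> (\<forall>a\<in>Rx R. \<eta> a = \<xi> a) \<Longrightarrow>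
            \<eta> y_el = Some t \<Longrightarrow> \<eta> D = EV t" using forced[OF D(1)] by blast
  obtain t where t: "t \<in> T" "t \<notin> Sx" using nbh_avoid[OF T(1) SE(1)] by blast
  have zU: "zt R t \<in> U1" "zt R t \<in> U2" using T(2) t(1) F(4) by blast+
  have y1: "\<iota> (zt R t) y_el = Some t" using compat zt_M y_Ry[OF S9] zt_y by simp
  have y2: "iota R \<xi> (zt R t) y_el = Some t" using iota_Ry'[OF zt_M y_Ry[OF S9]] zt_y by simp
  have e1: "\<iota> (zt R t) D = EV t" by (rule SE(2)[OF t(2) Pi[OF zt_M]]) (use rx zt_M y1 in simp_all)
  have e2: "iota R \<xi> (zt R t) D = EV t" by (rule SE(2)[OF t(2) iota_place']) (use iota_Rx' y2 in simp_all)
  obtain a1 where a1: "\<iota> (zt R t) D = Some a1" "a1 > 0" using zU(1) unfolding U1_def H'_def by blast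
  obtain a2 where a2: "iota R \<xi> (zt R t) (- D) = Some a2" "a2 > 0" using zU(2) unfolding U2_def H'_def by blast
  have "iota R \<xi> (zt R t) D = Some a1" using e1 e2 a1(1) by simp
  then have "iota R \<xi> (zt R t) (- D) = Some (- a1)" using pl_uminus[OF iota_place' SXY9 D(1)] by simp
  then show False using a2 a1(2) by simp
qed

end


theorem theorem6p3:
  fixes R :: "real set" and \<xi> :: "RXY \<Rightarrow> real option"
  assumes "real_closed_subfield R" and "archimedean_subfield R"
    and "\<xi> \<in> M (Rx R)"
    and "\<forall>r \<in> R. \<xi> (Fract [:[:r:]:] 1) = Some r"
  shows "iota R \<xi> ` M (Ry R) \<subseteq> M (Rxy R) \<and> good_map R \<xi> (iota R \<xi>) \<and>
         (\<forall>\<iota>. \<iota> ` M (Ry R) \<subseteq> M (Rxy R) \<and> good_map R \<xi> \<iota> \<longrightarrow>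
               (\<forall>\<zeta> \<in> M (Ry R). \<iota> \<zeta> = iota R \<xi> \<zeta>))"
proof -
  have RC: "real_closed_subfield R" using assms(1) .
  have X: "is_place (Rx R) \<xi>" using assms(3) by (simp add: M_def)
  have Iid: "\<And>r. r \<in> R \<Longrightarrow> \<xi> (kc r) = Some r" using assms(4) by (simp add: kc_def)
  have A: "iota R \<xi> ` M (Ry R) \<subseteq> M (Rxy R)" using iota_M'[OF RC X Iid] by blast
  have B: "good_map R \<xi> (iota R \<xi>)"
    unfolding good_map_def
    using iota_cont[OF RC X Iid] iota_inj[OF RC X Iid] iota_Ry'[OF RC X Iid] iota_Rx'[OF RC X Iid]
    by blast
  have C: "\<forall>\<iota>. \<iota> ` M (Ry R) \<subseteq> M (Rxy R) \<and> good_map R \<xi> \<iota> \<longrightarrow> (\<forall>\<zeta> \<in> M (Ry R). \<iota> \<zeta> = iota R \<xi> \<zeta>)"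
    using unique[OF RC X Iid] by blast
  show ?thesis using A B C by blast
qed


end
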